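(* Assume Assumption A1(2) and Assumption A2 (see context). Let $(\eta_s)_{s\ge 1}$ be a nonincreasing sequence of step sizes with $0<\eta_s\le \eta_{\infty,2}$ for all $s$, and let $(H_s)_{s\ge1}$ be a nondecreasing sequence of positive integers. Then for every $t\ge 1$ the FedLSA iterate $\theta_t$ satisfies \[ \mathbb{E}^{1/2}\big[\|\theta_t-\theta_\star\|^2\big]\le \prod_{s=1}^t(1-\eta_s a)^{H_s}\|\theta_0-\theta_\star\| + \zeta_1\zeta_2\sum_{s=1}^t\eta_s^2H_s^2\exp\Big(-a\sum_{i=s+1}^t\eta_iH_i\Big) +\frac{\bar\sigma_\varepsilon+2\bar\sigma_{\mathrm{het}}}{\sqrt N}\sqrt{\sum_{s=1}^t\eta_s^2H_s\exp\Big(-2a\sum_{r=s+1}^t\eta_rH_r\Big)} +\sqrt{\frac{4\bar\sigma_{\mathbf A}^2\zeta_1^2\zeta_2^2}{N a e}}\sqrt{\sum_{s=1}^t\eta_s^5H_s^4\exp\Big(-a\sum_{r=s+1}^t\eta_rH_r\Big)}. \]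
   Context: Setting (federated linear stochastic approximation). Fix integers $N\ge1$ (number of agents) and $d\ge1$. For each agent $c\in\{1,\dots,N\}$ there is a probability distribution $\pi_c$ on a measurable space $(\mathsf Z,\mathcal Z)$ and measurable maps $z\mapsto \mathbf A^c(z)\in\mathbb R^{d\times d}$, $z\mapsto \mathbf b^c(z)\in\mathbb R^d$; set $\bar{\mathbf A}^c=\mathbb E_{Z\sim\pi_c}[\mathbf A^c(Z)]$, $\bar{\mathbf b}^c=\mathbb E_{Z\sim\pi_c}[\mathbf b^c(Z)]$, $\bar{\mathbf A}=N^{-1}\sum_c\bar{\mathbf A}^c$, $\bar{\mathbf b}=N^{-1}\sum_c\bar{\mathbf b}^c$. Let $\theta_\star$ solve $\bar{\mathbf A}\theta_\star=\bar{\mathbf b}$ and $\theta_\star^c$ solve $\bar{\mathbf A}^c\theta^c_\star=\bar{\mathbf b}^c$. Write $\tilde{\mathbf A}^c(z)=\mathbf A^c(z)-\bar{\mathbf A}^c$, $\tilde{\mathbf b}^c(z)=\mathbf b^c(z)-\bar{\mathbf b}^c$, $\varepsilon^c(z)=\tilde{\mathbf A}^c(z)\theta^c_\star-\tilde{\mathbf b}^c(z)$. Norms are Euclidean / operator norms. Assumption A1(p) ($p\ge1$): for each $c$, $-\bar{\mathbf A}^c$ is Hurwitz, and there are constants $a>0$, $\eta_{\infty,p}>0$ with $\eta_{\infty,p}a\le 1/2$ such that for all $0<\eta<\eta_{\infty,p}$ and $u\in\mathbb R^d$, $\mathbb E^{1/p}_{Z\sim\pi_c}[\|(I-\eta\mathbf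 A^c(Z))u\|^p]\le(1-\eta a)\|u\|$. Assumption A2: all samples $Z^c_{t,h}$ ($t\ge1$, $1\le h\le H_t$, $c\in[N]$) are independent with $Z^c_{t,h}\sim\pi_c$; moreover $\|\varepsilon\|_\infty:=\max_c\sup_z\|\varepsilon^c(z)\|<\infty$ and $C_A:=\max_c\sup_z\max(\|\mathbf A^c(z)\|,\|\tilde{\mathbf A}^c(z)\|)<\infty$. FedLSA: given step sizes $\eta_t>0$, local step numbers $H_t\in\mathbb N$ and $\theta_0\in\mathbb R^d$, for $t\ge1$ each agent sets $\theta^c_{t,0}=\theta_{t-1}$, $\theta^c_{t,h}=\theta^c_{t,h-1}-\eta_t(\mathbf A^c(Z^c_{t,h})\theta^c_{t,h-1}-\mathbf b^c(Z^c_{t,h}))$ for $h=1,\dots,H_t$, and $\theta_t=N^{-1}\sum_{c=1}^N\theta^c_{t,H_t}$. Heterogeneity and variance quantities: $\zeta_1^2=N^{-1}\sum_c\|\bar{\mathbf A}^c(\theta^c_\star-\theta_\star)\|^2$, $\zeta_2^2=N^{-1}\sum_c\|\bar{\mathbf A}^c-\bar{\mathbf A}\|^2$; $\Sigma^c_{\mathbf A}=\mathbb E_{Z\sim\pi_c}[\tilde{\mathbf A}^c(Z)^\top\tilde{\mathbf A}^c(Z)]$, $\Sigma^c_\varepsilon=\mathbb E_{Z\sim\pi_c}[\varepsilon^c(Z)\varepsilon^c(Z)^\top]$; $\bar\sigma_\varepsilon^2=N^{-1}\sum_c\mathrm{Tr}(\Sigma_\varepsilon^c)$, $\bar\sigma_{\mathrm{het}}^2=N^{-1}\sum_c\|\Sigma^c_{\mathbf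 A}\|\,\|\theta^c_\star-\theta_\star\|^2$, $\bar\sigma_{\mathbf A}^2=N^{-1}\sum_c\|\Sigma_{\mathbf A}^c\|^2$. *)

theory Defs
  imports "HOL-Probability.Probability"
begin

text \<open>Operator norm of a square matrix (induced by the Euclidean norm).
  Note: the built-in norm on real^'n^'n is the Frobenius norm, hence this definition.\<close>
definition opnorm :: "real^'n^'n \<Rightarrow> real" where
  "opnorm M = onorm (\<lambda>x. M *v x)"

definition hurwitz :: "real^'n^'n \<Rightarrow> bool" where
  "hurwitz M \<longleftrightarrow>
     (\<forall>ev::complex. det (mat ev - (\<chi> i j. complex_of_real (M $ i $ j))) = 0 \<longrightarrow> Re ev < 0)"

primrec local_run ::
  "('z \<Rightarrow> real^'d^'d) \<Rightarrow> ('z \<Rightarrow> real^'d) \<Rightarrow> real \<Rightarrow> (nat \<Rightarrow> 'z) \<Rightarrow> real^'d \<Rightarrow> nat \<Rightarrow> real^'d" where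
  "local_run Ac bc et zs th 0 = th"
| "local_run Ac bc et zs th (Suc h) =
     local_run Ac bc et zs th h - et *\<^sub>R (Ac (zs (Suc h)) *v local_run Ac bc et zs th h - bc (zs (Suc h)))"

primrec fedlsa ::
  "nat \<Rightarrow> (nat \<Rightarrow> 'z \<Rightarrow> real^'d^'d) \<Rightarrow> (nat \<Rightarrow> 'z \<Rightarrow> real^'d) \<Rightarrow> (nat \<Rightarrow> real) \<Rightarrow> (nat \<Rightarrow> nat)
    \<Rightarrow> real^'d \<Rightarrow> (nat \<Rightarrow> nat \<Rightarrow> nat \<Rightarrow> 'z) \<Rightarrow> nat \<Rightarrow> real^'d" where
  "fedlsa N A b eta H theta0 z 0 = theta0"
| "fedlsa N A b eta H theta0 z (Suc t) =
     (1 / real N) *\<^sub>R (\<Sum>c<N. local_run (A c) (b c) (eta (Suc t)) (z c (Suc t))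
                              (fedlsa N A b eta H theta0 z t) (H (Suc t)))"

end

theory Submission
  imports Defs
begin

lemma continuous_on_mvmult[continuous_intros]:
  fixes f :: "'a::topological_space \<Rightarrow> real^'n^'m" and g :: "'a \<Rightarrow> real^'n"
  assumes "continuous_on S f" "continuous_on S g"
  shows "continuous_on S (\<lambda>x. f x *v g x)"
proof -
  have "(\<lambda>x. f x *v g x) = (\<lambda>x. \<chi> i. \<Sum>j\<in>UNIV. f x $ i $ j * g x $ j)"
    by (auto simp: matrix_vector_mult_def)
  then show ?thesis using assms by (simp only:) (auto intro!: continuous_intros)
qed

lemma continuous_on_mmmult[continuous_intros]:
  fixes f :: "'a::topological_space \<Rightarrow> real^'n^'m" and g :: "'a \<Rightarrow> real^'k^'n"
  assumes "continuous_on S f" "continuous_on S g"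
  shows "continuous_on S (\<lambda>x. f x ** g x)"
proof -
  have "(\<lambda>x. f x ** g x) = (\<lambda>x. \<chi> i k. \<Sum>j\<in>UNIV. f x $ i $ j * g x $ j $ k)"
    by (auto simp: matrix_matrix_mult_def)
  then show ?thesis using assms by (simp only:) (auto intro!: continuous_intros)
qed

lemma continuous_on_transpose[continuous_intros]:
  fixes f :: "'a::topological_space \<Rightarrow> real^'n^'m"
  assumes "continuous_on S f"
  shows "continuous_on S (\<lambda>x. transpose (f x))"
proof -
  have "(\<lambda>x. transpose (f x)) = (\<lambda>x. \<chi> i j. f x $ j $ i)"
    by (auto simp: transpose_def)
  then show ?thesis using assms by (simp only:) (auto intro!: continuous_intros)
qed

lemma borel_measurable_mvmult[measurable]:
  fixes f :: "'a \<Rightarrow> real^'n^'m" and g :: "'a \<Rightarrow> real^'n"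
  assumes "f \<in> borel_measurable F" "g \<in> borel_measurable F"
  shows "(\<lambda>x. f x *v g x) \<in> borel_measurable F"
  by (rule borel_measurable_continuous_Pair[OF assms, of "\<lambda>x y. x *v y"])
     (intro continuous_on_mvmult continuous_on_fst continuous_on_snd continuous_on_id)

lemma borel_measurable_mmmult[measurable]:
  fixes f :: "'a \<Rightarrow> real^'n^'m" and g :: "'a \<Rightarrow> real^'k^'n"
  assumes "f \<in> borel_measurable F" "g \<in> borel_measurable F"
  shows "(\<lambda>x. f x ** g x) \<in> borel_measurable F"
  by (rule borel_measurable_continuous_Pair[OF assms, of "\<lambda>x y. x ** y"])
     (intro continuous_on_mmmult continuous_on_fst continuous_on_snd continuous_on_id)

lemma borel_measurable_transpose[measurable]:
  fixes f :: "'a \<Rightarrow> real^'n^'m"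
  assumes "f \<in> borel_measurable F"
  shows "(\<lambda>x. transpose (f x)) \<in> borel_measurable F"
  using borel_measurable_continuous_on[OF _ assms, of "transpose"]
  using continuous_on_transpose[OF continuous_on_id] by auto

context prob_space begin

lemma indep_var_vimage:
  assumes ind: "indep_var S1 X1 S2 X2"
    and Y1: "Y1 \<in> measurable (vimage_algebra (space M) X1 S1) N1"
    and Y2: "Y2 \<in> measurable (vimage_algebra (space M) X2 S2) N2"
  shows "indep_var N1 Y1 N2 Y2"
proof -
  have X1: "X1 \<in> measurable M S1" using ind by (rule indep_var_rv1)
  have X2: "X2 \<in> measurable M S2" using ind by (rule indep_var_rv2)
  have s1: "sets (vimage_algebra (space M) X1 S1) = {X1 -` A \<inter> space M | A. A \<in> sets S1}"
    using X1 by (intro sets_vimage_algebra2) (auto simp: measurable_def)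
  have s2: "sets (vimage_algebra (space M) X2 S2) = {X2 -` A \<inter> space M | A. A \<in> sets S2}"
    using X2 by (intro sets_vimage_algebra2) (auto simp: measurable_def)
  have sub1: "sets (vimage_algebra (space M) X1 S1) \<subseteq> sets M"
    using X1 unfolding s1 by (auto intro: measurable_sets)
  have sub2: "sets (vimage_algebra (space M) X2 S2) \<subseteq> sets M"
    using X2 unfolding s2 by (auto intro: measurable_sets)
  have Y1M: "Y1 \<in> measurable M N1"
    using measurable_mono[of N1 N1 "vimage_algebra (space M) X1 S1" M] sub1 Y1 by auto
  have Y2M: "Y2 \<in> measurable M N2"
    using measurable_mono[of N2 N2 "vimage_algebra (space M) X2 S2" M] sub2 Y2 by auto
  have pre1: "Y1 -` A \<inter> space M \<in> {X1 -` A \<inter> space M | A. A \<in> sets S1}" if "A \<in> sets N1" for A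
  proof -
    have "Y1 -` A \<inter> space (vimage_algebra (space M) X1 S1) \<in> sets (vimage_algebra (space M) X1 S1)"
      using Y1 that by (rule measurable_sets)
    then show ?thesis using s1 by simp
  qed
  have pre2: "Y2 -` A \<inter> space M \<in> {X2 -` A \<inter> space M | A. A \<in> sets S2}" if "A \<in> sets N2" for A
  proof -
    have "Y2 -` A \<inter> space (vimage_algebra (space M) X2 S2) \<in> sets (vimage_algebra (space M) X2 S2)"
      using Y2 that by (rule measurable_sets)
    then show ?thesis using s2 by simp
  qed
  have I: "indep_sets (\<lambda>i. sigma_sets (space M) {case_bool X1 X2 i -` A \<inter> space M |A. A \<in> sets (case_bool S1 S2 i)}) UNIV"
    using ind unfolding indep_var_def indep_vars_def by auto
  have "indep_sets (\<lambda>i. sigma_sets (space M) {case_bool Y1 Y2 i -` A \<inter> space M |A. A \<in> sets (case_bool N1 N2 i)}) UNIV"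
    apply (rule indep_sets_mono_sets[OF I])
    apply (rule sigma_sets_subseteq)
    using pre1 pre2 by (auto split: bool.split)
  then show ?thesis
    unfolding indep_var_def indep_vars_def using Y1M Y2M by (auto split: bool.split)
qed

lemma indep_fubini:
  fixes F :: "'b \<times> 'b \<Rightarrow> 'c::{banach, second_countable_topology}"
  assumes ind: "indep_var S X T Y" and F[measurable]: "F \<in> borel_measurable (S \<Otimes>\<^sub>M T)"
    and int: "integrable M (\<lambda>\<omega>. F (X \<omega>, Y \<omega>))"
  shows "(\<integral>\<omega>. F (X \<omega>, Y \<omega>) \<partial>M) = (\<integral>\<omega>. (\<integral>\<omega>'. F (X \<omega>', Y \<omega>) \<partial>M) \<partial>M)"
    and "integrable M (\<lambda>\<omega>. (\<integral>\<omega>'. F (X \<omega>', Y \<omega>) \<partial>M))"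
proof -
  have X[measurable]: "X \<in> measurable M S" using ind by (rule indep_var_rv1)
  have Y[measurable]: "Y \<in> measurable M T" using ind by (rule indep_var_rv2)
  have eq: "distr M S X \<Otimes>\<^sub>M distr M T Y = distr M (S \<Otimes>\<^sub>M T) (\<lambda>x. (X x, Y x))"
    using ind indep_var_distribution_eq by auto
  interpret PX: prob_space "distr M S X" by (rule prob_space_distr[OF X])
  interpret PY: prob_space "distr M T Y" by (rule prob_space_distr[OF Y])
  interpret P: pair_sigma_finite "distr M S X" "distr M T Y" ..
  have XY[measurable]: "(\<lambda>x. (X x, Y x)) \<in> measurable M (S \<Otimes>\<^sub>M T)" by measurable
  have intP: "integrable (distr M S X \<Otimes>\<^sub>M distr M T Y) (case_prod (\<lambda>x y. F (x, y)))"
    unfolding eq using int integrable_distr_eq[OF XY F] by simp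
  have g[measurable]: "(\<lambda>y. \<integral>\<omega>'. F (X \<omega>', y) \<partial>M) \<in> borel_measurable T"
    by measurable
  have inner: "(\<integral>x. F (x, y) \<partial>distr M S X) = (\<integral>\<omega>'. F (X \<omega>', y) \<partial>M)" if "y \<in> space T" for y
    using that by (intro integral_distr) auto
  have "(\<integral>\<omega>. F (X \<omega>, Y \<omega>) \<partial>M) = integral\<^sup>L (distr M (S \<Otimes>\<^sub>M T) (\<lambda>x. (X x, Y x))) F"
    by (rule integral_distr[symmetric, OF XY F])
  also have "\<dots> = integral\<^sup>L (distr M S X \<Otimes>\<^sub>M distr M T Y) (case_prod (\<lambda>x y. F (x, y)))"
    by (simp add: eq)
  also have "\<dots> = (\<integral>y. (\<integral>x. F (x, y) \<partial>distr M S X) \<partial>distr M T Y)"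
    using P.integral_snd[OF intP] by simp
  also have "\<dots> = (\<integral>y. (\<integral>\<omega>'. F (X \<omega>', y) \<partial>M) \<partial>distr M T Y)"
  proof (rule Bochner_Integration.integral_cong)
    show "distr M T Y = distr M T Y" by simp
    fix y assume "y \<in> space (distr M T Y)"
    then show "(\<integral>x. F (x, y) \<partial>distr M S X) = (\<integral>\<omega>'. F (X \<omega>', y) \<partial>M)" using inner by simp
  qed
  also have "\<dots> = (\<integral>\<omega>. (\<integral>\<omega>'. F (X \<omega>', Y \<omega>) \<partial>M) \<partial>M)"
    by (rule integral_distr[OF Y g])
  finally show "(\<integral>\<omega>. F (X \<omega>, Y \<omega>) \<partial>M) = (\<integral>\<omega>. (\<integral>\<omega>'. F (X \<omega>', Y \<omega>) \<partial>M) \<partial>M)" .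
  have "integrable (distr M T Y) (\<lambda>y. (\<integral>x. F (x, y) \<partial>distr M S X))"
    using P.integrable_snd[OF intP] by simp
  moreover have "integrable (distr M T Y) (\<lambda>y. (\<integral>\<omega>'. F (X \<omega>', y) \<partial>M)) \<longleftrightarrow>
     integrable (distr M T Y) (\<lambda>y. (\<integral>x. F (x, y) \<partial>distr M S X))"
    by (rule Bochner_Integration.integrable_cong) (auto simp: inner)
  ultimately have "integrable (distr M T Y) (\<lambda>y. (\<integral>\<omega>'. F (X \<omega>', y) \<partial>M))" by simp
  then show "integrable M (\<lambda>\<omega>. (\<integral>\<omega>'. F (X \<omega>', Y \<omega>) \<partial>M))"
    using integrable_distr_eq[OF Y g] by simp
qed

lemma indep_fubini_le:
  fixes F :: "'b \<times> 'b \<Rightarrow> real"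
  assumes ind: "indep_var S X T Y" and F: "F \<in> borel_measurable (S \<Otimes>\<^sub>M T)"
    and int: "integrable M (\<lambda>\<omega>. F (X \<omega>, Y \<omega>))"
    and G: "integrable M (\<lambda>\<omega>. G (Y \<omega>))"
    and le: "\<And>y. y \<in> space T \<Longrightarrow> (\<integral>\<omega>'. F (X \<omega>', y) \<partial>M) \<le> G y"
  shows "(\<integral>\<omega>. F (X \<omega>, Y \<omega>) \<partial>M) \<le> (\<integral>\<omega>. G (Y \<omega>) \<partial>M)"
proof -
  have Y: "Y \<in> measurable M T" using ind by (rule indep_var_rv2)
  show ?thesis
    unfolding indep_fubini(1)[OF ind F int]
    using indep_fubini(2)[OF ind F int] G le Y
    by (intro integral_mono) (auto simp: measurable_def)
qed

end

declare transpose_matrix_vector[simp del] vector_transpose_matrix[simp del]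

definition bdd :: "'w set \<Rightarrow> ('w \<Rightarrow> 'b::real_normed_vector) \<Rightarrow> bool" where
  "bdd S f \<longleftrightarrow> (\<exists>B. \<forall>x\<in>S. norm (f x) \<le> B)"

lemma bddI: "(\<And>x. x \<in> S \<Longrightarrow> norm (f x) \<le> B) \<Longrightarrow> bdd S f"
  unfolding bdd_def by blast

lemma bddE: "bdd S f \<Longrightarrow> (\<And>B. (\<And>x. x \<in> S \<Longrightarrow> norm (f x) \<le> B) \<Longrightarrow> 0 \<le> B \<Longrightarrow> P) \<Longrightarrow> P"
  unfolding bdd_def by (meson norm_ge_zero order_trans order.refl linear)

lemma bdd_const[simp, intro]: "bdd S (\<lambda>x. c)"
  unfolding bdd_def by blast

lemma bdd_add[intro]: assumes "bdd S f" "bdd S g" shows "bdd S (\<lambda>x. f x + g x)"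
proof -
  obtain B1 B2 where "\<And>x. x \<in> S \<Longrightarrow> norm (f x) \<le> B1" "\<And>x. x \<in> S \<Longrightarrow> norm (g x) \<le> B2"
    using assms unfolding bdd_def by blast
  then show ?thesis by (intro bddI[where B="B1+B2"]) (rule norm_triangle_le, rule add_mono)
qed

lemma bdd_diff[intro]: assumes "bdd S f" "bdd S g" shows "bdd S (\<lambda>x. f x - g x)"
proof -
  obtain B1 B2 where "\<And>x. x \<in> S \<Longrightarrow> norm (f x) \<le> B1" "\<And>x. x \<in> S \<Longrightarrow> norm (g x) \<le> B2"
    using assms unfolding bdd_def by blast
  then show ?thesis by (intro bddI[where B="B1+B2"]) (rule norm_triangle_le_diff, rule add_mono)
qed

lemma bdd_uminus[intro]: "bdd S f \<Longrightarrow> bdd S (\<lambda>x. - f x)"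
  unfolding bdd_def by simp

lemma bdd_scaleR[intro]: assumes "bdd S f" shows "bdd S (\<lambda>x. c *\<^sub>R f x)"
proof -
  obtain B where "\<And>x. x \<in> S \<Longrightarrow> norm (f x) \<le> B"
    using assms unfolding bdd_def by blast
  then show ?thesis by (intro bddI[where B="\<bar>c\<bar>*B"]) (simp add: mult_left_mono)
qed

lemma bdd_sum[intro]: "finite I \<Longrightarrow> (\<And>i. i \<in> I \<Longrightarrow> bdd S (f i)) \<Longrightarrow> bdd S (\<lambda>x. \<Sum>i\<in>I. f i x)"
proof (induction I rule: finite_induct)
  case empty then show ?case by simp
next
  case (insert i I)
  then have "bdd S (\<lambda>x. f i x + (\<Sum>i\<in>I. f i x))" by (intro bdd_add) auto
  then show ?case using insert by simp
qed

lemma bdd_norm[intro]: "bdd S f \<Longrightarrow> bdd S (\<lambda>x. norm (f x))"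
  unfolding bdd_def by simp

lemma bdd_mult[intro]: assumes "bdd S (f :: _ \<Rightarrow> real)" "bdd S g" shows "bdd S (\<lambda>x. f x * g x)"
proof -
  obtain B1 B2 where B: "\<And>x. x \<in> S \<Longrightarrow> norm (f x) \<le> B1" "\<And>x. x \<in> S \<Longrightarrow> norm (g x) \<le> B2"
    using assms unfolding bdd_def by blast
  show ?thesis
  proof (intro bddI[where B="B1*B2"])
    fix x assume x: "x \<in> S"
    have "norm (f x * g x) = norm (f x) * norm (g x)" by (simp add: abs_mult)
    also have "\<dots> \<le> B1 * B2" using B[OF x] by (intro mult_mono) auto
    finally show "norm (f x * g x) \<le> B1 * B2" .
  qed
qed

lemma bdd_power2[intro]: "bdd S (f :: _ \<Rightarrow> real) \<Longrightarrow> bdd S (\<lambda>x. (f x)\<^sup>2)"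
  using bdd_mult[of S f f] by (simp add: power2_eq_square)

lemma bdd_norm2[intro]: "bdd S f \<Longrightarrow> bdd S (\<lambda>x. (norm (f x))\<^sup>2)"
  by (intro bdd_power2 bdd_norm)
lemma entry_le_norm: "\<bar>(A::real^'n^'m) $ i $ j\<bar> \<le> norm A"
  using component_le_norm_cart[of "A $ i" j] Finite_Cartesian_Product.norm_nth_le[of A i] by linarith

lemma norm_le_entries: "norm (A::real^'n^'m) \<le> (\<Sum>i\<in>UNIV. \<Sum>j\<in>UNIV. \<bar>A $ i $ j\<bar>)"
proof -
  have "norm A \<le> (\<Sum>i\<in>UNIV. norm (A $ i))" by (simp add: norm_vec_def L2_set_le_sum)
  also have "\<dots> \<le> (\<Sum>i\<in>UNIV. \<Sum>j\<in>UNIV. \<bar>A $ i $ j\<bar>)"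
    by (intro sum_mono) (simp add: norm_le_l1_cart)
  finally show ?thesis .
qed

lemma norm_mv_le: "norm ((A::real^'n^'m) *v x) \<le> (real CARD('m) * real CARD('n) * norm A) * norm x"
proof -
  have "norm (A *v x) \<le> onorm ((*v) A) * norm x"
    by (rule onorm) simp
  also have "onorm ((*v) A) \<le> real CARD('m) * real CARD('n) * norm A"
    by (rule onorm_le_matrix_component) (rule entry_le_norm)
  finally show ?thesis by (simp add: mult_right_mono)
qed

lemma norm_mm_le: "norm ((A::real^'n^'m) ** (B::real^'k^'n)) \<le> real CARD('m) * real CARD('k) * (real CARD('n) * (norm A * norm B))"
proof -
  have c: "\<bar>(A ** B) $ i $ k\<bar> \<le> real CARD('n) * (norm A * norm B)" for i k
  proof -
    have "\<bar>(A ** B) $ i $ k\<bar> = \<bar>\<Sum>j\<in>UNIV. A $ i $ j * B $ j $ k\<bar>"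
      by (simp add: matrix_matrix_mult_def)
    also have "\<dots> \<le> (\<Sum>j\<in>UNIV. \<bar>A $ i $ j * B $ j $ k\<bar>)"
      by (rule sum_abs)
    also have "\<dots> \<le> (\<Sum>j\<in>(UNIV::'n set). norm A * norm B)"
    proof (rule sum_mono)
      fix j
      have "\<bar>A $ i $ j * B $ j $ k\<bar> = \<bar>A $ i $ j\<bar> * \<bar>B $ j $ k\<bar>" by (rule abs_mult)
      also have "\<dots> \<le> norm A * norm B"
        by (intro mult_mono entry_le_norm) auto
      finally show "\<bar>A $ i $ j * B $ j $ k\<bar> \<le> norm A * norm B" .
    qed
    finally show ?thesis by simp
  qed
  have "norm (A ** B) \<le> (\<Sum>i\<in>(UNIV::'m set). \<Sum>k\<in>(UNIV::'k set). \<bar>(A ** B) $ i $ k\<bar>)"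
    by (rule norm_le_entries)
  also have "\<dots> \<le> (\<Sum>i\<in>(UNIV::'m set). \<Sum>k\<in>(UNIV::'k set). real CARD('n) * (norm A * norm B))"
    by (intro sum_mono c)
  finally show ?thesis by simp
qed

lemma bdd_mv[intro]: assumes "bdd S (f :: _ \<Rightarrow> real^'n^'m)" "bdd S g" shows "bdd S (\<lambda>x. f x *v g x)"
proof -
  obtain B1 where B1: "\<And>x. x \<in> S \<Longrightarrow> norm (f x) \<le> B1" "0 \<le> B1" using bddE[OF assms(1)] by blast
  obtain B2 where B2: "\<And>x. x \<in> S \<Longrightarrow> norm (g x) \<le> B2" "0 \<le> B2" using bddE[OF assms(2)] by blast
  show ?thesis
  proof (rule bddI)
    fix x assume x: "x \<in> S"
    have "norm (f x *v g x) \<le> (real CARD('m) * real CARD('n) * norm (f x)) * norm (g x)"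
      by (rule norm_mv_le)
    also have "\<dots> \<le> (real CARD('m) * real CARD('n) * B1) * B2"
      using B1 B2 x by (intro mult_mono mult_left_mono) auto
    finally show "norm (f x *v g x) \<le> (real CARD('m) * real CARD('n) * B1) * B2" .
  qed
qed

lemma bdd_mm[intro]: assumes "bdd S (f :: _ \<Rightarrow> real^'n^'m)" "bdd S (g :: _ \<Rightarrow> real^'k^'n)" shows "bdd S (\<lambda>x. f x ** g x)"
proof -
  obtain B1 where B1: "\<And>x. x \<in> S \<Longrightarrow> norm (f x) \<le> B1" "0 \<le> B1" using bddE[OF assms(1)] by blast
  obtain B2 where B2: "\<And>x. x \<in> S \<Longrightarrow> norm (g x) \<le> B2" "0 \<le> B2" using bddE[OF assms(2)] by blast
  show ?thesis
  proof (rule bddI)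
    fix x assume x: "x \<in> S"
    have "norm (f x ** g x) \<le> real CARD('m) * real CARD('k) * (real CARD('n) * (norm (f x) * norm (g x)))"
      by (rule norm_mm_le)
    also have "\<dots> \<le> real CARD('m) * real CARD('k) * (real CARD('n) * (B1 * B2))"
      using B1 B2 x by (intro mult_mono mult_left_mono) auto
    finally show "norm (f x ** g x) \<le> real CARD('m) * real CARD('k) * (real CARD('n) * (B1 * B2))" .
  qed
qed

lemma bdd_transpose[intro]: assumes "bdd S (f :: _ \<Rightarrow> real^'n^'m)" shows "bdd S (\<lambda>x. transpose (f x))"
proof -
  obtain B1 where B1: "\<And>x. x \<in> S \<Longrightarrow> norm (f x) \<le> B1" "0 \<le> B1" using bddE[OF assms(1)] by blast
  show ?thesis
  proof (rule bddI)
    fix x assume x: "x \<in> S"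
    have "norm (transpose (f x)) \<le> (\<Sum>i\<in>(UNIV::'n set). \<Sum>j\<in>(UNIV::'m set). \<bar>transpose (f x) $ i $ j\<bar>)"
      by (rule norm_le_entries)
    also have "\<dots> \<le> (\<Sum>i\<in>(UNIV::'n set). \<Sum>j\<in>(UNIV::'m set). B1)"
      using B1(1)[OF x] by (intro sum_mono) (simp add: transpose_def, meson entry_le_norm order_trans)
    finally show "norm (transpose (f x)) \<le> real CARD('n) * (real CARD('m) * B1)" by simp
  qed
qed

lemma bdd_inner[intro]: assumes "bdd S (f :: _ \<Rightarrow> 'a::real_inner)" "bdd S g" shows "bdd S (\<lambda>x. f x \<bullet> g x)"
proof -
  have "bdd S (\<lambda>x. norm (f x) * norm (g x))" using assms by (intro bdd_mult bdd_norm)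
  then obtain B where B: "\<And>x. x \<in> S \<Longrightarrow> norm (norm (f x) * norm (g x)) \<le> B" unfolding bdd_def by blast
  show ?thesis
  proof (rule bddI)
    fix x assume "x \<in> S"
    then show "norm (f x \<bullet> g x) \<le> B"
      using B[of x] Cauchy_Schwarz_ineq2[of "f x" "g x"] by simp
  qed
qed

lemma bdd_pair[intro]: assumes "bdd S f" "bdd S g" shows "bdd S (\<lambda>x. (f x, g x))"
proof -
  have "bdd S (\<lambda>x. norm (f x) + norm (g x))" using assms by (intro bdd_add bdd_norm)
  then obtain B where B: "\<And>x. x \<in> S \<Longrightarrow> norm (norm (f x) + norm (g x)) \<le> B" unfolding bdd_def by blast
  show ?thesis
  proof (rule bddI)
    fix x assume "x \<in> S"
    then show "norm (f x, g x) \<le> B"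
      using B[of x] norm_Pair_le[of "f x" "g x"] by simp
  qed
qed

lemma bm_fst: "(\<lambda>x. (f x, g x)) \<in> borel_measurable M \<Longrightarrow> f \<in> borel_measurable M"
  using borel_measurable_continuous_on[OF continuous_on_fst[OF continuous_on_id], of "\<lambda>x. (f x, g x)" M]
  by simp

lemma bm_snd: "(\<lambda>x. (f x, g x)) \<in> borel_measurable M \<Longrightarrow> g \<in> borel_measurable M"
  using borel_measurable_continuous_on[OF continuous_on_snd[OF continuous_on_id], of "\<lambda>x. (f x, g x)" M]
  by simp

lemma mv_inner_transpose: "((G::real^'n^'m) *v v) \<bullet> w = v \<bullet> (transpose G *v w)"
proof -
  have "(G *v v) \<bullet> w = w \<bullet> (G *v v)" by (rule inner_commute)
  also have "\<dots> = (w v* G) \<bullet> v" by (rule dot_lmul_matrix[symmetric])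
  also have "\<dots> = v \<bullet> (transpose G *v w)" by (simp add: inner_commute transpose_matrix_vector)
  finally show ?thesis .
qed

lemma bounded_linear_mv_left: "bounded_linear (\<lambda>A::real^'n^'m. A *v v)"
proof -
  have "linear (\<lambda>A::real^'n^'m. A *v v)"
    by (rule linearI) (simp_all add: matrix_vector_mult_add_rdistrib matrix_vector_mult_scaleR
        scaleR_matrix_vector_assoc)
  then show ?thesis by (simp add: linear_conv_bounded_linear)
qed

context prob_space begin

lemma integrable_bdd: fixes f :: "'a \<Rightarrow> 'b::{banach, second_countable_topology}" assumes "f \<in> borel_measurable M" "bdd (space M) f" shows "integrable M f"
proof -
  obtain B where B: "\<And>x. x \<in> space M \<Longrightarrow> norm (f x) \<le> B" using assms(2) unfolding bdd_def by blast
  have "AE x in M. norm (f x) \<le> B" using B by (intro AE_I2)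
  then show ?thesis using assms(1) by (rule integrable_const_bound)
qed

lemma indep_mv_inner:
  fixes G :: "'a \<Rightarrow> real^'d^'d" and W y :: "'a \<Rightarrow> real^'d"
  assumes ind: "indep_var borel (\<lambda>\<omega>. (G \<omega>, W \<omega>)) borel (\<lambda>\<omega>. (0::real^'d^'d, y \<omega>))"
    and bG: "bdd (space M) G" and bW: "bdd (space M) W" and bY: "bdd (space M) y"
  shows "(\<integral>\<omega>. (G \<omega> *v y \<omega>) \<bullet> W \<omega> \<partial>M) = (\<integral>\<omega>. y \<omega> \<partial>M) \<bullet> (\<integral>\<omega>. transpose (G \<omega>) *v W \<omega> \<partial>M)"
proof -
  have m1: "(\<lambda>\<omega>. (G \<omega>, W \<omega>)) \<in> borel_measurable M" using ind by (rule indep_var_rv1)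
  have m2: "(\<lambda>\<omega>. (0::real^'d^'d, y \<omega>)) \<in> borel_measurable M" using ind by (rule indep_var_rv2)
  have [measurable]: "G \<in> borel_measurable M" "W \<in> borel_measurable M" "y \<in> borel_measurable M"
    using bm_fst[OF m1] bm_snd[OF m1] bm_snd[OF m2] by auto
  let ?F = "\<lambda>pq::((real^'d^'d) \<times> (real^'d)) \<times> ((real^'d^'d) \<times> (real^'d)). (fst (fst pq) *v snd (snd pq)) \<bullet> snd (fst pq)"
  have F: "?F \<in> borel_measurable (borel \<Otimes>\<^sub>M borel)"
    unfolding borel_prod by (auto intro!: borel_measurable_continuous_onI continuous_intros)
  have int: "integrable M (\<lambda>\<omega>. ?F ((G \<omega>, W \<omega>), (0, y \<omega>)))"
    using bG bW bY by (auto intro!: integrable_bdd)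
  have intGW: "integrable M (\<lambda>\<omega>. transpose (G \<omega>) *v W \<omega>)"
    using bG bW by (auto intro!: integrable_bdd)
  have "(\<integral>\<omega>. (G \<omega> *v y \<omega>) \<bullet> W \<omega> \<partial>M) = (\<integral>\<omega>. ?F ((G \<omega>, W \<omega>), (0, y \<omega>)) \<partial>M)" by simp
  also have "\<dots> = (\<integral>\<omega>. (\<integral>\<omega>'. ?F ((G \<omega>', W \<omega>'), (0, y \<omega>)) \<partial>M) \<partial>M)"
    by (rule indep_fubini(1)[OF ind F int])
  also have "\<dots> = (\<integral>\<omega>. y \<omega> \<bullet> (\<integral>\<omega>'. transpose (G \<omega>') *v W \<omega>' \<partial>M) \<partial>M)"
    by (simp add: mv_inner_transpose intGW)
  also have "\<dots> = (\<integral>\<omega>. y \<omega> \<partial>M) \<bullet> (\<integral>\<omega>. transpose (G \<omega>) *v W \<omega> \<partial>M)"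
    using integral_inner_left[where f=y] integrable_bdd[OF _ bY] by simp
  finally show ?thesis .
qed

lemma indep_mv_norm:
  fixes G :: "'a \<Rightarrow> real^'d^'d" and W y :: "'a \<Rightarrow> real^'d"
  assumes ind: "indep_var borel (\<lambda>\<omega>. (G \<omega>, W \<omega>)) borel (\<lambda>\<omega>. (0::real^'d^'d, y \<omega>))"
    and bG: "bdd (space M) G" and bY: "bdd (space M) y"
    and contr: "\<And>v. (\<integral>\<omega>. (norm (G \<omega> *v v))\<^sup>2 \<partial>M) \<le> \<rho> * (norm v)\<^sup>2"
  shows "(\<integral>\<omega>. (norm (G \<omega> *v y \<omega>))\<^sup>2 \<partial>M) \<le> \<rho> * (\<integral>\<omega>. (norm (y \<omega>))\<^sup>2 \<partial>M)"
proof -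
  have m1: "(\<lambda>\<omega>. (G \<omega>, W \<omega>)) \<in> borel_measurable M" using ind by (rule indep_var_rv1)
  have m2: "(\<lambda>\<omega>. (0::real^'d^'d, y \<omega>)) \<in> borel_measurable M" using ind by (rule indep_var_rv2)
  have [measurable]: "G \<in> borel_measurable M" "y \<in> borel_measurable M"
    using bm_fst[OF m1] bm_snd[OF m2] by auto
  let ?F = "\<lambda>pq::((real^'d^'d) \<times> (real^'d)) \<times> ((real^'d^'d) \<times> (real^'d)). (norm (fst (fst pq) *v snd (snd pq)))\<^sup>2"
  have F: "?F \<in> borel_measurable (borel \<Otimes>\<^sub>M borel)"
    unfolding borel_prod by (auto intro!: borel_measurable_continuous_onI continuous_intros)
  have int: "integrable M (\<lambda>\<omega>. ?F ((G \<omega>, W \<omega>), (0, y \<omega>)))"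
    using bG bY by (auto intro!: integrable_bdd)
  have "(\<integral>\<omega>. (norm (G \<omega> *v y \<omega>))\<^sup>2 \<partial>M) = (\<integral>\<omega>. ?F ((G \<omega>, W \<omega>), (0, y \<omega>)) \<partial>M)" by simp
  also have "\<dots> \<le> (\<integral>\<omega>. (\<lambda>q. \<rho> * (norm (snd q))\<^sup>2) (0::real^'d^'d, y \<omega>) \<partial>M)"
    apply (rule indep_fubini_le[OF ind F int])
    using bY apply (auto intro!: integrable_bdd)[1]
    using contr by simp
  finally show ?thesis by simp
qed

lemma indep_mv_mean:
  fixes G :: "'a \<Rightarrow> real^'d^'d" and W y :: "'a \<Rightarrow> real^'d"
  assumes ind: "indep_var borel (\<lambda>\<omega>. (G \<omega>, W \<omega>)) borel (\<lambda>\<omega>. (0::real^'d^'d, y \<omega>))"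
    and bG: "bdd (space M) G" and bY: "bdd (space M) y"
  shows "(\<integral>\<omega>. G \<omega> *v y \<omega> \<partial>M) = (\<integral>\<omega>. G \<omega> \<partial>M) *v (\<integral>\<omega>. y \<omega> \<partial>M)"
proof -
  have m1: "(\<lambda>\<omega>. (G \<omega>, W \<omega>)) \<in> borel_measurable M" using ind by (rule indep_var_rv1)
  have m2: "(\<lambda>\<omega>. (0::real^'d^'d, y \<omega>)) \<in> borel_measurable M" using ind by (rule indep_var_rv2)
  have [measurable]: "G \<in> borel_measurable M" "y \<in> borel_measurable M"
    using bm_fst[OF m1] bm_snd[OF m2] by auto
  let ?F = "\<lambda>pq::((real^'d^'d) \<times> (real^'d)) \<times> ((real^'d^'d) \<times> (real^'d)). fst (fst pq) *v snd (snd pq)"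
  have F: "?F \<in> borel_measurable (borel \<Otimes>\<^sub>M borel)"
    unfolding borel_prod by (auto intro!: borel_measurable_continuous_onI continuous_intros)
  have int: "integrable M (\<lambda>\<omega>. ?F ((G \<omega>, W \<omega>), (0, y \<omega>)))"
    using bG bY by (auto intro!: integrable_bdd)
  have intG: "integrable M G" using bG by (auto intro!: integrable_bdd)
  have "(\<integral>\<omega>. G \<omega> *v y \<omega> \<partial>M) = (\<integral>\<omega>. ?F ((G \<omega>, W \<omega>), (0, y \<omega>)) \<partial>M)" by simp
  also have "\<dots> = (\<integral>\<omega>. (\<integral>\<omega>'. ?F ((G \<omega>', W \<omega>'), (0, y \<omega>)) \<partial>M) \<partial>M)"
    by (rule indep_fubini(1)[OF ind F int])
  also have "\<dots> = (\<integral>\<omega>. (\<integral>\<omega>'. G \<omega>' \<partial>M) *v y \<omega> \<partial>M)"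
    using integral_bounded_linear[OF bounded_linear_mv_left intG] by simp
  also have "\<dots> = (\<integral>\<omega>. G \<omega> \<partial>M) *v (\<integral>\<omega>. y \<omega> \<partial>M)"
    using bY by (intro integral_bounded_linear[OF matrix_vector_mul_bounded_linear]) (auto intro!: integrable_bdd)
  finally show ?thesis .
qed

end

lemma sq_sum_weighted:
  fixes u v l :: real assumes "0 < l"
  shows "(u + v)\<^sup>2 \<le> (1 + l) * u\<^sup>2 + (1 + 1 / l) * v\<^sup>2"
proof -
  have "0 \<le> (l * u - v)\<^sup>2 / l" using assms by simp
  also have "(l * u - v)\<^sup>2 / l = l * u\<^sup>2 - 2 * u * v + v\<^sup>2 / l"
    using assms by (simp add: power2_eq_square field_simps)
  finally have "2 * u * v \<le> l * u\<^sup>2 + v\<^sup>2 / l" by simp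
  then show ?thesis by (simp add: power2_eq_square field_simps)
qed

lemma norm_sq_weighted:
  fixes x y :: "'b::real_normed_vector" and l :: real assumes "0 < l"
  shows "(norm (x + y))\<^sup>2 \<le> (1 + l) * (norm x)\<^sup>2 + (1 + 1 / l) * (norm y)\<^sup>2"
proof -
  have "(norm (x + y))\<^sup>2 \<le> (norm x + norm y)\<^sup>2"
    by (simp add: norm_triangle_ineq power_mono)
  also have "\<dots> \<le> (1 + l) * (norm x)\<^sup>2 + (1 + 1 / l) * (norm y)\<^sup>2"
    by (rule sq_sum_weighted[OF assms])
  finally show ?thesis .
qed

lemma sqrt_bound_from_weighted:
  fixes a b c :: real
  assumes a: "0 \<le> a" and b: "0 \<le> b"
    and h: "\<And>l. 0 < l \<Longrightarrow> c \<le> (1 + l) * a + (1 + 1 / l) * b"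
  shows "sqrt c \<le> sqrt a + sqrt b"
proof -
  have "c \<le> (sqrt a + sqrt b)\<^sup>2"
  proof (cases "a = 0")
    case True
    have "c \<le> b + e" if e: "0 < e" for e
    proof (cases "b = 0")
      case True
      then show ?thesis using h[of 1] \<open>a = 0\<close> e by simp
    next
      case False
      then have "0 < b" using b by simp
      then have "0 < b / e" using e by simp
      from h[OF this] have "b * c \<le> b * (b + e)" using \<open>a = 0\<close> \<open>0 < b\<close> e by (simp add: field_simps)
      then show ?thesis using \<open>0 < b\<close> by (simp add: mult_le_cancel_left_pos)
    qed
    then have "c \<le> b" by (rule field_le_epsilon)
    then show ?thesis using True b by (simp add: power2_eq_square)
  next
    case False
    then have a0: "0 < a" using a by simp
    show ?thesis
    proof (cases "b = 0")
      case True
      have "c \<le> a + e" if e: "0 < e" for e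
      proof -
        have "0 < e / a" using e a0 by simp
        from h[OF this] have "a * c \<le> a * (a + e)" using True a0 e by (simp add: field_simps)
        then show ?thesis using a0 by (simp add: mult_le_cancel_left_pos)
      qed
      then have "c \<le> a" by (rule field_le_epsilon)
      then show ?thesis using True a by (simp add: power2_eq_square)
    next
      case False
      then have b0: "0 < b" using b by simp
      define l where "l = sqrt b / sqrt a"
      have l0: "0 < l" unfolding l_def using a0 b0 by simp
      have sa: "sqrt a * sqrt a = a" and sb: "sqrt b * sqrt b = b" using a b by simp_all
      have "(1 + l) * a + (1 + 1 / l) * b = a + b + 2 * (sqrt a * sqrt b)"
        unfolding l_def using a0 b0 sa sb
        by (simp add: field_simps)
      also have "\<dots> = (sqrt a + sqrt b)\<^sup>2"
        using sa sb by (simp add: power2_eq_square algebra_simps)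
      finally show ?thesis using h[OF l0] by simp
    qed
  qed
  then have "sqrt c \<le> sqrt ((sqrt a + sqrt b)\<^sup>2)" by (rule real_sqrt_le_mono)
  also have "\<dots> = sqrt a + sqrt b" using a b by simp
  finally show ?thesis .
qed

context prob_space begin

lemma L2_triangle:
  fixes X Y :: "'a \<Rightarrow> 'b::euclidean_space"
  assumes [measurable]: "X \<in> borel_measurable M" "Y \<in> borel_measurable M"
    and bX: "bdd (space M) X" and bY: "bdd (space M) Y"
  shows "sqrt (\<integral>\<omega>. (norm (X \<omega> + Y \<omega>))\<^sup>2 \<partial>M) \<le> sqrt (\<integral>\<omega>. (norm (X \<omega>))\<^sup>2 \<partial>M) + sqrt (\<integral>\<omega>. (norm (Y \<omega>))\<^sup>2 \<partial>M)"
proof (rule sqrt_bound_from_weighted)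
  show "0 \<le> (\<integral>\<omega>. (norm (X \<omega>))\<^sup>2 \<partial>M)" by simp
  show "0 \<le> (\<integral>\<omega>. (norm (Y \<omega>))\<^sup>2 \<partial>M)" by simp
  fix l :: real assume l: "0 < l"
  have iX: "integrable M (\<lambda>\<omega>. (norm (X \<omega>))\<^sup>2)" using bX by (intro integrable_bdd) auto
  have iY: "integrable M (\<lambda>\<omega>. (norm (Y \<omega>))\<^sup>2)" using bY by (intro integrable_bdd) auto
  have iXY: "integrable M (\<lambda>\<omega>. (norm (X \<omega> + Y \<omega>))\<^sup>2)" using bX bY by (intro integrable_bdd) auto
  have "(\<integral>\<omega>. (norm (X \<omega> + Y \<omega>))\<^sup>2 \<partial>M) \<le> (\<integral>\<omega>. (1 + l) * (norm (X \<omega>))\<^sup>2 + (1 + 1 / l) * (norm (Y \<omega>))\<^sup>2 \<partial>M)"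
    using iX iY iXY by (intro integral_mono norm_sq_weighted l) auto
  also have "\<dots> = (1 + l) * (\<integral>\<omega>. (norm (X \<omega>))\<^sup>2 \<partial>M) + (1 + 1 / l) * (\<integral>\<omega>. (norm (Y \<omega>))\<^sup>2 \<partial>M)"
    using iX iY by simp
  finally show "(\<integral>\<omega>. (norm (X \<omega> + Y \<omega>))\<^sup>2 \<partial>M) \<le> (1 + l) * (\<integral>\<omega>. (norm (X \<omega>))\<^sup>2 \<partial>M) + (1 + 1 / l) * (\<integral>\<omega>. (norm (Y \<omega>))\<^sup>2 \<partial>M)" .
qed

lemma L2_scale:
  fixes X :: "'a \<Rightarrow> 'b::euclidean_space"
  shows "sqrt (\<integral>\<omega>. (norm (c *\<^sub>R X \<omega>))\<^sup>2 \<partial>M) = \<bar>c\<bar> * sqrt (\<integral>\<omega>. (norm (X \<omega>))\<^sup>2 \<partial>M)"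
proof -
  have "(\<integral>\<omega>. (norm (c *\<^sub>R X \<omega>))\<^sup>2 \<partial>M) = c\<^sup>2 * (\<integral>\<omega>. (norm (X \<omega>))\<^sup>2 \<partial>M)"
    by (simp add: power_mult_distrib)
  then show ?thesis by (simp add: real_sqrt_mult)
qed

lemma L2_sum:
  fixes X :: "'i \<Rightarrow> 'a \<Rightarrow> 'b::euclidean_space"
  assumes "finite I" and m: "\<And>i. i \<in> I \<Longrightarrow> X i \<in> borel_measurable M"
    and b: "\<And>i. i \<in> I \<Longrightarrow> bdd (space M) (X i)"
  shows "sqrt (\<integral>\<omega>. (norm (\<Sum>i\<in>I. X i \<omega>))\<^sup>2 \<partial>M) \<le> (\<Sum>i\<in>I. sqrt (\<integral>\<omega>. (norm (X i \<omega>))\<^sup>2 \<partial>M))"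
  using assms
proof (induction I rule: finite_induct)
  case empty then show ?case by simp
next
  case (insert j I)
  have mI: "(\<lambda>\<omega>. \<Sum>i\<in>I. X i \<omega>) \<in> borel_measurable M"
    using insert by (intro borel_measurable_sum) auto
  have bI: "bdd (space M) (\<lambda>\<omega>. \<Sum>i\<in>I. X i \<omega>)"
    using insert by (intro bdd_sum) auto
  have "sqrt (\<integral>\<omega>. (norm (\<Sum>i\<in>insert j I. X i \<omega>))\<^sup>2 \<partial>M) = sqrt (\<integral>\<omega>. (norm (X j \<omega> + (\<Sum>i\<in>I. X i \<omega>)))\<^sup>2 \<partial>M)"
    using insert by simp
  also have "\<dots> \<le> sqrt (\<integral>\<omega>. (norm (X j \<omega>))\<^sup>2 \<partial>M) + sqrt (\<integral>\<omega>. (norm (\<Sum>i\<in>I. X i \<omega>))\<^sup>2 \<partial>M)"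
    using insert mI bI by (intro L2_triangle) auto
  also have "\<dots> \<le> sqrt (\<integral>\<omega>. (norm (X j \<omega>))\<^sup>2 \<partial>M) + (\<Sum>i\<in>I. sqrt (\<integral>\<omega>. (norm (X i \<omega>))\<^sup>2 \<partial>M))"
    using insert by simp
  finally show ?case using insert by simp
qed

lemma rec_step:
  fixes G :: "'a \<Rightarrow> real^'d^'d" and W y :: "'a \<Rightarrow> real^'d"
  assumes ind: "indep_var borel (\<lambda>\<omega>. (G \<omega>, W \<omega>)) borel (\<lambda>\<omega>. (0::real^'d^'d, y \<omega>))"
    and bG: "bdd (space M) G" and bW: "bdd (space M) W" and bY: "bdd (space M) y"
    and contr: "\<And>v. (\<integral>\<omega>. (norm (G \<omega> *v v))\<^sup>2 \<partial>M) \<le> \<rho> * (norm v)\<^sup>2"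
  shows "(\<integral>\<omega>. (norm (G \<omega> *v y \<omega> + W \<omega>))\<^sup>2 \<partial>M) \<le>
    \<rho> * (\<integral>\<omega>. (norm (y \<omega>))\<^sup>2 \<partial>M) + (\<integral>\<omega>. (norm (W \<omega>))\<^sup>2 \<partial>M)
    + 2 * ((\<integral>\<omega>. y \<omega> \<partial>M) \<bullet> (\<integral>\<omega>. transpose (G \<omega>) *v W \<omega> \<partial>M))"
proof -
  have m1: "(\<lambda>\<omega>. (G \<omega>, W \<omega>)) \<in> borel_measurable M" using ind by (rule indep_var_rv1)
  have m2: "(\<lambda>\<omega>. (0::real^'d^'d, y \<omega>)) \<in> borel_measurable M" using ind by (rule indep_var_rv2)
  have [measurable]: "G \<in> borel_measurable M" "W \<in> borel_measurable M" "y \<in> borel_measurable M"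
    using bm_fst[OF m1] bm_snd[OF m1] bm_snd[OF m2] by auto
  have e: "(norm (G \<omega> *v y \<omega> + W \<omega>))\<^sup>2 = (norm (G \<omega> *v y \<omega>))\<^sup>2 + (norm (W \<omega>))\<^sup>2 + 2 * ((G \<omega> *v y \<omega>) \<bullet> W \<omega>)" for \<omega>
    by (simp add: power2_norm_eq_inner inner_add_left inner_add_right inner_commute)
  have i1: "integrable M (\<lambda>\<omega>. (norm (G \<omega> *v y \<omega>))\<^sup>2)" using bG bY by (intro integrable_bdd) auto
  have i2: "integrable M (\<lambda>\<omega>. (norm (W \<omega>))\<^sup>2)" using bW by (intro integrable_bdd) auto
  have i3: "integrable M (\<lambda>\<omega>. (G \<omega> *v y \<omega>) \<bullet> W \<omega>)" using bG bY bW by (intro integrable_bdd) auto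
  have "(\<integral>\<omega>. (norm (G \<omega> *v y \<omega> + W \<omega>))\<^sup>2 \<partial>M) = (\<integral>\<omega>. (norm (G \<omega> *v y \<omega>))\<^sup>2 \<partial>M) + (\<integral>\<omega>. (norm (W \<omega>))\<^sup>2 \<partial>M)
      + 2 * (\<integral>\<omega>. (G \<omega> *v y \<omega>) \<bullet> W \<omega> \<partial>M)"
    unfolding e using i1 i2 i3 by simp
  also have "(\<integral>\<omega>. (G \<omega> *v y \<omega>) \<bullet> W \<omega> \<partial>M) = (\<integral>\<omega>. y \<omega> \<partial>M) \<bullet> (\<integral>\<omega>. transpose (G \<omega>) *v W \<omega> \<partial>M)"
    by (rule indep_mv_inner[OF ind bG bW bY])
  also have "(\<integral>\<omega>. (norm (G \<omega> *v y \<omega>))\<^sup>2 \<partial>M) \<le> \<rho> * (\<integral>\<omega>. (norm (y \<omega>))\<^sup>2 \<partial>M)"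
    by (rule indep_mv_norm[OF ind bG bY contr])
  finally show ?thesis by simp
qed

lemma rec_mean:
  fixes G :: "'a \<Rightarrow> real^'d^'d" and W y :: "'a \<Rightarrow> real^'d"
  assumes ind: "indep_var borel (\<lambda>\<omega>. (G \<omega>, W \<omega>)) borel (\<lambda>\<omega>. (0::real^'d^'d, y \<omega>))"
    and bG: "bdd (space M) G" and bW: "bdd (space M) W" and bY: "bdd (space M) y"
  shows "(\<integral>\<omega>. G \<omega> *v y \<omega> + W \<omega> \<partial>M) = (\<integral>\<omega>. G \<omega> \<partial>M) *v (\<integral>\<omega>. y \<omega> \<partial>M) + (\<integral>\<omega>. W \<omega> \<partial>M)"
proof -
  have m1: "(\<lambda>\<omega>. (G \<omega>, W \<omega>)) \<in> borel_measurable M" using ind by (rule indep_var_rv1)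
  have m2: "(\<lambda>\<omega>. (0::real^'d^'d, y \<omega>)) \<in> borel_measurable M" using ind by (rule indep_var_rv2)
  have [measurable]: "G \<in> borel_measurable M" "W \<in> borel_measurable M" "y \<in> borel_measurable M"
    using bm_fst[OF m1] bm_snd[OF m1] bm_snd[OF m2] by auto
  have i1: "integrable M (\<lambda>\<omega>. G \<omega> *v y \<omega>)" using bG bY by (intro integrable_bdd) auto
  have i2: "integrable M W" using bW by (intro integrable_bdd) auto
  show ?thesis using i1 i2 indep_mv_mean[OF ind bG bY] by simp
qed

end

primrec yR :: "('z \<Rightarrow> real^'d^'d) \<Rightarrow> real \<Rightarrow> (nat \<Rightarrow> 'z \<Rightarrow> real^'d) \<Rightarrow> real^'d \<Rightarrow> (nat \<Rightarrow> 'z) \<Rightarrow> nat \<Rightarrow> real^'d" where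
  "yR Ac e xi y0 zs 0 = y0"
| "yR Ac e xi y0 zs (Suc h) = (mat 1 - e *\<^sub>R Ac (zs (Suc h))) *v yR Ac e xi y0 zs h + xi h (zs (Suc h))"

primrec gamR :: "('z \<Rightarrow> real^'d^'d) \<Rightarrow> real \<Rightarrow> (nat \<Rightarrow> 'z) \<Rightarrow> nat \<Rightarrow> real^'d^'d" where
  "gamR Ac e zs 0 = mat 1"
| "gamR Ac e zs (Suc h) = (mat 1 - e *\<^sub>R Ac (zs (Suc h))) ** gamR Ac e zs h"

primrec pw :: "real^'d^'d \<Rightarrow> real \<Rightarrow> nat \<Rightarrow> real^'d \<Rightarrow> real^'d" where
  "pw B e 0 v = v"
| "pw B e (Suc h) v = (mat 1 - e *\<^sub>R B) *v pw B e h v"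

lemma mv_uminus_left[simp]: "(- (A::real^'n^'m)) *v v = - (A *v v)"
  by (simp add: matrix_vector_mult_def sum_negf vec_eq_iff)

lemma gamR_yR: "gamR Ac e zs h *v v = yR Ac e (\<lambda>_ _. 0) v zs h"
  by (induction h) (simp_all add: matrix_vector_mul_assoc[symmetric])

lemma local_decomp:
  assumes "\<And>z. ep z = Ac z *v th - bc z"
  shows "local_run Ac bc e zs x h = th + gamR Ac e zs h *v (x - th) + yR Ac e (\<lambda>_ z. - e *\<^sub>R ep z) 0 zs h"
proof (induction h)
  case 0 then show ?case by simp
next
  case (Suc h)
  let ?B = "mat 1 - e *\<^sub>R Ac (zs (Suc h))"
  have "local_run Ac bc e zs x (Suc h) = local_run Ac bc e zs x h - e *\<^sub>R (Ac (zs (Suc h)) *v local_run Ac bc e zs x h - bc (zs (Suc h)))"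
    by simp
  also have "\<dots> = ?B *v (local_run Ac bc e zs x h - th) + th - e *\<^sub>R ep (zs (Suc h))"
    unfolding assms by (simp add: algebra_simps matrix_vector_mult_diff_rdistrib scaleR_matrix_vector_assoc)
  also have "\<dots> = th + gamR Ac e zs (Suc h) *v (x - th) + yR Ac e (\<lambda>_ z. - e *\<^sub>R ep z) 0 zs (Suc h)"
    unfolding Suc by (simp add: algebra_simps matrix_vector_mul_assoc[symmetric] matrix_vector_right_distrib)
  finally show ?case .
qed

lemma x_decomp:
  "gamR Ac e zs h *v dl - pw Ab e h dl + yR Ac e (\<lambda>_ z. - e *\<^sub>R ep z) 0 zs h
   = yR Ac e (\<lambda>k z. - e *\<^sub>R ((Ac z - Ab) *v pw Ab e k dl) - e *\<^sub>R ep z) 0 zs h"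
proof (induction h)
  case 0 then show ?case by simp
next
  case (Suc h)
  show ?case
    unfolding yR.simps gamR.simps pw.simps Suc[symmetric]
    by (simp add: algebra_simps matrix_vector_mul_assoc[symmetric] matrix_vector_right_distrib
        matrix_vector_mult_diff_rdistrib scaleR_matrix_vector_assoc matrix_vector_mult_diff_distrib)
qed

locale fed = prob_space M for M :: "'w measure" +
  fixes N :: nat and Zs :: "'z measure" and pi :: "nat \<Rightarrow> 'z measure"
    and A :: "nat \<Rightarrow> 'z \<Rightarrow> real^'d^'d" and eps :: "nat \<Rightarrow> 'z \<Rightarrow> real^'d"
    and Z :: "nat \<Rightarrow> nat \<Rightarrow> nat \<Rightarrow> 'w \<Rightarrow> 'z"
    and eta :: "nat \<Rightarrow> real" and H :: "nat \<Rightarrow> nat" and a eta_inf CA CE :: real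
  assumes N_pos: "1 \<le> N"
    and pi_prob: "\<And>c. c < N \<Longrightarrow> prob_space (pi c)"
    and pi_sets: "\<And>c. c < N \<Longrightarrow> sets (pi c) = sets Zs"
    and A_meas: "\<And>c. c < N \<Longrightarrow> A c \<in> borel_measurable Zs"
    and eps_meas: "\<And>c. c < N \<Longrightarrow> eps c \<in> borel_measurable Zs"
    and A_bnd: "\<And>c z. c < N \<Longrightarrow> z \<in> space Zs \<Longrightarrow> norm (A c z) \<le> CA"
    and eps_bnd: "\<And>c z. c < N \<Longrightarrow> z \<in> space Zs \<Longrightarrow> norm (eps c z) \<le> CE"
    and eps_mean: "\<And>c. c < N \<Longrightarrow> (\<integral>z. eps c z \<partial>pi c) = 0"
    and contr: "\<And>c e u. c < N \<Longrightarrow> 0 < e \<Longrightarrow> e \<le> eta_inf \<Longrightarrow>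
        (\<integral>z. (norm ((mat 1 - e *\<^sub>R A c z) *v u))\<^sup>2 \<partial>pi c) \<le> (1 - e * a)\<^sup>2 * (norm u)\<^sup>2"
    and a_pos: "0 < a" and eta_inf_a: "eta_inf * a \<le> 1 / 2"
    and Z_meas: "\<And>c s h. c < N \<Longrightarrow> 1 \<le> s \<Longrightarrow> 1 \<le> h \<Longrightarrow> h \<le> H s \<Longrightarrow> Z c s h \<in> measurable M Zs"
    and Z_distr: "\<And>c s h. c < N \<Longrightarrow> 1 \<le> s \<Longrightarrow> 1 \<le> h \<Longrightarrow> h \<le> H s \<Longrightarrow> distr M Zs (Z c s h) = pi c"
    and Z_indep: "indep_vars (\<lambda>_. Zs) (\<lambda>(c, s, h). Z c s h)
                    {(c, s, h). c < N \<and> 1 \<le> s \<and> 1 \<le> h \<and> h \<le> H s}"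
    and eta_pos: "\<And>s. 1 \<le> s \<Longrightarrow> 0 < eta s"
    and eta_le: "\<And>s. 1 \<le> s \<Longrightarrow> eta s \<le> eta_inf"
begin

definition II :: "(nat \<times> nat \<times> nat) set" where
  "II = {(c, s, h). c < N \<and> 1 \<le> s \<and> 1 \<le> h \<and> h \<le> H s}"

definition ZZ :: "nat \<times> nat \<times> nat \<Rightarrow> 'w \<Rightarrow> 'z" where
  "ZZ = (\<lambda>(c, s, h). Z c s h)"

definition FF :: "(nat \<times> nat \<times> nat) set \<Rightarrow> 'w measure" where
  "FF J = vimage_algebra (space M) (\<lambda>\<omega>. restrict (\<lambda>i. ZZ i \<omega>) J) (PiM J (\<lambda>_. Zs))"

lemma II_iff[simp]: "(c, s, h) \<in> II \<longleftrightarrow> c < N \<and> 1 \<le> s \<and> 1 \<le> h \<and> h \<le> H s"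
  by (simp add: II_def)

lemma space_FF[simp]: "space (FF J) = space M"
  by (simp add: FF_def)

lemma Z_space: "c < N \<Longrightarrow> 1 \<le> s \<Longrightarrow> 1 \<le> h \<Longrightarrow> h \<le> H s \<Longrightarrow> \<omega> \<in> space M \<Longrightarrow> Z c s h \<omega> \<in> space Zs"
  using Z_meas by (auto simp: measurable_def)

lemma ZZ_space: "i \<in> II \<Longrightarrow> \<omega> \<in> space M \<Longrightarrow> ZZ i \<omega> \<in> space Zs"
  by (cases i) (auto simp: ZZ_def intro!: Z_space)

lemma ZZ_meas: "i \<in> II \<Longrightarrow> ZZ i \<in> measurable M Zs"
  by (cases i) (auto simp: ZZ_def intro!: Z_meas)

lemma R_FF: assumes "J \<subseteq> II"
  shows "(\<lambda>\<omega>. restrict (\<lambda>i. ZZ i \<omega>) J) \<in> measurable (FF J) (PiM J (\<lambda>_. Zs))"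
  unfolding FF_def
proof (rule measurable_vimage_algebra1)
  show "(\<lambda>\<omega>. restrict (\<lambda>i. ZZ i \<omega>) J) \<in> space M \<rightarrow> space (Pi\<^sub>M J (\<lambda>_. Zs))"
    using assms ZZ_space by (auto simp: space_PiM)
qed

lemma Z_FF: assumes "J \<subseteq> II" "(c, s, h) \<in> J" shows "Z c s h \<in> measurable (FF J) Zs"
proof -
  have "(\<lambda>\<omega>. restrict (\<lambda>i. ZZ i \<omega>) J (c, s, h)) \<in> measurable (FF J) Zs"
    using measurable_compose[OF R_FF[OF assms(1)] measurable_component_singleton[OF assms(2)]] by simp
  moreover have "(\<lambda>\<omega>. restrict (\<lambda>i. ZZ i \<omega>) J (c, s, h)) = Z c s h"
    using assms(2) by (auto simp: ZZ_def)
  ultimately show ?thesis by simp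
qed

lemma indep_FF:
  fixes X Y :: "'w \<Rightarrow> 'b::topological_space"
  assumes "J \<subseteq> II" "K \<subseteq> II" "J \<inter> K = {}"
    and "X \<in> borel_measurable (FF J)" "Y \<in> borel_measurable (FF K)"
  shows "indep_var borel X borel Y"
proof -
  have "indep_vars (\<lambda>_. Zs) ZZ II"
    using Z_indep unfolding ZZ_def II_def .
  then have "indep_var (PiM J (\<lambda>_. Zs)) (\<lambda>\<omega>. restrict (\<lambda>i. ZZ i \<omega>) J) (PiM K (\<lambda>_. Zs)) (\<lambda>\<omega>. restrict (\<lambda>i. ZZ i \<omega>) K)"
    using assms(1-3) by (intro indep_var_restrict) auto
  then show ?thesis
    using assms(4,5) unfolding FF_def by (rule indep_var_vimage)
qed

lemma FF_M: assumes "J \<subseteq> II" "f \<in> measurable (FF J) N'" shows "f \<in> measurable M N'"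
proof -
  have R: "(\<lambda>\<omega>. restrict (\<lambda>i. ZZ i \<omega>) J) \<in> measurable M (PiM J (\<lambda>_. Zs))"
    using assms(1) ZZ_meas by (intro measurable_restrict) auto
  have "sets (FF J) \<subseteq> sets M"
    unfolding FF_def using R
    by (subst sets_vimage_algebra2) (auto simp: measurable_def)
  then show ?thesis using measurable_mono[of N' N' "FF J" M] assms(2) by auto
qed

lemma E_Z: fixes f :: "'z \<Rightarrow> 'b::{banach, second_countable_topology}" assumes "c < N" "1 \<le> s" "1 \<le> h" "h \<le> H s" "f \<in> borel_measurable Zs"
  shows "(\<integral>\<omega>. f (Z c s h \<omega>) \<partial>M) = (\<integral>z. f z \<partial>pi c)"
proof -
  have "(\<integral>z. f z \<partial>pi c) = (\<integral>z. f z \<partial>distr M Zs (Z c s h))" using Z_distr[OF assms(1-4)] by simp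
  also have "\<dots> = (\<integral>\<omega>. f (Z c s h \<omega>) \<partial>M)" using Z_meas[OF assms(1-4)] assms(5) by (rule Bochner_Integration.integral_distr)
  finally show ?thesis by simp
qed

end

context fed begin

definition stepset :: "nat \<Rightarrow> nat \<Rightarrow> nat \<Rightarrow> (nat \<times> nat \<times> nat) set" where
  "stepset c s h = {(c', s', k). c' = c \<and> s' = s \<and> 1 \<le> k \<and> k \<le> h}"

lemma stepset_II: "c < N \<Longrightarrow> 1 \<le> s \<Longrightarrow> h \<le> H s \<Longrightarrow> stepset c s h \<subseteq> II"
  by (auto simp: stepset_def)

lemma AZ_meas: "c < N \<Longrightarrow> Z c s k \<in> measurable F Zs \<Longrightarrow> (\<lambda>\<omega>. A c (Z c s k \<omega>)) \<in> borel_measurable F"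
  using measurable_compose[of "Z c s k" F Zs "A c" borel] A_meas by auto

lemma fZ_meas: "f \<in> borel_measurable Zs \<Longrightarrow> Z c s k \<in> measurable F Zs \<Longrightarrow> (\<lambda>\<omega>. f (Z c s k \<omega>)) \<in> borel_measurable F"
  using measurable_compose[of "Z c s k" F Zs f borel] by auto

lemma yR_meas:
  assumes c: "c < N" and Zm: "\<And>k. 1 \<le> k \<Longrightarrow> k \<le> h \<Longrightarrow> Z c s k \<in> measurable F Zs"
    and xim: "\<And>k. k < h \<Longrightarrow> xi k \<in> borel_measurable Zs"
  shows "(\<lambda>\<omega>. yR (A c) e xi y0 (\<lambda>k. Z c s k \<omega>) h) \<in> borel_measurable F"
  using Zm xim
proof (induction h)
  case 0 then show ?case by simp
next
  case (Suc h)
  have IH: "(\<lambda>\<omega>. yR (A c) e xi y0 (\<lambda>k. Z c s k \<omega>) h) \<in> borel_measurable F"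
    using Suc by auto
  have Zs: "Z c s (Suc h) \<in> measurable F Zs" using Suc by auto
  have m1: "(\<lambda>\<omega>. A c (Z c s (Suc h) \<omega>)) \<in> borel_measurable F" by (rule AZ_meas[OF c Zs])
  have m2: "(\<lambda>\<omega>. xi h (Z c s (Suc h) \<omega>)) \<in> borel_measurable F"
    by (rule fZ_meas[OF _ Zs]) (use Suc in auto)
  show ?case
    using IH m1 m2 by simp
qed

lemma gamR_meas:
  assumes c: "c < N" and Zm: "\<And>k. 1 \<le> k \<Longrightarrow> k \<le> h \<Longrightarrow> Z c s k \<in> measurable F Zs"
  shows "(\<lambda>\<omega>. gamR (A c) e (\<lambda>k. Z c s k \<omega>) h) \<in> borel_measurable F"
  using Zm
proof (induction h)
  case 0 then show ?case by simp
next
  case (Suc h)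
  have IH: "(\<lambda>\<omega>. gamR (A c) e (\<lambda>k. Z c s k \<omega>) h) \<in> borel_measurable F"
    using Suc by auto
  have Zs: "Z c s (Suc h) \<in> measurable F Zs" using Suc by auto
  have m1: "(\<lambda>\<omega>. A c (Z c s (Suc h) \<omega>)) \<in> borel_measurable F" by (rule AZ_meas[OF c Zs])
  show ?case
    using IH m1 by simp
qed

lemma AZ_bdd: "c < N \<Longrightarrow> 1 \<le> s \<Longrightarrow> 1 \<le> k \<Longrightarrow> k \<le> H s \<Longrightarrow> bdd (space M) (\<lambda>\<omega>. A c (Z c s k \<omega>))"
  by (rule bddI[where B=CA]) (auto intro!: A_bnd Z_space)

lemma fZ_bdd: assumes "1 \<le> s" "c < N" "1 \<le> k" "k \<le> H s" "\<And>z. z \<in> space Zs \<Longrightarrow> norm (f z) \<le> B"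
  shows "bdd (space M) (\<lambda>\<omega>. f (Z c s k \<omega>))"
  by (rule bddI[where B=B]) (rule assms(5), rule Z_space, use assms in auto)

lemma yR_bdd:
  assumes c: "c < N" "1 \<le> s" "h \<le> H s"
    and xib: "\<And>k z. k < h \<Longrightarrow> z \<in> space Zs \<Longrightarrow> norm (xi k z) \<le> B"
  shows "bdd (space M) (\<lambda>\<omega>. yR (A c) e xi y0 (\<lambda>k. Z c s k \<omega>) h)"
  using c(3) xib
proof (induction h)
  case 0 then show ?case by simp
next
  case (Suc h)
  have IH: "bdd (space M) (\<lambda>\<omega>. yR (A c) e xi y0 (\<lambda>k. Z c s k \<omega>) h)" using Suc by auto
  have b1: "bdd (space M) (\<lambda>\<omega>. A c (Z c s (Suc h) \<omega>))" using Suc c by (intro AZ_bdd) auto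
  have b2: "bdd (space M) (\<lambda>\<omega>. xi h (Z c s (Suc h) \<omega>))" using Suc c by (intro fZ_bdd[where B=B]) auto
  have "bdd (space M) (\<lambda>\<omega>. (mat 1 - e *\<^sub>R A c (Z c s (Suc h) \<omega>)) *v yR (A c) e xi y0 (\<lambda>k. Z c s k \<omega>) h + xi h (Z c s (Suc h) \<omega>))"
    using IH b1 b2 by (intro bdd_add bdd_mv bdd_diff bdd_scaleR bdd_const) auto
  then show ?case by simp
qed

lemma gamR_bdd:
  assumes c: "c < N" "1 \<le> s" "h \<le> H s"
  shows "bdd (space M) (\<lambda>\<omega>. gamR (A c) e (\<lambda>k. Z c s k \<omega>) h)"
  using c(3)
proof (induction h)
  case 0 then show ?case by simp
next
  case (Suc h)
  have IH: "bdd (space M) (\<lambda>\<omega>. gamR (A c) e (\<lambda>k. Z c s k \<omega>) h)" using Suc by auto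
  have b1: "bdd (space M) (\<lambda>\<omega>. A c (Z c s (Suc h) \<omega>))" using Suc c by (intro AZ_bdd) auto
  have "bdd (space M) (\<lambda>\<omega>. (mat 1 - e *\<^sub>R A c (Z c s (Suc h) \<omega>)) ** gamR (A c) e (\<lambda>k. Z c s k \<omega>) h)"
    using IH b1 by (intro bdd_mm bdd_diff bdd_scaleR bdd_const) auto
  then show ?case by simp
qed

end

context fed begin

lemma rho_bounds: "1 \<le> s \<Longrightarrow> 0 \<le> 1 - eta s * a \<and> 1 - eta s * a \<le> 1"
proof -
  assume s: "1 \<le> s"
  have "eta s * a \<le> eta_inf * a" using eta_le[OF s] a_pos by (simp add: mult_right_mono)
  moreover have "0 < eta s * a" using eta_pos[OF s] a_pos by simp
  ultimately show ?thesis using eta_inf_a by linarith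
qed

lemma step_ind:
  assumes c: "c < N" "1 \<le> s" "Suc h \<le> H s"
    and xim: "\<And>k. k \<le> h \<Longrightarrow> xi k \<in> borel_measurable Zs"
  shows "indep_var borel (\<lambda>\<omega>. (mat 1 - e *\<^sub>R A c (Z c s (Suc h) \<omega>), xi h (Z c s (Suc h) \<omega>)))
                     borel (\<lambda>\<omega>. (0::real^'d^'d, yR (A c) e xi y0 (\<lambda>k. Z c s k \<omega>) h))"
proof (rule indep_FF)
  show J: "{(c, s, Suc h)} \<subseteq> II" using c by auto
  show K: "stepset c s h \<subseteq> II" using c by (intro stepset_II) auto
  show "{(c, s, Suc h)} \<inter> stepset c s h = {}" by (auto simp: stepset_def)
  have Zj: "Z c s (Suc h) \<in> measurable (FF {(c, s, Suc h)}) Zs" using J by (intro Z_FF) auto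
  have "(\<lambda>\<omega>. A c (Z c s (Suc h) \<omega>)) \<in> borel_measurable (FF {(c, s, Suc h)})" by (rule AZ_meas[OF c(1) Zj])
  moreover have "(\<lambda>\<omega>. xi h (Z c s (Suc h) \<omega>)) \<in> borel_measurable (FF {(c, s, Suc h)})"
    by (rule fZ_meas[OF xim Zj]) simp
  ultimately show "(\<lambda>\<omega>. (mat 1 - e *\<^sub>R A c (Z c s (Suc h) \<omega>), xi h (Z c s (Suc h) \<omega>))) \<in> borel_measurable (FF {(c, s, Suc h)})"
    by simp
  have "(\<lambda>\<omega>. yR (A c) e xi y0 (\<lambda>k. Z c s k \<omega>) h) \<in> borel_measurable (FF (stepset c s h))"
  proof (rule yR_meas[OF c(1)])
    fix k assume "1 \<le> k" "k \<le> h"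
    then show "Z c s k \<in> measurable (FF (stepset c s h)) Zs"
      using K by (intro Z_FF) (auto simp: stepset_def)
  qed (use xim in auto)
  then show "(\<lambda>\<omega>. (0::real^'d^'d, yR (A c) e xi y0 (\<lambda>k. Z c s k \<omega>) h)) \<in> borel_measurable (FF (stepset c s h))"
    by simp
qed

lemma step_contr:
  assumes c: "c < N" "1 \<le> s" "Suc h \<le> H s"
  shows "(\<integral>\<omega>. (norm ((mat 1 - eta s *\<^sub>R A c (Z c s (Suc h) \<omega>)) *v v))\<^sup>2 \<partial>M) \<le> (1 - eta s * a)\<^sup>2 * (norm v)\<^sup>2"
proof -
  have m: "(\<lambda>z. (norm ((mat 1 - eta s *\<^sub>R A c z) *v v))\<^sup>2) \<in> borel_measurable Zs"
    using A_meas[OF c(1)] by measurable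
  have "(\<integral>\<omega>. (norm ((mat 1 - eta s *\<^sub>R A c (Z c s (Suc h) \<omega>)) *v v))\<^sup>2 \<partial>M)
      = (\<integral>z. (norm ((mat 1 - eta s *\<^sub>R A c z) *v v))\<^sup>2 \<partial>pi c)"
    using c by (intro E_Z[OF _ _ _ _ m]) auto
  also have "\<dots> \<le> (1 - eta s * a)\<^sup>2 * (norm v)\<^sup>2"
    using c eta_pos eta_le by (intro contr) auto
  finally show ?thesis .
qed

lemma yR_rec:
  fixes xi :: "nat \<Rightarrow> 'z \<Rightarrow> real^'d" and yinit :: "real^'d" and B :: real
  assumes c: "c < N" "1 \<le> s" "Suc h \<le> H s"
    and xim: "\<And>k. k \<le> h \<Longrightarrow> xi k \<in> borel_measurable Zs"
    and xib: "\<And>k z. k \<le> h \<Longrightarrow> z \<in> space Zs \<Longrightarrow> norm (xi k z) \<le> B"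
  defines "y \<equiv> \<lambda>h \<omega>. yR (A c) (eta s) xi yinit (\<lambda>k. Z c s k \<omega>) h"
  defines "G \<equiv> \<lambda>\<omega>. mat 1 - eta s *\<^sub>R A c (Z c s (Suc h) \<omega>)"
  shows "(\<integral>\<omega>. (norm (y (Suc h) \<omega>))\<^sup>2 \<partial>M) \<le> (1 - eta s * a)\<^sup>2 * (\<integral>\<omega>. (norm (y h \<omega>))\<^sup>2 \<partial>M)
          + (\<integral>z. (norm (xi h z))\<^sup>2 \<partial>pi c)
          + 2 * ((\<integral>\<omega>. y h \<omega> \<partial>M) \<bullet> (\<integral>\<omega>. transpose (G \<omega>) *v xi h (Z c s (Suc h) \<omega>) \<partial>M))"
    and "(\<integral>\<omega>. y (Suc h) \<omega> \<partial>M) = (\<integral>\<omega>. G \<omega> \<partial>M) *v (\<integral>\<omega>. y h \<omega> \<partial>M) + (\<integral>z. xi h z \<partial>pi c)"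
proof -
  have ind: "indep_var borel (\<lambda>\<omega>. (G \<omega>, xi h (Z c s (Suc h) \<omega>))) borel (\<lambda>\<omega>. (0::real^'d^'d, y h \<omega>))"
    unfolding G_def y_def using c xim by (intro step_ind) auto
  have bG: "bdd (space M) G" unfolding G_def using c
    by (intro bdd_diff bdd_scaleR bdd_const AZ_bdd) auto
  have bW: "bdd (space M) (\<lambda>\<omega>. xi h (Z c s (Suc h) \<omega>))"
    using c xib by (intro fZ_bdd[where B=B]) auto
  have bY: "bdd (space M) (y h)" unfolding y_def using c xib
    by (intro yR_bdd[where B=B]) auto
  have contrG: "(\<integral>\<omega>. (norm (G \<omega> *v v))\<^sup>2 \<partial>M) \<le> (1 - eta s * a)\<^sup>2 * (norm v)\<^sup>2" for v
    unfolding G_def using c by (rule step_contr)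
  have EW: "(\<integral>\<omega>. xi h (Z c s (Suc h) \<omega>) \<partial>M) = (\<integral>z. xi h z \<partial>pi c)"
    using c xim by (intro E_Z) auto
  have EW2: "(\<integral>\<omega>. (norm (xi h (Z c s (Suc h) \<omega>)))\<^sup>2 \<partial>M) = (\<integral>z. (norm (xi h z))\<^sup>2 \<partial>pi c)"
    using c xim by (intro E_Z) auto
  have ysuc: "y (Suc h) \<omega> = G \<omega> *v y h \<omega> + xi h (Z c s (Suc h) \<omega>)" for \<omega>
    unfolding y_def G_def by simp
  show "(\<integral>\<omega>. (norm (y (Suc h) \<omega>))\<^sup>2 \<partial>M) \<le> (1 - eta s * a)\<^sup>2 * (\<integral>\<omega>. (norm (y h \<omega>))\<^sup>2 \<partial>M)
          + (\<integral>z. (norm (xi h z))\<^sup>2 \<partial>pi c)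
          + 2 * ((\<integral>\<omega>. y h \<omega> \<partial>M) \<bullet> (\<integral>\<omega>. transpose (G \<omega>) *v xi h (Z c s (Suc h) \<omega>) \<partial>M))"
    unfolding ysuc EW2[symmetric] by (rule rec_step[OF ind bG bW bY contrG])
  show "(\<integral>\<omega>. y (Suc h) \<omega> \<partial>M) = (\<integral>\<omega>. G \<omega> \<partial>M) *v (\<integral>\<omega>. y h \<omega> \<partial>M) + (\<integral>z. xi h z \<partial>pi c)"
    unfolding ysuc EW[symmetric] by (rule rec_mean[OF ind bG bW bY])
qed

lemma yR_nonoise:
  assumes c: "c < N" "1 \<le> s" "h \<le> H s"
  shows "(\<integral>\<omega>. (norm (yR (A c) (eta s) (\<lambda>_ _. 0) v (\<lambda>k. Z c s k \<omega>) h))\<^sup>2 \<partial>M) \<le> ((1 - eta s * a)\<^sup>2) ^ h * (norm v)\<^sup>2"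
  using c(3)
proof (induction h)
  case 0 then show ?case by (simp add: prob_space)
next
  case (Suc h)
  have "(\<integral>\<omega>. (norm (yR (A c) (eta s) (\<lambda>_ _. 0) v (\<lambda>k. Z c s k \<omega>) (Suc h)))\<^sup>2 \<partial>M)
     \<le> (1 - eta s * a)\<^sup>2 * (\<integral>\<omega>. (norm (yR (A c) (eta s) (\<lambda>_ _. 0) v (\<lambda>k. Z c s k \<omega>) h))\<^sup>2 \<partial>M)"
    using yR_rec(1)[where c=c and s=s and h=h and xi="\<lambda>_ _. 0" and B=0 and yinit=v] c Suc.prems by simp
  also have "\<dots> \<le> (1 - eta s * a)\<^sup>2 * (((1 - eta s * a)\<^sup>2) ^ h * (norm v)\<^sup>2)"
    using Suc by (intro mult_left_mono) auto
  finally show ?case by (simp add: algebra_simps)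
qed

lemma yR_noise:
  assumes c: "c < N" "1 \<le> s" "h \<le> H s"
    and xim: "\<And>k. k < h \<Longrightarrow> xi k \<in> borel_measurable Zs"
    and xib: "\<And>k z. k < h \<Longrightarrow> z \<in> space Zs \<Longrightarrow> norm (xi k z) \<le> B"
    and xi0: "\<And>k. k < h \<Longrightarrow> (\<integral>z. xi k z \<partial>pi c) = 0"
  shows "(\<integral>\<omega>. yR (A c) (eta s) xi 0 (\<lambda>k. Z c s k \<omega>) h \<partial>M) = 0 \<and>
    (\<integral>\<omega>. (norm (yR (A c) (eta s) xi 0 (\<lambda>k. Z c s k \<omega>) h))\<^sup>2 \<partial>M) \<le> (\<Sum>k<h. (\<integral>z. (norm (xi k z))\<^sup>2 \<partial>pi c))"
  using c(3) xim xib xi0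
proof (induction h)
  case 0 then show ?case by simp
next
  case (Suc h)
  have IH: "(\<integral>\<omega>. yR (A c) (eta s) xi 0 (\<lambda>k. Z c s k \<omega>) h \<partial>M) = 0 \<and>
    (\<integral>\<omega>. (norm (yR (A c) (eta s) xi 0 (\<lambda>k. Z c s k \<omega>) h))\<^sup>2 \<partial>M) \<le> (\<Sum>k<h. (\<integral>z. (norm (xi k z))\<^sup>2 \<partial>pi c))"
    using Suc by auto
  have r1: "(\<integral>\<omega>. (norm (yR (A c) (eta s) xi 0 (\<lambda>k. Z c s k \<omega>) (Suc h)))\<^sup>2 \<partial>M)
     \<le> (1 - eta s * a)\<^sup>2 * (\<integral>\<omega>. (norm (yR (A c) (eta s) xi 0 (\<lambda>k. Z c s k \<omega>) h))\<^sup>2 \<partial>M) + (\<integral>z. (norm (xi h z))\<^sup>2 \<partial>pi c)"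
    using yR_rec(1)[where c=c and s=s and h=h and xi=xi and B=B and yinit=0] c Suc.prems IH by simp
  have r2: "(\<integral>\<omega>. yR (A c) (eta s) xi 0 (\<lambda>k. Z c s k \<omega>) (Suc h) \<partial>M) = 0"
    using yR_rec(2)[where c=c and s=s and h=h and xi=xi and B=B and yinit=0] c Suc.prems IH by simp
  have rho: "(1 - eta s * a)\<^sup>2 \<le> 1" using rho_bounds[OF c(2)] by (simp add: power_le_one)
  have "(1 - eta s * a)\<^sup>2 * (\<integral>\<omega>. (norm (yR (A c) (eta s) xi 0 (\<lambda>k. Z c s k \<omega>) h))\<^sup>2 \<partial>M)
       \<le> (\<integral>\<omega>. (norm (yR (A c) (eta s) xi 0 (\<lambda>k. Z c s k \<omega>) h))\<^sup>2 \<partial>M)"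
    using rho by (intro mult_left_le_one_le) auto
  with r1 IH have "(\<integral>\<omega>. (norm (yR (A c) (eta s) xi 0 (\<lambda>k. Z c s k \<omega>) (Suc h)))\<^sup>2 \<partial>M)
     \<le> (\<Sum>k<h. (\<integral>z. (norm (xi k z))\<^sup>2 \<partial>pi c)) + (\<integral>z. (norm (xi h z))\<^sup>2 \<partial>pi c)" by linarith
  then show ?case using r2 by simp
qed

end

context prob_space begin

lemma jensen_norm:
  fixes f :: "'a \<Rightarrow> 'b::{banach, second_countable_topology}"
  assumes [measurable]: "f \<in> borel_measurable M" and b: "bdd (space M) f"
  shows "norm (\<integral>x. f x \<partial>M) \<le> sqrt (\<integral>x. (norm (f x))\<^sup>2 \<partial>M)"
proof -
  define m where "m = (\<integral>x. norm (f x) \<partial>M)"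
  have i1: "integrable M (\<lambda>x. norm (f x))" using b by (intro integrable_bdd) auto
  have i2: "integrable M (\<lambda>x. (norm (f x))\<^sup>2)" using b by (intro integrable_bdd) auto
  have "0 \<le> (\<integral>x. (norm (f x) - m)\<^sup>2 \<partial>M)" by simp
  also have "(\<integral>x. (norm (f x) - m)\<^sup>2 \<partial>M) = (\<integral>x. (norm (f x))\<^sup>2 - 2 * m * norm (f x) + m\<^sup>2 \<partial>M)"
    by (simp add: power2_diff algebra_simps)
  also have "\<dots> = (\<integral>x. (norm (f x))\<^sup>2 \<partial>M) - 2 * m * m + m\<^sup>2"
    using i1 i2 by (simp add: prob_space m_def)
  finally have "m\<^sup>2 \<le> (\<integral>x. (norm (f x))\<^sup>2 \<partial>M)" by (simp add: power2_eq_square)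
  then have "m \<le> sqrt (\<integral>x. (norm (f x))\<^sup>2 \<partial>M)"
    using real_le_rsqrt by blast
  moreover have "norm (\<integral>x. f x \<partial>M) \<le> m" unfolding m_def by (rule integral_norm_bound)
  ultimately show ?thesis by linarith
qed

end

locale fed2 = fed M N Zs pi A eps Z eta H a eta_inf CA CE
  for M :: "'w measure" and N :: nat and Zs :: "'z measure" and pi :: "nat \<Rightarrow> 'z measure"
    and A :: "nat \<Rightarrow> 'z \<Rightarrow> real^'d^'d" and eps :: "nat \<Rightarrow> 'z \<Rightarrow> real^'d"
    and Z :: "nat \<Rightarrow> nat \<Rightarrow> nat \<Rightarrow> 'w \<Rightarrow> 'z"
    and eta :: "nat \<Rightarrow> real" and H :: "nat \<Rightarrow> nat" and a eta_inf CA CE :: real +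
  fixes Ab :: "nat \<Rightarrow> real^'d^'d" and dl :: "nat \<Rightarrow> real^'d"
  assumes Ab_def: "\<And>c. c < N \<Longrightarrow> Ab c = (\<integral>z. A c z \<partial>pi c)"
begin

definition xic :: "nat \<Rightarrow> nat \<Rightarrow> nat \<Rightarrow> 'z \<Rightarrow> real^'d" where
  "xic c s k z = - eta s *\<^sub>R ((A c z - Ab c) *v pw (Ab c) (eta s) k (dl c)) - eta s *\<^sub>R eps c z"

definition VA :: "nat \<Rightarrow> real^'d^'d" where
  "VA c = (\<integral>z. transpose (A c z - Ab c) ** (A c z - Ab c) \<partial>pi c)"

definition VE :: "nat \<Rightarrow> real" where
  "VE c = (\<integral>z. (norm (eps c z))\<^sup>2 \<partial>pi c)"

lemma space_pi: "c < N \<Longrightarrow> space (pi c) = space Zs"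
  using pi_sets by (rule sets_eq_imp_space_eq)

lemma meas_pi: "c < N \<Longrightarrow> f \<in> measurable Zs N' \<Longrightarrow> f \<in> measurable (pi c) N'"
  using pi_sets by (simp add: measurable_def space_pi)

lemma int_pi: fixes f :: "'z \<Rightarrow> 'b::{banach, second_countable_topology}"
  assumes "c < N" "f \<in> borel_measurable Zs" "\<And>z. z \<in> space Zs \<Longrightarrow> norm (f z) \<le> B"
  shows "integrable (pi c) f"
proof -
  interpret P: prob_space "pi c" by (rule pi_prob[OF assms(1)])
  show ?thesis
    using assms by (intro P.integrable_bdd meas_pi bddI[where B=B]) (auto simp: space_pi)
qed

lemma A_int: "c < N \<Longrightarrow> integrable (pi c) (A c)"
  by (rule int_pi[where B=CA]) (auto intro: A_meas A_bnd)

lemma Ab_contr: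
  assumes c: "c < N" and s: "1 \<le> s"
  shows "norm ((mat 1 - eta s *\<^sub>R Ab c) *v w) \<le> norm w"
proof -
  interpret P: prob_space "pi c" by (rule pi_prob[OF c])
  have m: "(\<lambda>z. (mat 1 - eta s *\<^sub>R A c z) *v w) \<in> borel_measurable (pi c)"
    using A_meas[OF c] by (intro meas_pi[OF c]) measurable
  have b: "bdd (space (pi c)) (\<lambda>z. (mat 1 - eta s *\<^sub>R A c z) *v w)"
  proof -
    have "bdd (space (pi c)) (\<lambda>z. A c z)"
      using A_bnd[OF c] by (intro bddI[where B=CA]) (auto simp: space_pi[OF c])
    then show ?thesis by (intro bdd_mv bdd_diff bdd_scaleR bdd_const) auto
  qed
  have "(mat 1 - eta s *\<^sub>R Ab c) *v w = (\<integral>z. (mat 1 - eta s *\<^sub>R A c z) *v w \<partial>pi c)"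
  proof -
    have iA: "integrable (pi c) (A c)" by (rule A_int[OF c])
    have "(\<integral>z. (mat 1 - eta s *\<^sub>R A c z) *v w \<partial>pi c) = (\<integral>z. (mat 1 - eta s *\<^sub>R A c z) \<partial>pi c) *v w"
      using iA by (intro integral_bounded_linear[OF bounded_linear_mv_left]) auto
    also have "(\<integral>z. (mat 1 - eta s *\<^sub>R A c z) \<partial>pi c) = mat 1 - eta s *\<^sub>R Ab c"
      using iA by (simp add: Ab_def[OF c] P.prob_space)
    finally show ?thesis by simp
  qed
  also have "norm \<dots> \<le> sqrt (\<integral>z. (norm ((mat 1 - eta s *\<^sub>R A c z) *v w))\<^sup>2 \<partial>pi c)"
    by (rule P.jensen_norm[OF m b])
  also have "\<dots> \<le> sqrt ((1 - eta s * a)\<^sup>2 * (norm w)\<^sup>2)"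
    using c s eta_pos eta_le by (intro real_sqrt_le_mono contr) auto
  also have "\<dots> = (1 - eta s * a) * norm w"
    using rho_bounds[OF s] by (simp add: real_sqrt_mult)
  also have "\<dots> \<le> norm w"
    using rho_bounds[OF s] by (simp add: mult_left_le_one_le)
  finally show ?thesis .
qed

lemma pw_le: "c < N \<Longrightarrow> 1 \<le> s \<Longrightarrow> norm (pw (Ab c) (eta s) k w) \<le> norm w"
  by (induction k) (auto intro: order_trans[OF Ab_contr])

end

context fed2 begin

lemma xic_meas: "c < N \<Longrightarrow> xic c s k \<in> borel_measurable Zs"
  unfolding xic_def using A_meas[of c] eps_meas[of c] by measurable

definition Bx :: "nat \<Rightarrow> nat \<Rightarrow> real" where
  "Bx c s = \<bar>eta s\<bar> * (real CARD('d) * real CARD('d) * (CA + norm (Ab c)) * norm (dl c) + CE)"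

lemma xic_bnd:
  assumes c: "c < N" and s: "1 \<le> s" and z: "z \<in> space Zs"
  shows "norm (xic c s k z) \<le> Bx c s"
proof -
  have "norm ((A c z - Ab c) *v pw (Ab c) (eta s) k (dl c)) \<le> (real CARD('d) * real CARD('d) * norm (A c z - Ab c)) * norm (pw (Ab c) (eta s) k (dl c))"
    by (rule norm_mv_le)
  also have "\<dots> \<le> (real CARD('d) * real CARD('d) * (CA + norm (Ab c))) * norm (dl c)"
  proof (intro mult_mono mult_left_mono pw_le[OF c s])
    have "0 \<le> CA + norm (Ab c)"
      using A_bnd[OF c z] norm_ge_zero[of "A c z"] norm_ge_zero[of "Ab c"] by linarith
    then show "0 \<le> real CARD('d) * real CARD('d) * (CA + norm (Ab c))" by simp
    show "norm (A c z - Ab c) \<le> CA + norm (Ab c)"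
      using A_bnd[OF c z] norm_triangle_ineq4[of "A c z" "Ab c"] by linarith
  qed auto
  finally have 1: "norm ((A c z - Ab c) *v pw (Ab c) (eta s) k (dl c)) \<le> real CARD('d) * real CARD('d) * (CA + norm (Ab c)) * norm (dl c)" .
  have "norm (xic c s k z) = norm (eta s *\<^sub>R ((A c z - Ab c) *v pw (Ab c) (eta s) k (dl c) + eps c z))"
    unfolding xic_def by (simp add: algebra_simps norm_minus_commute)
  also have "\<dots> = \<bar>eta s\<bar> * norm ((A c z - Ab c) *v pw (Ab c) (eta s) k (dl c) + eps c z)" by simp
  also have "\<dots> \<le> \<bar>eta s\<bar> * (real CARD('d) * real CARD('d) * (CA + norm (Ab c)) * norm (dl c) + CE)"
    using 1 eps_bnd[OF c z] norm_triangle_ineq[of "(A c z - Ab c) *v pw (Ab c) (eta s) k (dl c)" "eps c z"]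
    by (intro mult_left_mono) auto
  finally show ?thesis unfolding Bx_def .
qed

lemma eps_int: "c < N \<Longrightarrow> integrable (pi c) (eps c)"
  by (rule int_pi[where B=CE]) (auto intro: eps_meas eps_bnd)

lemma xic_mean:
  assumes c: "c < N"
  shows "(\<integral>z. xic c s k z \<partial>pi c) = 0"
proof -
  interpret P: prob_space "pi c" by (rule pi_prob[OF c])
  let ?v = "pw (Ab c) (eta s) k (dl c)"
  have iA: "integrable (pi c) (A c)" by (rule A_int[OF c])
  have iE: "integrable (pi c) (eps c)" by (rule eps_int[OF c])
  have i1: "integrable (pi c) (\<lambda>z. (A c z - Ab c) *v ?v)"
    using iA by (intro integrable_bounded_linear[OF bounded_linear_mv_left]) auto
  have "(\<integral>z. (A c z - Ab c) *v ?v \<partial>pi c) = (\<integral>z. (A c z - Ab c) \<partial>pi c) *v ?v"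
    using iA by (intro integral_bounded_linear[OF bounded_linear_mv_left]) auto
  also have "(\<integral>z. (A c z - Ab c) \<partial>pi c) = 0"
    using iA by (simp add: Ab_def[OF c] P.prob_space)
  finally have 1: "(\<integral>z. (A c z - Ab c) *v ?v \<partial>pi c) = 0" by simp
  show ?thesis
    unfolding xic_def using i1 iE 1 eps_mean[OF c] by simp
qed

lemma opnorm_ge0: "0 \<le> opnorm (B::real^'n^'n)"
  unfolding opnorm_def by (rule onorm_pos_le) simp

lemma opnorm_bound: "norm ((B::real^'n^'n) *v v) \<le> opnorm B * norm v"
  unfolding opnorm_def by (rule onorm) simp

lemma xic_sq:
  assumes c: "c < N" and s: "1 \<le> s"
  shows "(\<integral>z. (norm (xic c s k z))\<^sup>2 \<partial>pi c) \<le> (eta s)\<^sup>2 * (sqrt (opnorm (VA c)) * norm (dl c) + sqrt (VE c))\<^sup>2"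
proof -
  interpret P: prob_space "pi c" by (rule pi_prob[OF c])
  let ?v = "pw (Ab c) (eta s) k (dl c)"
  let ?U = "\<lambda>z. (A c z - Ab c) *v ?v"
  have bA: "bdd (space (pi c)) (A c)"
    using A_bnd[OF c] by (intro bddI[where B=CA]) (auto simp: space_pi[OF c])
  have bE: "bdd (space (pi c)) (eps c)"
    using eps_bnd[OF c] by (intro bddI[where B=CE]) (auto simp: space_pi[OF c])
  have mA[measurable]: "A c \<in> borel_measurable (pi c)" by (rule meas_pi[OF c A_meas[OF c]])
  have mE[measurable]: "eps c \<in> borel_measurable (pi c)" by (rule meas_pi[OF c eps_meas[OF c]])
  have bU: "bdd (space (pi c)) ?U" using bA by (intro bdd_mv bdd_diff) auto
  have "(\<integral>z. (norm (xic c s k z))\<^sup>2 \<partial>pi c) = (\<integral>z. (eta s)\<^sup>2 * (norm (?U z + eps c z))\<^sup>2 \<partial>pi c)"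
  proof -
    have "xic c s k z = - (eta s *\<^sub>R (?U z + eps c z))" for z
      unfolding xic_def by (simp add: algebra_simps)
    then show ?thesis by (simp add: power_mult_distrib)
  qed
  also have "\<dots> = (eta s)\<^sup>2 * (\<integral>z. (norm (?U z + eps c z))\<^sup>2 \<partial>pi c)" by simp
  also have "(\<integral>z. (norm (?U z + eps c z))\<^sup>2 \<partial>pi c) \<le> (sqrt (opnorm (VA c)) * norm (dl c) + sqrt (VE c))\<^sup>2"
  proof -
    have T: "sqrt (\<integral>z. (norm (?U z + eps c z))\<^sup>2 \<partial>pi c) \<le> sqrt (\<integral>z. (norm (?U z))\<^sup>2 \<partial>pi c) + sqrt (\<integral>z. (norm (eps c z))\<^sup>2 \<partial>pi c)"
      using bU bE by (intro P.L2_triangle) auto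
    have MU: "(norm (?U z))\<^sup>2 = ?v \<bullet> ((transpose (A c z - Ab c) ** (A c z - Ab c)) *v ?v)" for z
      by (simp add: power2_norm_eq_inner mv_inner_transpose matrix_vector_mul_assoc)
    have iM: "integrable (pi c) (\<lambda>z. transpose (A c z - Ab c) ** (A c z - Ab c))"
      using bA by (intro P.integrable_bdd bdd_mm bdd_transpose bdd_diff bdd_const) auto
    have "(\<integral>z. (norm (?U z))\<^sup>2 \<partial>pi c) = (\<integral>z. ?v \<bullet> ((transpose (A c z - Ab c) ** (A c z - Ab c)) *v ?v) \<partial>pi c)"
      unfolding MU ..
    also have "\<dots> = ?v \<bullet> (\<integral>z. (transpose (A c z - Ab c) ** (A c z - Ab c)) *v ?v \<partial>pi c)"
      using iM by (intro integral_inner_right integrable_bounded_linear[OF bounded_linear_mv_left])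
    also have "(\<integral>z. (transpose (A c z - Ab c) ** (A c z - Ab c)) *v ?v \<partial>pi c) = VA c *v ?v"
      unfolding VA_def using iM by (intro integral_bounded_linear[OF bounded_linear_mv_left])
    also have "?v \<bullet> (VA c *v ?v) \<le> norm ?v * norm (VA c *v ?v)" by (rule norm_cauchy_schwarz)
    also have "\<dots> \<le> norm ?v * (opnorm (VA c) * norm ?v)"
      by (rule mult_left_mono[OF opnorm_bound]) simp
    also have "\<dots> \<le> norm (dl c) * (opnorm (VA c) * norm (dl c))"
      using pw_le[OF c s, of k "dl c"] opnorm_ge0[of "VA c"]
      by (intro mult_mono mult_left_mono) auto
    finally have "(\<integral>z. (norm (?U z))\<^sup>2 \<partial>pi c) \<le> (sqrt (opnorm (VA c)) * norm (dl c))\<^sup>2"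
      using opnorm_ge0[of "VA c"] by (simp add: power2_eq_square algebra_simps)
    then have "sqrt (\<integral>z. (norm (?U z))\<^sup>2 \<partial>pi c) \<le> sqrt ((sqrt (opnorm (VA c)) * norm (dl c))\<^sup>2)"
      by (rule real_sqrt_le_mono)
    also have "\<dots> = sqrt (opnorm (VA c)) * norm (dl c)"
      using opnorm_ge0[of "VA c"] by simp
    finally have "sqrt (\<integral>z. (norm (?U z))\<^sup>2 \<partial>pi c) \<le> sqrt (opnorm (VA c)) * norm (dl c)" .
    with T have "sqrt (\<integral>z. (norm (?U z + eps c z))\<^sup>2 \<partial>pi c) \<le> sqrt (opnorm (VA c)) * norm (dl c) + sqrt (VE c)"
      unfolding VE_def by linarith
    then have "(sqrt (\<integral>z. (norm (?U z + eps c z))\<^sup>2 \<partial>pi c))\<^sup>2 \<le> (sqrt (opnorm (VA c)) * norm (dl c) + sqrt (VE c))\<^sup>2"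
      by (rule power_mono) simp
    moreover have "0 \<le> (\<integral>z. (norm (?U z + eps c z))\<^sup>2 \<partial>pi c)" by simp
    ultimately show ?thesis by simp
  qed
  then have "(eta s)\<^sup>2 * (\<integral>z. (norm (?U z + eps c z))\<^sup>2 \<partial>pi c) \<le> (eta s)\<^sup>2 * (sqrt (opnorm (VA c)) * norm (dl c) + sqrt (VE c))\<^sup>2"
    by (intro mult_left_mono) auto
  finally show ?thesis .
qed

end

lemma sum_mv: "(\<Sum>c\<in>I. (B c :: real^'n^'m)) *v v = (\<Sum>c\<in>I. B c *v v)"
  by (induction I rule: infinite_finite_induct) (simp_all add: matrix_vector_mult_add_rdistrib)

context fed2 begin

definition sA :: "nat \<Rightarrow> real" where "sA c = sqrt (opnorm (VA c)) * norm (dl c) + sqrt (VE c)"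

definition yc :: "nat \<Rightarrow> nat \<Rightarrow> 'w \<Rightarrow> real^'d" where
  "yc c s \<omega> = yR (A c) (eta s) (xic c s) 0 (\<lambda>k. Z c s k \<omega>) (H s)"

lemma yc_meas: "c < N \<Longrightarrow> (\<And>k. 1 \<le> k \<Longrightarrow> k \<le> H s \<Longrightarrow> Z c s k \<in> measurable F Zs) \<Longrightarrow> yc c s \<in> borel_measurable F"
  unfolding yc_def by (rule yR_meas) (auto intro: xic_meas)

lemma yc_bdd: "c < N \<Longrightarrow> 1 \<le> s \<Longrightarrow> bdd (space M) (yc c s)"
  unfolding yc_def by (rule yR_bdd[where B="Bx c s"]) (auto intro: xic_bnd)

lemma yc_mean_var:
  assumes c: "c < N" and s: "1 \<le> s"
  shows "(\<integral>\<omega>. yc c s \<omega> \<partial>M) = 0"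
    and "(\<integral>\<omega>. (norm (yc c s \<omega>))\<^sup>2 \<partial>M) \<le> real (H s) * (eta s)\<^sup>2 * (sA c)\<^sup>2"
proof -
  have r: "(\<integral>\<omega>. yc c s \<omega> \<partial>M) = 0 \<and>
    (\<integral>\<omega>. (norm (yc c s \<omega>))\<^sup>2 \<partial>M) \<le> (\<Sum>k<H s. (\<integral>z. (norm (xic c s k z))\<^sup>2 \<partial>pi c))"
    unfolding yc_def using c s
    by (intro yR_noise[where B="Bx c s"]) (auto intro: xic_meas xic_bnd xic_mean)
  then show "(\<integral>\<omega>. yc c s \<omega> \<partial>M) = 0" by simp
  have "(\<Sum>k<H s. (\<integral>z. (norm (xic c s k z))\<^sup>2 \<partial>pi c)) \<le> (\<Sum>k<H s. (eta s)\<^sup>2 * (sA c)\<^sup>2)"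
    unfolding sA_def using c s by (intro sum_mono xic_sq)
  then show "(\<integral>\<omega>. (norm (yc c s \<omega>))\<^sup>2 \<partial>M) \<le> real (H s) * (eta s)\<^sup>2 * (sA c)\<^sup>2"
    using r by simp
qed

definition ag :: "nat \<Rightarrow> nat \<Rightarrow> (nat \<times> nat \<times> nat) set" where
  "ag c s = {(c', r, h). c' = c \<and> r = s \<and> 1 \<le> h \<and> h \<le> H s}"

definition agl :: "nat \<Rightarrow> nat \<Rightarrow> (nat \<times> nat \<times> nat) set" where
  "agl n s = {(c', r, h). c' < n \<and> r = s \<and> 1 \<le> h \<and> h \<le> H s}"

lemma agents_sum:
  assumes s: "1 \<le> s" and n: "n \<le> N"
  shows "(\<integral>\<omega>. (\<Sum>c<n. yc c s \<omega>) \<partial>M) = 0 \<and>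
    (\<integral>\<omega>. (norm (\<Sum>c<n. yc c s \<omega>))\<^sup>2 \<partial>M) \<le> (\<Sum>c<n. (\<integral>\<omega>. (norm (yc c s \<omega>))\<^sup>2 \<partial>M))"
  using n
proof (induction n)
  case 0 then show ?case by simp
next
  case (Suc n)
  then have n: "n < N" by simp
  have IH: "(\<integral>\<omega>. (\<Sum>c<n. yc c s \<omega>) \<partial>M) = 0 \<and>
    (\<integral>\<omega>. (norm (\<Sum>c<n. yc c s \<omega>))\<^sup>2 \<partial>M) \<le> (\<Sum>c<n. (\<integral>\<omega>. (norm (yc c s \<omega>))\<^sup>2 \<partial>M))"
    using Suc by simp
  have J: "ag n s \<subseteq> II" using n s by (auto simp: ag_def)
  have K: "agl n s \<subseteq> II" using n s by (auto simp: agl_def)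
  have ind: "indep_var borel (\<lambda>\<omega>. (mat 1 :: real^'d^'d, yc n s \<omega>)) borel (\<lambda>\<omega>. (0::real^'d^'d, \<Sum>c<n. yc c s \<omega>))"
  proof (rule indep_FF[OF J K])
    show "ag n s \<inter> agl n s = {}" by (auto simp: ag_def agl_def)
    have "yc n s \<in> borel_measurable (FF (ag n s))"
      using n J by (intro yc_meas Z_FF) (auto simp: ag_def)
    then show "(\<lambda>\<omega>. (mat 1 :: real^'d^'d, yc n s \<omega>)) \<in> borel_measurable (FF (ag n s))" by simp
    have "(\<lambda>\<omega>. \<Sum>c<n. yc c s \<omega>) \<in> borel_measurable (FF (agl n s))"
      using n K by (intro borel_measurable_sum yc_meas Z_FF) (auto simp: agl_def)
    then show "(\<lambda>\<omega>. (0::real^'d^'d, \<Sum>c<n. yc c s \<omega>)) \<in> borel_measurable (FF (agl n s))" by simp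
  qed
  have bS: "bdd (space M) (\<lambda>\<omega>. \<Sum>c<n. yc c s \<omega>)" using n s by (intro bdd_sum yc_bdd) auto
  have bY: "bdd (space M) (yc n s)" using n s by (intro yc_bdd) auto
  have bG: "bdd (space M) (\<lambda>\<omega>. mat 1 :: real^'d^'d)" by simp
  have contr1: "(\<integral>\<omega>. (norm ((mat 1 :: real^'d^'d) *v v))\<^sup>2 \<partial>M) \<le> 1 * (norm v)\<^sup>2" for v
    by (simp add: prob_space)
  have EY: "(\<integral>\<omega>. yc n s \<omega> \<partial>M) = 0" using yc_mean_var(1)[OF n s] .
  have "(\<integral>\<omega>. (norm ((mat 1 :: real^'d^'d) *v (\<Sum>c<n. yc c s \<omega>) + yc n s \<omega>))\<^sup>2 \<partial>M) \<le>
    1 * (\<integral>\<omega>. (norm (\<Sum>c<n. yc c s \<omega>))\<^sup>2 \<partial>M) + (\<integral>\<omega>. (norm (yc n s \<omega>))\<^sup>2 \<partial>M)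
    + 2 * ((\<integral>\<omega>. (\<Sum>c<n. yc c s \<omega>) \<partial>M) \<bullet> (\<integral>\<omega>. transpose (mat 1 :: real^'d^'d) *v yc n s \<omega> \<partial>M))"
    by (rule rec_step[OF ind bG bY bS contr1])
  then have v: "(\<integral>\<omega>. (norm ((\<Sum>c<n. yc c s \<omega>) + yc n s \<omega>))\<^sup>2 \<partial>M) \<le>
    (\<integral>\<omega>. (norm (\<Sum>c<n. yc c s \<omega>))\<^sup>2 \<partial>M) + (\<integral>\<omega>. (norm (yc n s \<omega>))\<^sup>2 \<partial>M)"
    using IH by simp
  have "(\<integral>\<omega>. (mat 1 :: real^'d^'d) *v (\<Sum>c<n. yc c s \<omega>) + yc n s \<omega> \<partial>M) =
    (\<integral>\<omega>. (mat 1 :: real^'d^'d) \<partial>M) *v (\<integral>\<omega>. (\<Sum>c<n. yc c s \<omega>) \<partial>M) + (\<integral>\<omega>. yc n s \<omega> \<partial>M)"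
    by (rule rec_mean[OF ind bG bY bS])
  then have m: "(\<integral>\<omega>. (\<Sum>c<n. yc c s \<omega>) + yc n s \<omega> \<partial>M) = 0"
    using IH EY by simp
  show ?case using v m IH by simp
qed

end

context fed2 begin

definition Gb :: "nat \<Rightarrow> 'w \<Rightarrow> real^'d^'d" where
  "Gb s \<omega> = (1 / real N) *\<^sub>R (\<Sum>c<N. gamR (A c) (eta s) (\<lambda>k. Z c s k \<omega>) (H s))"

definition Wr :: "nat \<Rightarrow> 'w \<Rightarrow> real^'d" where
  "Wr s \<omega> = (1 / real N) *\<^sub>R (\<Sum>c<N. yc c s \<omega>)"

definition Dd :: "nat \<Rightarrow> real^'d" where
  "Dd s = (1 / real N) *\<^sub>R (\<Sum>c<N. (pw (Ab c) (eta s) (H s) (dl c) - dl c))"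

definition rnd :: "nat \<Rightarrow> (nat \<times> nat \<times> nat) set" where
  "rnd s = {(c, r, h). c < N \<and> r = s \<and> 1 \<le> h \<and> h \<le> H s}"

definition rle :: "nat \<Rightarrow> (nat \<times> nat \<times> nat) set" where
  "rle s = {(c, r, h). c < N \<and> 1 \<le> r \<and> r \<le> s \<and> 1 \<le> h \<and> h \<le> H r}"

primrec pp :: "real^'d \<Rightarrow> nat \<Rightarrow> 'w \<Rightarrow> real^'d" where
  "pp e0 0 \<omega> = e0"
| "pp e0 (Suc s) \<omega> = Gb (Suc s) \<omega> *v pp e0 s \<omega>"

primrec qq :: "nat \<Rightarrow> 'w \<Rightarrow> real^'d" where
  "qq 0 \<omega> = 0"
| "qq (Suc s) \<omega> = Gb (Suc s) \<omega> *v qq s \<omega> + Dd (Suc s)"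

primrec rr :: "nat \<Rightarrow> 'w \<Rightarrow> real^'d" where
  "rr 0 \<omega> = 0"
| "rr (Suc s) \<omega> = Gb (Suc s) \<omega> *v rr s \<omega> + Wr (Suc s) \<omega>"

lemma Gb_meas: "(\<And>c k. c < N \<Longrightarrow> 1 \<le> k \<Longrightarrow> k \<le> H s \<Longrightarrow> Z c s k \<in> measurable F Zs) \<Longrightarrow> Gb s \<in> borel_measurable F"
  unfolding Gb_def by (intro borel_measurable_scaleR borel_measurable_const borel_measurable_sum gamR_meas) auto

lemma Wr_meas: "(\<And>c k. c < N \<Longrightarrow> 1 \<le> k \<Longrightarrow> k \<le> H s \<Longrightarrow> Z c s k \<in> measurable F Zs) \<Longrightarrow> Wr s \<in> borel_measurable F"
  unfolding Wr_def by (intro borel_measurable_scaleR borel_measurable_const borel_measurable_sum yc_meas) auto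

lemma Gb_bdd: "1 \<le> s \<Longrightarrow> bdd (space M) (Gb s)"
  unfolding Gb_def by (intro bdd_scaleR bdd_sum gamR_bdd) auto

lemma Wr_bdd: "1 \<le> s \<Longrightarrow> bdd (space M) (Wr s)"
  unfolding Wr_def by (intro bdd_scaleR bdd_sum yc_bdd) auto

lemma rnd_II: "1 \<le> s \<Longrightarrow> rnd s \<subseteq> II" by (auto simp: rnd_def)
lemma rle_II: "rle s \<subseteq> II" by (auto simp: rle_def)

lemma Z_rle: "c < N \<Longrightarrow> 1 \<le> r \<Longrightarrow> r \<le> s \<Longrightarrow> 1 \<le> k \<Longrightarrow> k \<le> H r \<Longrightarrow> Z c r k \<in> measurable (FF (rle s)) Zs"
  by (rule Z_FF[OF rle_II]) (auto simp: rle_def)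

lemma Z_rnd: "c < N \<Longrightarrow> 1 \<le> s \<Longrightarrow> 1 \<le> k \<Longrightarrow> k \<le> H s \<Longrightarrow> Z c s k \<in> measurable (FF (rnd s)) Zs"
  by (rule Z_FF[OF rnd_II]) (auto simp: rnd_def)

lemma FF_mono: assumes "J \<subseteq> K" "K \<subseteq> II" "f \<in> measurable (FF J) N'" shows "f \<in> measurable (FF K) N'"
proof -
  have "sets (FF J) \<subseteq> sets (FF K)"
  proof -
    have "(\<lambda>\<omega>. restrict (\<lambda>i. ZZ i \<omega>) J) \<in> measurable (FF K) (PiM J (\<lambda>_. Zs))"
    proof -
      have "(\<lambda>\<omega>. restrict (restrict (\<lambda>i. ZZ i \<omega>) K) J) \<in> measurable (FF K) (PiM J (\<lambda>_. Zs))"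
        by (rule measurable_compose[OF R_FF[OF assms(2)] measurable_restrict_subset]) (use assms in auto)
      moreover have "restrict (restrict (\<lambda>i. ZZ i \<omega>) K) J = restrict (\<lambda>i. ZZ i \<omega>) J" for \<omega>
        using assms(1) by (auto simp: restrict_def fun_eq_iff)
      ultimately show ?thesis by simp
    qed
    then show ?thesis unfolding FF_def[of J]
      by (subst sets_vimage_algebra2) (auto simp: measurable_def FF_def space_PiM)
  qed
  then show ?thesis using assms(3) measurable_mono[of N' N' "FF J" "FF K"] by auto
qed

lemma rle_mono: "rle s \<subseteq> rle (Suc s)" by (auto simp: rle_def)

lemma pp_meas: "pp e0 s \<in> borel_measurable (FF (rle s))"
proof (induction s)
  case 0 then show ?case by simp
next
  case (Suc s)
  have "pp e0 s \<in> borel_measurable (FF (rle (Suc s)))" by (rule FF_mono[OF rle_mono rle_II Suc])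
  moreover have "Gb (Suc s) \<in> borel_measurable (FF (rle (Suc s)))" by (intro Gb_meas Z_rle) auto
  ultimately show ?case by simp
qed

lemma qq_meas: "qq s \<in> borel_measurable (FF (rle s))"
proof (induction s)
  case 0 then show ?case by simp
next
  case (Suc s)
  have "qq s \<in> borel_measurable (FF (rle (Suc s)))" by (rule FF_mono[OF rle_mono rle_II Suc])
  moreover have "Gb (Suc s) \<in> borel_measurable (FF (rle (Suc s)))" by (intro Gb_meas Z_rle) auto
  ultimately show ?case by simp
qed

lemma rr_meas: "rr s \<in> borel_measurable (FF (rle s))"
proof (induction s)
  case 0 then show ?case by simp
next
  case (Suc s)
  have "rr s \<in> borel_measurable (FF (rle (Suc s)))" by (rule FF_mono[OF rle_mono rle_II Suc])
  moreover have "Gb (Suc s) \<in> borel_measurable (FF (rle (Suc s)))" by (intro Gb_meas Z_rle) auto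
  moreover have "Wr (Suc s) \<in> borel_measurable (FF (rle (Suc s)))" by (intro Wr_meas Z_rle) auto
  ultimately show ?case by simp
qed

lemma pp_bdd: "bdd (space M) (pp e0 s)"
  by (induction s) (auto intro!: bdd_mv Gb_bdd)

lemma qq_bdd: "bdd (space M) (qq s)"
  by (induction s) (auto intro!: bdd_add bdd_mv Gb_bdd)

lemma rr_bdd: "bdd (space M) (rr s)"
  by (induction s) (auto intro!: bdd_add bdd_mv Gb_bdd Wr_bdd)

lemma M_rle: "f \<in> measurable (FF (rle s)) N' \<Longrightarrow> f \<in> measurable M N'"
  by (rule FF_M[OF rle_II])

lemma sqrt_le_D: assumes "0 \<le> x" "sqrt x \<le> y" shows "x \<le> y\<^sup>2"
proof -
  have "(sqrt x)\<^sup>2 \<le> y\<^sup>2" by (rule power_mono[OF assms(2)]) (simp add: assms(1))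
  then show ?thesis using assms(1) by simp
qed

lemma Gb_contr:
  assumes s: "1 \<le> s"
  shows "(\<integral>\<omega>. (norm (Gb s \<omega> *v v))\<^sup>2 \<partial>M) \<le> ((1 - eta s * a) ^ H s)\<^sup>2 * (norm v)\<^sup>2"
proof -
  define Y where "Y c \<omega> = yR (A c) (eta s) (\<lambda>_ _. 0) v (\<lambda>k. Z c s k \<omega>) (H s)" for c \<omega>
  have eq: "Gb s \<omega> *v v = (1 / real N) *\<^sub>R (\<Sum>c<N. Y c \<omega>)" for \<omega>
    unfolding Gb_def Y_def by (simp add: scaleR_matrix_vector_assoc[symmetric] sum_mv gamR_yR)
  have mY: "Y c \<in> borel_measurable M" if "c < N" for c
    unfolding Y_def using that s by (intro yR_meas Z_meas) auto
  have bY: "bdd (space M) (Y c)" if "c < N" for c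
    unfolding Y_def using that s by (intro yR_bdd[where B=0]) auto
  have rb: "0 \<le> 1 - eta s * a" using rho_bounds[OF s] by simp
  have Yc: "sqrt (\<integral>\<omega>. (norm (Y c \<omega>))\<^sup>2 \<partial>M) \<le> (1 - eta s * a) ^ H s * norm v" if "c < N" for c
  proof -
    have "sqrt (\<integral>\<omega>. (norm (Y c \<omega>))\<^sup>2 \<partial>M) \<le> sqrt (((1 - eta s * a)\<^sup>2) ^ H s * (norm v)\<^sup>2)"
      unfolding Y_def using that s by (intro real_sqrt_le_mono yR_nonoise) auto
    also have "((1 - eta s * a)\<^sup>2) ^ H s * (norm v)\<^sup>2 = ((1 - eta s * a) ^ H s * norm v)\<^sup>2"
      by (simp only: power_mult_distrib power_mult[symmetric] mult.commute[of 2 "H s"])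
    also have "sqrt \<dots> = (1 - eta s * a) ^ H s * norm v" using rb by simp
    finally show ?thesis .
  qed
  have "sqrt (\<integral>\<omega>. (norm (Gb s \<omega> *v v))\<^sup>2 \<partial>M) = (1 / real N) * sqrt (\<integral>\<omega>. (norm (\<Sum>c<N. Y c \<omega>))\<^sup>2 \<partial>M)"
    unfolding eq L2_scale by simp
  also have "\<dots> \<le> (1 / real N) * (\<Sum>c<N. sqrt (\<integral>\<omega>. (norm (Y c \<omega>))\<^sup>2 \<partial>M))"
    using mY bY by (intro mult_left_mono L2_sum) auto
  also have "\<dots> \<le> (1 / real N) * (\<Sum>c<N. (1 - eta s * a) ^ H s * norm v)"
    using Yc by (intro mult_left_mono sum_mono) auto
  also have "\<dots> = (1 - eta s * a) ^ H s * norm v" using N_pos by simp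
  finally have "(\<integral>\<omega>. (norm (Gb s \<omega> *v v))\<^sup>2 \<partial>M) \<le> ((1 - eta s * a) ^ H s * norm v)\<^sup>2"
    by (intro sqrt_le_D) simp_all
  then show ?thesis by (simp add: power_mult_distrib)
qed

lemma Wr_mean_var:
  assumes s: "1 \<le> s"
  shows "(\<integral>\<omega>. Wr s \<omega> \<partial>M) = 0"
    and "(\<integral>\<omega>. (norm (Wr s \<omega>))\<^sup>2 \<partial>M) \<le> (1 / real N)\<^sup>2 * (\<Sum>c<N. real (H s) * (eta s)\<^sup>2 * (sA c)\<^sup>2)"
proof -
  have r: "(\<integral>\<omega>. (\<Sum>c<N. yc c s \<omega>) \<partial>M) = 0 \<and>
    (\<integral>\<omega>. (norm (\<Sum>c<N. yc c s \<omega>))\<^sup>2 \<partial>M) \<le> (\<Sum>c<N. (\<integral>\<omega>. (norm (yc c s \<omega>))\<^sup>2 \<partial>M))"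
    by (rule agents_sum[OF s order.refl])
  show "(\<integral>\<omega>. Wr s \<omega> \<partial>M) = 0" unfolding Wr_def using r by simp
  have eq: "(norm (Wr s \<omega>))\<^sup>2 = (1 / real N)\<^sup>2 * (norm (\<Sum>c<N. yc c s \<omega>))\<^sup>2" for \<omega>
    unfolding Wr_def norm_scaleR using N_pos by (simp add: field_simps power2_eq_square)
  have "(\<integral>\<omega>. (norm (Wr s \<omega>))\<^sup>2 \<partial>M) = (1 / real N)\<^sup>2 * (\<integral>\<omega>. (norm (\<Sum>c<N. yc c s \<omega>))\<^sup>2 \<partial>M)"
    unfolding eq by (rule integral_mult_right_zero)
  also have "\<dots> \<le> (1 / real N)\<^sup>2 * (\<Sum>c<N. (\<integral>\<omega>. (norm (yc c s \<omega>))\<^sup>2 \<partial>M))"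
    using r by (intro mult_left_mono) auto
  also have "\<dots> \<le> (1 / real N)\<^sup>2 * (\<Sum>c<N. real (H s) * (eta s)\<^sup>2 * (sA c)\<^sup>2)"
    using s by (intro mult_left_mono sum_mono yc_mean_var(2)) auto
  finally show "(\<integral>\<omega>. (norm (Wr s \<omega>))\<^sup>2 \<partial>M) \<le> (1 / real N)\<^sup>2 * (\<Sum>c<N. real (H s) * (eta s)\<^sup>2 * (sA c)\<^sup>2)" .
qed

lemma ind_round:
  fixes W y :: "'w \<Rightarrow> real^'d"
  assumes "W \<in> borel_measurable (FF (rnd (Suc s)))" "y \<in> borel_measurable (FF (rle s))"
  shows "indep_var borel (\<lambda>\<omega>. (Gb (Suc s) \<omega>, W \<omega>)) borel (\<lambda>\<omega>. (0::real^'d^'d, y \<omega>))"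
proof (rule indep_FF[OF rnd_II rle_II])
  show "rnd (Suc s) \<inter> rle s = {}" by (auto simp: rnd_def rle_def)
  have "Gb (Suc s) \<in> borel_measurable (FF (rnd (Suc s)))" by (intro Gb_meas Z_rnd) auto
  then show "(\<lambda>\<omega>. (Gb (Suc s) \<omega>, W \<omega>)) \<in> borel_measurable (FF (rnd (Suc s)))" using assms(1) by (rule borel_measurable_Pair)
  show "(\<lambda>\<omega>. (0::real^'d^'d, y \<omega>)) \<in> borel_measurable (FF (rle s))" using assms(2) by simp
qed simp

definition rho :: "nat \<Rightarrow> real" where "rho s = (1 - eta s * a) ^ H s"

lemma rho_nonneg: "1 \<le> s \<Longrightarrow> 0 \<le> rho s"
  unfolding rho_def using rho_bounds by simp

lemma pp_rec: "sqrt (\<integral>\<omega>. (norm (pp e0 (Suc s) \<omega>))\<^sup>2 \<partial>M) \<le> rho (Suc s) * sqrt (\<integral>\<omega>. (norm (pp e0 s \<omega>))\<^sup>2 \<partial>M)"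
proof -
  have ind: "indep_var borel (\<lambda>\<omega>. (Gb (Suc s) \<omega>, (\<lambda>_. 0::real^'d) \<omega>)) borel (\<lambda>\<omega>. (0::real^'d^'d, pp e0 s \<omega>))"
    by (intro ind_round pp_meas) simp
  have "(\<integral>\<omega>. (norm (pp e0 (Suc s) \<omega>))\<^sup>2 \<partial>M) \<le> (rho (Suc s))\<^sup>2 * (\<integral>\<omega>. (norm (pp e0 s \<omega>))\<^sup>2 \<partial>M)"
    unfolding pp.simps rho_def by (rule indep_mv_norm[OF ind Gb_bdd pp_bdd Gb_contr]) auto
  then have "sqrt (\<integral>\<omega>. (norm (pp e0 (Suc s) \<omega>))\<^sup>2 \<partial>M) \<le> sqrt ((rho (Suc s))\<^sup>2 * (\<integral>\<omega>. (norm (pp e0 s \<omega>))\<^sup>2 \<partial>M))"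
    by (rule real_sqrt_le_mono)
  also have "\<dots> = rho (Suc s) * sqrt (\<integral>\<omega>. (norm (pp e0 s \<omega>))\<^sup>2 \<partial>M)"
    using rho_nonneg[of "Suc s"] by (simp add: real_sqrt_mult)
  finally show ?thesis .
qed

lemma qq_rec: "sqrt (\<integral>\<omega>. (norm (qq (Suc s) \<omega>))\<^sup>2 \<partial>M) \<le> rho (Suc s) * sqrt (\<integral>\<omega>. (norm (qq s \<omega>))\<^sup>2 \<partial>M) + norm (Dd (Suc s))"
proof -
  have ind: "indep_var borel (\<lambda>\<omega>. (Gb (Suc s) \<omega>, (\<lambda>_. 0::real^'d) \<omega>)) borel (\<lambda>\<omega>. (0::real^'d^'d, qq s \<omega>))"
    by (intro ind_round qq_meas) simp
  have mG: "Gb (Suc s) \<in> borel_measurable M" by (intro Gb_meas Z_meas) auto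
  have mq: "qq s \<in> borel_measurable M" by (rule M_rle[OF qq_meas])
  have "(\<integral>\<omega>. (norm (Gb (Suc s) \<omega> *v qq s \<omega>))\<^sup>2 \<partial>M) \<le> (rho (Suc s))\<^sup>2 * (\<integral>\<omega>. (norm (qq s \<omega>))\<^sup>2 \<partial>M)"
    unfolding rho_def by (rule indep_mv_norm[OF ind Gb_bdd qq_bdd Gb_contr]) auto
  then have "sqrt (\<integral>\<omega>. (norm (Gb (Suc s) \<omega> *v qq s \<omega>))\<^sup>2 \<partial>M) \<le> sqrt ((rho (Suc s))\<^sup>2 * (\<integral>\<omega>. (norm (qq s \<omega>))\<^sup>2 \<partial>M))"
    by (rule real_sqrt_le_mono)
  also have "\<dots> = rho (Suc s) * sqrt (\<integral>\<omega>. (norm (qq s \<omega>))\<^sup>2 \<partial>M)"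
    using rho_nonneg[of "Suc s"] by (simp add: real_sqrt_mult)
  finally have 1: "sqrt (\<integral>\<omega>. (norm (Gb (Suc s) \<omega> *v qq s \<omega>))\<^sup>2 \<partial>M) \<le> rho (Suc s) * sqrt (\<integral>\<omega>. (norm (qq s \<omega>))\<^sup>2 \<partial>M)" .
  have "sqrt (\<integral>\<omega>. (norm (qq (Suc s) \<omega>))\<^sup>2 \<partial>M) \<le> sqrt (\<integral>\<omega>. (norm (Gb (Suc s) \<omega> *v qq s \<omega>))\<^sup>2 \<partial>M) + sqrt (\<integral>\<omega>. (norm (Dd (Suc s)))\<^sup>2 \<partial>M)"
    unfolding qq.simps using mG mq by (intro L2_triangle bdd_mv Gb_bdd qq_bdd bdd_const) auto
  also have "sqrt (\<integral>\<omega>. (norm (Dd (Suc s)))\<^sup>2 \<partial>M) = norm (Dd (Suc s))" by (simp add: prob_space)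
  finally show ?thesis using 1 by linarith
qed

lemma rr_mean: "(\<integral>\<omega>. rr s \<omega> \<partial>M) = 0"
proof (induction s)
  case 0 then show ?case by simp
next
  case (Suc s)
  have ind: "indep_var borel (\<lambda>\<omega>. (Gb (Suc s) \<omega>, Wr (Suc s) \<omega>)) borel (\<lambda>\<omega>. (0::real^'d^'d, rr s \<omega>))"
    by (intro ind_round rr_meas Wr_meas Z_rnd) auto
  have "(\<integral>\<omega>. Gb (Suc s) \<omega> *v rr s \<omega> + Wr (Suc s) \<omega> \<partial>M) = (\<integral>\<omega>. Gb (Suc s) \<omega> \<partial>M) *v (\<integral>\<omega>. rr s \<omega> \<partial>M) + (\<integral>\<omega>. Wr (Suc s) \<omega> \<partial>M)"
    by (rule rec_mean[OF ind Gb_bdd Wr_bdd rr_bdd]) auto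
  then show ?case using Suc Wr_mean_var(1)[of "Suc s"] by simp
qed

lemma rr_rec: "(\<integral>\<omega>. (norm (rr (Suc s) \<omega>))\<^sup>2 \<partial>M) \<le> (rho (Suc s))\<^sup>2 * (\<integral>\<omega>. (norm (rr s \<omega>))\<^sup>2 \<partial>M) + (\<integral>\<omega>. (norm (Wr (Suc s) \<omega>))\<^sup>2 \<partial>M)"
proof -
  have ind: "indep_var borel (\<lambda>\<omega>. (Gb (Suc s) \<omega>, Wr (Suc s) \<omega>)) borel (\<lambda>\<omega>. (0::real^'d^'d, rr s \<omega>))"
    by (intro ind_round rr_meas Wr_meas Z_rnd) auto
  show ?thesis unfolding rr.simps rho_def
    using rec_step[OF ind Gb_bdd Wr_bdd rr_bdd Gb_contr] rr_mean[of s] by simp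
qed

end

lemma unroll:
  fixes x r b :: "nat \<Rightarrow> real"
  assumes rec: "\<And>s. x (Suc s) \<le> r (Suc s) * x s + b (Suc s)"
    and r0: "\<And>s. 1 \<le> s \<Longrightarrow> 0 \<le> r s"
  shows "x t \<le> (\<Prod>s=1..t. r s) * x 0 + (\<Sum>s=1..t. (\<Prod>j=s+1..t. r j) * b s)"
proof (induction t)
  case 0 then show ?case by simp
next
  case (Suc t)
  have pr: "(\<Prod>s=1..Suc t. r s) = r (Suc t) * (\<Prod>s=1..t. r s)"
    by (simp add: prod.nat_ivl_Suc' mult.commute)
  have pj: "(\<Prod>j=s+1..Suc t. r j) = r (Suc t) * (\<Prod>j=s+1..t. r j)" if "s \<le> t" for s
    using that by (simp add: prod.nat_ivl_Suc' mult.commute)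
  have sm: "(\<Sum>s=1..Suc t. (\<Prod>j=s+1..Suc t. r j) * b s) = r (Suc t) * (\<Sum>s=1..t. (\<Prod>j=s+1..t. r j) * b s) + b (Suc t)"
  proof -
    have "(\<Sum>s=1..Suc t. (\<Prod>j=s+1..Suc t. r j) * b s) = (\<Sum>s=1..t. (\<Prod>j=s+1..Suc t. r j) * b s) + (\<Prod>j=Suc t+1..Suc t. r j) * b (Suc t)"
      by (simp add: sum.nat_ivl_Suc')
    also have "(\<Sum>s=1..t. (\<Prod>j=s+1..Suc t. r j) * b s) = (\<Sum>s=1..t. r (Suc t) * ((\<Prod>j=s+1..t. r j) * b s))"
      by (intro sum.cong refl) (simp add: pj)
    also have "\<dots> = r (Suc t) * (\<Sum>s=1..t. (\<Prod>j=s+1..t. r j) * b s)" by (simp add: sum_distrib_left)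
    finally show ?thesis by simp
  qed
  have "x (Suc t) \<le> r (Suc t) * x t + b (Suc t)" by (rule rec)
  also have "\<dots> \<le> r (Suc t) * ((\<Prod>s=1..t. r s) * x 0 + (\<Sum>s=1..t. (\<Prod>j=s+1..t. r j) * b s)) + b (Suc t)"
    using Suc r0[of "Suc t"] by (intro add_right_mono mult_left_mono) auto
  also have "\<dots> = (\<Prod>s=1..Suc t. r s) * x 0 + (\<Sum>s=1..Suc t. (\<Prod>j=s+1..Suc t. r j) * b s)"
    unfolding pr sm by (simp add: algebra_simps)
  finally show ?case .
qed

context fed2 begin

lemma decomp:
  assumes eps_eq: "\<And>c z. c < N \<Longrightarrow> eps c z = A c z *v th c - b c z"
    and dl_eq: "\<And>c. c < N \<Longrightarrow> dl c = ts - th c"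
  shows "fedlsa N A b eta H theta0 (\<lambda>c s h. Z c s h \<omega>) s - ts = pp (theta0 - ts) s \<omega> + qq s \<omega> + rr s \<omega>"
proof (induction s)
  case 0 then show ?case by simp
next
  case (Suc s)
  define e where "e = fedlsa N A b eta H theta0 (\<lambda>c s h. Z c s h \<omega>) s - ts"
  define zs where "zs c = (\<lambda>k. Z c (Suc s) k \<omega>)" for c
  define g where "g c = gamR (A c) (eta (Suc s)) (zs c) (H (Suc s))" for c
  have loc: "local_run (A c) (b c) (eta (Suc s)) (zs c) (fedlsa N A b eta H theta0 (\<lambda>c s h. Z c s h \<omega>) s) (H (Suc s)) - ts
      = g c *v e + (pw (Ab c) (eta (Suc s)) (H (Suc s)) (dl c) - dl c) + yc c (Suc s) \<omega>" if c: "c < N" for c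
  proof -
    have ld: "local_run (A c) (b c) (eta (Suc s)) (zs c) (fedlsa N A b eta H theta0 (\<lambda>c s h. Z c s h \<omega>) s) (H (Suc s))
      = th c + g c *v (fedlsa N A b eta H theta0 (\<lambda>c s h. Z c s h \<omega>) s - th c)
        + yR (A c) (eta (Suc s)) (\<lambda>_ z. - eta (Suc s) *\<^sub>R eps c z) 0 (zs c) (H (Suc s))"
      unfolding g_def by (rule local_decomp) (rule eps_eq[OF c])
    have xd: "g c *v dl c - pw (Ab c) (eta (Suc s)) (H (Suc s)) (dl c) + yR (A c) (eta (Suc s)) (\<lambda>_ z. - eta (Suc s) *\<^sub>R eps c z) 0 (zs c) (H (Suc s))
      = yc c (Suc s) \<omega>"
      unfolding g_def yc_def zs_def xic_def by (rule x_decomp)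
    have 1: "fedlsa N A b eta H theta0 (\<lambda>c s h. Z c s h \<omega>) s - th c = e + dl c"
      unfolding e_def dl_eq[OF c] by simp
    have 2: "th c - ts = - dl c" unfolding dl_eq[OF c] by simp
    let ?u = "yR (A c) (eta (Suc s)) (\<lambda>_ z. - eta (Suc s) *\<^sub>R eps c z) 0 (zs c) (H (Suc s))"
    have "local_run (A c) (b c) (eta (Suc s)) (zs c) (fedlsa N A b eta H theta0 (\<lambda>c s h. Z c s h \<omega>) s) (H (Suc s)) - ts
        = (th c - ts) + g c *v (e + dl c) + ?u"
      unfolding ld 1 by simp
    also have "\<dots> = g c *v e + ((g c *v dl c - pw (Ab c) (eta (Suc s)) (H (Suc s)) (dl c) + ?u) + (pw (Ab c) (eta (Suc s)) (H (Suc s)) (dl c) - dl c))"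
      unfolding 2 by (simp add: matrix_vector_right_distrib)
    also have "\<dots> = g c *v e + (pw (Ab c) (eta (Suc s)) (H (Suc s)) (dl c) - dl c) + yc c (Suc s) \<omega>"
      unfolding xd by simp
    finally show ?thesis .
  qed
  have N0: "real N \<noteq> 0" using N_pos by simp
  have "fedlsa N A b eta H theta0 (\<lambda>c s h. Z c s h \<omega>) (Suc s) - ts
     = (1 / real N) *\<^sub>R (\<Sum>c<N. local_run (A c) (b c) (eta (Suc s)) (zs c) (fedlsa N A b eta H theta0 (\<lambda>c s h. Z c s h \<omega>) s) (H (Suc s)) - ts)"
  proof -
    have "(\<Sum>c<N. ts) = real N *\<^sub>R ts" using sum_constant_scaleR[where A="{..<N}" and y=ts] by simp
    then show ?thesis using N0 by (simp add: zs_def sum_subtractf scaleR_diff_right del: sum_constant)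
  qed
  also have "\<dots> = (1 / real N) *\<^sub>R (\<Sum>c<N. g c *v e + (pw (Ab c) (eta (Suc s)) (H (Suc s)) (dl c) - dl c) + yc c (Suc s) \<omega>)"
    using loc by simp
  also have "\<dots> = Gb (Suc s) \<omega> *v e + Dd (Suc s) + Wr (Suc s) \<omega>"
    unfolding Gb_def Dd_def Wr_def g_def zs_def
    by (simp add: sum.distrib scaleR_add_right scaleR_matrix_vector_assoc[symmetric] sum_mv)
  also have "\<dots> = pp (theta0 - ts) (Suc s) \<omega> + qq (Suc s) \<omega> + rr (Suc s) \<omega>"
    using Suc unfolding e_def by (simp add: matrix_vector_right_distrib algebra_simps)
  finally show ?case .
qed

end

context fed2 begin

definition Vr :: "nat \<Rightarrow> real" where
  "Vr s = (1 / real N)\<^sup>2 * (\<Sum>c<N. real (H s) * (eta s)\<^sup>2 * (sA c)\<^sup>2)"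

lemma main_bound:
  assumes eps_eq: "\<And>c z. c < N \<Longrightarrow> eps c z = A c z *v th c - b c z"
    and dl_eq: "\<And>c. c < N \<Longrightarrow> dl c = ts - th c"
  shows "sqrt (\<integral>\<omega>. (norm (fedlsa N A b eta H theta0 (\<lambda>c s h. Z c s h \<omega>) t - ts))\<^sup>2 \<partial>M)
    \<le> (\<Prod>s=1..t. rho s) * norm (theta0 - ts) + (\<Sum>s=1..t. (\<Prod>j=s+1..t. rho j) * norm (Dd s))
      + sqrt (\<Sum>s=1..t. (\<Prod>j=s+1..t. (rho j)\<^sup>2) * Vr s)"
proof -
  let ?e0 = "theta0 - ts"
  have mp: "pp ?e0 t \<in> borel_measurable M" by (rule M_rle[OF pp_meas])
  have mq: "qq t \<in> borel_measurable M" by (rule M_rle[OF qq_meas])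
  have mr: "rr t \<in> borel_measurable M" by (rule M_rle[OF rr_meas])
  have "sqrt (\<integral>\<omega>. (norm (fedlsa N A b eta H theta0 (\<lambda>c s h. Z c s h \<omega>) t - ts))\<^sup>2 \<partial>M)
     = sqrt (\<integral>\<omega>. (norm ((pp ?e0 t \<omega> + qq t \<omega>) + rr t \<omega>))\<^sup>2 \<partial>M)"
  proof -
    have dec: "fedlsa N A b eta H theta0 (\<lambda>c s h. Z c s h \<omega>) t - ts = pp ?e0 t \<omega> + qq t \<omega> + rr t \<omega>" for \<omega>
      by (rule decomp[OF eps_eq dl_eq])
    show ?thesis by (simp only: dec)
  qed
  also have "\<dots> \<le> sqrt (\<integral>\<omega>. (norm (pp ?e0 t \<omega> + qq t \<omega>))\<^sup>2 \<partial>M) + sqrt (\<integral>\<omega>. (norm (rr t \<omega>))\<^sup>2 \<partial>M)"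
    using mp mq mr by (intro L2_triangle bdd_add pp_bdd qq_bdd rr_bdd borel_measurable_add) auto
  also have "sqrt (\<integral>\<omega>. (norm (pp ?e0 t \<omega> + qq t \<omega>))\<^sup>2 \<partial>M) \<le> sqrt (\<integral>\<omega>. (norm (pp ?e0 t \<omega>))\<^sup>2 \<partial>M) + sqrt (\<integral>\<omega>. (norm (qq t \<omega>))\<^sup>2 \<partial>M)"
    using mp mq by (intro L2_triangle pp_bdd qq_bdd) auto
  also have "sqrt (\<integral>\<omega>. (norm (pp ?e0 t \<omega>))\<^sup>2 \<partial>M) \<le> (\<Prod>s=1..t. rho s) * norm ?e0"
  proof -
    have "sqrt (\<integral>\<omega>. (norm (pp ?e0 t \<omega>))\<^sup>2 \<partial>M) \<le> (\<Prod>s=1..t. rho s) * sqrt (\<integral>\<omega>. (norm (pp ?e0 0 \<omega>))\<^sup>2 \<partial>M) + (\<Sum>s=1..t. (\<Prod>j=s+1..t. rho j) * 0)"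
      apply (rule unroll[where x="\<lambda>s. sqrt (\<integral>\<omega>. (norm (pp ?e0 s \<omega>))\<^sup>2 \<partial>M)" and b="\<lambda>_. 0"])
       apply (simp only: add_0_right)
       apply (rule pp_rec)
      apply (erule rho_nonneg)
      done
    then show ?thesis by (simp add: prob_space)
  qed
  also have "sqrt (\<integral>\<omega>. (norm (qq t \<omega>))\<^sup>2 \<partial>M) \<le> (\<Sum>s=1..t. (\<Prod>j=s+1..t. rho j) * norm (Dd s))"
  proof -
    have "sqrt (\<integral>\<omega>. (norm (qq t \<omega>))\<^sup>2 \<partial>M) \<le> (\<Prod>s=1..t. rho s) * sqrt (\<integral>\<omega>. (norm (qq 0 \<omega>))\<^sup>2 \<partial>M) + (\<Sum>s=1..t. (\<Prod>j=s+1..t. rho j) * norm (Dd s))"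
      apply (rule unroll[where x="\<lambda>s. sqrt (\<integral>\<omega>. (norm (qq s \<omega>))\<^sup>2 \<partial>M)"])
       apply (rule qq_rec)
      apply (erule rho_nonneg)
      done
    then show ?thesis by simp
  qed
  also have "sqrt (\<integral>\<omega>. (norm (rr t \<omega>))\<^sup>2 \<partial>M) \<le> sqrt (\<Sum>s=1..t. (\<Prod>j=s+1..t. (rho j)\<^sup>2) * Vr s)"
  proof -
    have rec: "(\<integral>\<omega>. (norm (rr (Suc s) \<omega>))\<^sup>2 \<partial>M) \<le> (rho (Suc s))\<^sup>2 * (\<integral>\<omega>. (norm (rr s \<omega>))\<^sup>2 \<partial>M) + Vr (Suc s)" for s
      using rr_rec[of s] Wr_mean_var(2)[of "Suc s"] unfolding Vr_def by simp
    have "(\<integral>\<omega>. (norm (rr t \<omega>))\<^sup>2 \<partial>M) \<le> (\<Prod>s=1..t. (rho s)\<^sup>2) * (\<integral>\<omega>. (norm (rr 0 \<omega>))\<^sup>2 \<partial>M) + (\<Sum>s=1..t. (\<Prod>j=s+1..t. (rho j)\<^sup>2) * Vr s)"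
      apply (rule unroll[where x="\<lambda>s. (\<integral>\<omega>. (norm (rr s \<omega>))\<^sup>2 \<partial>M)" and r="\<lambda>s. (rho s)\<^sup>2"])
       apply (rule rec)
      apply simp
      done
    then show ?thesis by (intro real_sqrt_le_mono) simp
  qed
  finally show ?thesis by simp
qed

end

lemma one_minus_pow_exp:
  fixes x :: real assumes "0 \<le> x" "x \<le> 1"
  shows "(1 - x) ^ n \<le> exp (- x * real n)"
proof -
  have "1 - x \<le> exp (- x)" using exp_ge_add_one_self[of "- x"] by simp
  then have "(1 - x) ^ n \<le> (exp (- x)) ^ n" using assms by (intro power_mono) auto
  also have "\<dots> = exp (- x * real n)" by (simp add: exp_of_nat_mult[symmetric] mult.commute)
  finally show ?thesis .
qed

lemma cs_avg:
  fixes x y :: "nat \<Rightarrow> real" assumes "1 \<le> N"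
  shows "(1 / real N) * (\<Sum>c<N. x c * y c) \<le> sqrt ((1 / real N) * (\<Sum>c<N. (x c)\<^sup>2)) * sqrt ((1 / real N) * (\<Sum>c<N. (y c)\<^sup>2))"
proof -
  have "(\<Sum>c<N. x c * y c)\<^sup>2 \<le> (\<Sum>c<N. (x c)\<^sup>2) * (\<Sum>c<N. (y c)\<^sup>2)" by (rule Cauchy_Schwarz_ineq_sum)
  then have "\<bar>\<Sum>c<N. x c * y c\<bar> \<le> sqrt ((\<Sum>c<N. (x c)\<^sup>2) * (\<Sum>c<N. (y c)\<^sup>2))"
    using real_le_rsqrt real_sqrt_abs by (metis real_sqrt_le_mono)
  then have "(\<Sum>c<N. x c * y c) \<le> sqrt ((\<Sum>c<N. (x c)\<^sup>2) * (\<Sum>c<N. (y c)\<^sup>2))" by linarith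
  then have "(1 / real N) * (\<Sum>c<N. x c * y c) \<le> (1 / real N) * sqrt ((\<Sum>c<N. (x c)\<^sup>2) * (\<Sum>c<N. (y c)\<^sup>2))"
    by (intro mult_left_mono) auto
  also have "\<dots> = sqrt ((1 / real N) * (\<Sum>c<N. (x c)\<^sup>2)) * sqrt ((1 / real N) * (\<Sum>c<N. (y c)\<^sup>2))"
    using assms by (simp add: real_sqrt_mult real_sqrt_divide)
  finally show ?thesis .
qed

lemma mink_avg:
  fixes u v :: "nat \<Rightarrow> real" assumes "1 \<le> N"
  shows "(1 / real N) * (\<Sum>c<N. (u c + v c)\<^sup>2) \<le> (sqrt ((1 / real N) * (\<Sum>c<N. (u c)\<^sup>2)) + sqrt ((1 / real N) * (\<Sum>c<N. (v c)\<^sup>2)))\<^sup>2"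
proof -
  define U where "U = (1 / real N) * (\<Sum>c<N. (u c)\<^sup>2)"
  define V where "V = (1 / real N) * (\<Sum>c<N. (v c)\<^sup>2)"
  have U0: "0 \<le> U" and V0: "0 \<le> V" unfolding U_def V_def by (simp_all add: sum_nonneg)
  have "(1 / real N) * (\<Sum>c<N. (u c + v c)\<^sup>2) = U + V + 2 * ((1 / real N) * (\<Sum>c<N. u c * v c))"
    unfolding U_def V_def by (simp add: power2_sum sum.distrib sum_distrib_left algebra_simps)
  also have "\<dots> \<le> U + V + 2 * (sqrt U * sqrt V)"
    using cs_avg[OF assms, of u v] unfolding U_def V_def by linarith
  also have "\<dots> = (sqrt U + sqrt V)\<^sup>2" using U0 V0 by (simp add: power2_sum)
  finally show ?thesis unfolding U_def V_def .
qed

lemma pw_tele: "v - pw B e h v = e *\<^sub>R (\<Sum>k<h. B *v pw B e k v)"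
  by (induction h) (simp_all add: algebra_simps matrix_vector_mult_diff_rdistrib scaleR_matrix_vector_assoc[symmetric] matrix_vector_mul_lid)

lemma pw_comm: "B *v pw B e k v = pw B e k (B *v v)"
proof (induction k)
  case 0 then show ?case by simp
next
  case (Suc k)
  have "B *v pw B e (Suc k) v = B *v ((mat 1 - e *\<^sub>R B) *v pw B e k v)" by simp
  also have "\<dots> = (mat 1 - e *\<^sub>R B) *v (B *v pw B e k v)"
    by (simp add: matrix_vector_mult_diff_rdistrib matrix_vector_right_distrib
        scaleR_matrix_vector_assoc[symmetric] matrix_vector_mul_lid matrix_vector_mult_diff_distrib matrix_vector_mult_scaleR)
  also have "\<dots> = pw B e (Suc k) (B *v v)" using Suc by simp
  finally show ?case .
qed

lemma mv_sum: "(B::real^'n^'m) *v (\<Sum>c\<in>I. v c) = (\<Sum>c\<in>I. B *v v c)"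
  by (induction I rule: infinite_finite_induct) (simp_all add: matrix_vector_right_distrib)

lemma pw_sum: "pw B e k (\<Sum>c\<in>I. v c) = (\<Sum>c\<in>I. pw B e k (v c))"
  by (induction k) (simp_all add: mv_sum)

lemma pw_zero[simp]: "pw B e k 0 = 0"
  by (induction k) simp_all

lemma pw_contr: "(\<And>w. norm ((mat 1 - e *\<^sub>R B) *v w) \<le> norm w) \<Longrightarrow> norm (pw B e k w) \<le> norm w"
  by (induction k) (auto intro: order_trans)

lemma opnorm_bound': "norm ((B::real^'n^'n) *v v) \<le> opnorm B * norm v"
  unfolding opnorm_def by (rule onorm) simp

lemma opnorm_ge0': "0 \<le> opnorm (B::real^'n^'n)"
  unfolding opnorm_def by (rule onorm_pos_le) simp

lemma pw_diff:
  assumes cB: "\<And>w. norm ((mat 1 - e *\<^sub>R B) *v w) \<le> norm w"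
    and cC: "\<And>w. norm ((mat 1 - e *\<^sub>R C) *v w) \<le> norm w" and e0: "0 \<le> e"
  shows "norm (pw B e k w - pw C e k w) \<le> real k * e * opnorm (B - C) * norm w"
proof (induction k)
  case 0 then show ?case by simp
next
  case (Suc k)
  let ?x = "pw B e k w" and ?y = "pw C e k w"
  have "pw B e (Suc k) w - pw C e (Suc k) w = (mat 1 - e *\<^sub>R B) *v (?x - ?y) - e *\<^sub>R ((B - C) *v ?y)"
    by (simp add: matrix_vector_mult_diff_rdistrib matrix_vector_mult_diff_distrib
        scaleR_matrix_vector_assoc[symmetric] algebra_simps)
  also have "norm \<dots> \<le> norm ((mat 1 - e *\<^sub>R B) *v (?x - ?y)) + norm (e *\<^sub>R ((B - C) *v ?y))"
    by (rule norm_triangle_ineq4)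
  also have "\<dots> \<le> real k * e * opnorm (B - C) * norm w + e * (opnorm (B - C) * norm w)"
  proof (rule add_mono)
    show "norm ((mat 1 - e *\<^sub>R B) *v (?x - ?y)) \<le> real k * e * opnorm (B - C) * norm w"
      using cB Suc order_trans by blast
    have "norm ((B - C) *v ?y) \<le> opnorm (B - C) * norm ?y" by (rule opnorm_bound')
    also have "\<dots> \<le> opnorm (B - C) * norm w"
      using pw_contr[OF cC] opnorm_ge0' by (intro mult_left_mono) auto
    finally show "norm (e *\<^sub>R ((B - C) *v ?y)) \<le> e * (opnorm (B - C) * norm w)"
      using e0 by (simp add: mult_left_mono)
  qed
  also have "\<dots> = real (Suc k) * e * opnorm (B - C) * norm w" by (simp add: algebra_simps)
  finally show ?case .
qed

lemma D_bound:
  fixes Ab :: "nat \<Rightarrow> real^'d^'d" and Abar :: "real^'d^'d" and dl :: "nat \<Rightarrow> real^'d"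
  assumes N: "1 \<le> N" and Abar_eq: "Abar = (1 / real N) *\<^sub>R (\<Sum>c<N. Ab c)"
    and zero: "(\<Sum>c<N. Ab c *v dl c) = 0"
    and cAb: "\<And>c w. c < N \<Longrightarrow> norm ((mat 1 - e *\<^sub>R Ab c) *v w) \<le> norm w" and e0: "0 \<le> e"
  shows "norm ((1 / real N) *\<^sub>R (\<Sum>c<N. pw (Ab c) e H (dl c) - dl c))
    \<le> e\<^sup>2 * (real H)\<^sup>2 * ((1 / real N) * (\<Sum>c<N. opnorm (Ab c - Abar) * norm (Ab c *v dl c)))"
proof -
  have N0: "real N \<noteq> 0" using N by simp
  have cAbar: "norm ((mat 1 - e *\<^sub>R Abar) *v w) \<le> norm w" for w
  proof -
    have cs: "(\<Sum>c<N. w) = real N *\<^sub>R w" using sum_constant_scaleR[where A="{..<N}" and y=w] by simp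
    have "(mat 1 - e *\<^sub>R Abar) *v w = (1 / real N) *\<^sub>R (\<Sum>c<N. (mat 1 - e *\<^sub>R Ab c) *v w)"
      unfolding Abar_eq using N0
      by (simp add: matrix_vector_mult_diff_rdistrib sum_subtractf cs scaleR_matrix_vector_assoc[symmetric]
          sum_mv scaleR_sum_right[symmetric] matrix_vector_mul_lid scaleR_diff_right del: sum_constant)
    also have "norm \<dots> \<le> (1 / real N) * (\<Sum>c<N. norm ((mat 1 - e *\<^sub>R Ab c) *v w))"
      by (simp add: norm_sum divide_right_mono)
    also have "\<dots> \<le> (1 / real N) * (\<Sum>c<N. norm w)"
      by (intro mult_left_mono sum_mono cAb) auto
    also have "\<dots> = norm w" using N0 by simp
    finally show ?thesis .
  qed
  define Q where "Q = (\<Sum>c<N. opnorm (Ab c - Abar) * norm (Ab c *v dl c))"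
  have Q0: "0 \<le> Q" unfolding Q_def using opnorm_ge0' by (intro sum_nonneg mult_nonneg_nonneg) auto
  define T where "T k = (\<Sum>c<N. pw (Ab c) e k (Ab c *v dl c))" for k
  have S: "(\<Sum>c<N. pw (Ab c) e H (dl c) - dl c) = - (e *\<^sub>R (\<Sum>k<H. T k))"
  proof -
    have "(\<Sum>c<N. pw (Ab c) e H (dl c) - dl c) = (\<Sum>c<N. - (e *\<^sub>R (\<Sum>k<H. pw (Ab c) e k (Ab c *v dl c))))"
    proof (intro sum.cong refl)
      fix c
      have "dl c - pw (Ab c) e H (dl c) = e *\<^sub>R (\<Sum>k<H. Ab c *v pw (Ab c) e k (dl c))" by (rule pw_tele)
      then show "pw (Ab c) e H (dl c) - dl c = - (e *\<^sub>R (\<Sum>k<H. pw (Ab c) e k (Ab c *v dl c)))"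
        by (simp add: pw_comm algebra_simps)
    qed
    also have "\<dots> = - (e *\<^sub>R (\<Sum>k<H. T k))"
      unfolding T_def by (simp add: sum_negf scaleR_sum_right[symmetric] sum.swap[of _ "{..<N}"])
    finally show ?thesis .
  qed
  have Tk: "norm (T k) \<le> real k * e * Q" for k
  proof -
    have "T k = (\<Sum>c<N. pw (Ab c) e k (Ab c *v dl c) - pw Abar e k (Ab c *v dl c))"
      unfolding T_def using pw_sum[of Abar e k "\<lambda>c. Ab c *v dl c" "{..<N}"] zero
      by (simp add: sum_subtractf)
    also have "norm \<dots> \<le> (\<Sum>c<N. norm (pw (Ab c) e k (Ab c *v dl c) - pw Abar e k (Ab c *v dl c)))"
      by (rule norm_sum)
    also have "\<dots> \<le> (\<Sum>c<N. real k * e * opnorm (Ab c - Abar) * norm (Ab c *v dl c))"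
      by (intro sum_mono pw_diff cAb cAbar e0) auto
    also have "\<dots> = real k * e * Q" unfolding Q_def by (simp add: sum_distrib_left mult.assoc)
    finally show ?thesis .
  qed
  have sumk: "(\<Sum>k<H. real k) \<le> (real H)\<^sup>2"
  proof -
    have "(\<Sum>k<H. real k) \<le> (\<Sum>k<H. real H)" by (intro sum_mono) auto
    then show ?thesis by (simp add: power2_eq_square)
  qed
  have eq: "norm ((1 / real N) *\<^sub>R (\<Sum>c<N. pw (Ab c) e H (dl c) - dl c)) = (1 / real N) * (e * norm (\<Sum>k<H. T k))"
    unfolding S using e0 by simp
  have "norm (\<Sum>k<H. T k) \<le> (\<Sum>k<H. real k * e * Q)"
    by (rule order_trans[OF norm_sum]) (intro sum_mono Tk)
  also have "(\<Sum>k<H. real k * e * Q) = (\<Sum>k<H. real k) * (e * Q)"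
    by (simp add: sum_distrib_right mult.assoc)
  also have "\<dots> \<le> (real H)\<^sup>2 * (e * Q)" using sumk e0 Q0 by (intro mult_right_mono) auto
  finally have A: "norm (\<Sum>k<H. T k) \<le> (real H)\<^sup>2 * (e * Q)" .
  have "(1 / real N) * (e * norm (\<Sum>k<H. T k)) \<le> (1 / real N) * (e * ((real H)\<^sup>2 * (e * Q)))"
    using A e0 by (intro mult_left_mono) auto
  also have "\<dots> = e\<^sup>2 * (real H)\<^sup>2 * ((1 / real N) * Q)" by (simp add: power2_eq_square)
  finally show ?thesis unfolding eq Q_def .
qed

lemma quad_closed:
  fixes q :: "real \<Rightarrow> real" and \<eta> :: real
  assumes q: "\<And>e. q e = cza + czb * e + czc * e\<^sup>2" and pos: "\<And>e. 0 < e \<Longrightarrow> e < \<eta> \<Longrightarrow> 0 \<le> q e" and eta: "0 < \<eta>"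
  shows "0 \<le> q \<eta>"
proof -
  define en where "en n = \<eta> * (1 - inverse (real (Suc (Suc n))))" for n
  have i: "(\<lambda>n. inverse (real (Suc (Suc n)))) \<longlonglongrightarrow> 0"
    using LIMSEQ_Suc[OF LIMSEQ_inverse_real_of_nat] by simp
  have "en \<longlonglongrightarrow> \<eta> * (1 - 0)" unfolding en_def by (intro tendsto_intros i)
  then have en: "en \<longlonglongrightarrow> \<eta>" by simp
  have "(\<lambda>n. cza + czb * en n + czc * (en n)\<^sup>2) \<longlonglongrightarrow> cza + czb * \<eta> + czc * \<eta>\<^sup>2"
    by (intro tendsto_intros en)
  then have lim: "(\<lambda>n. q (en n)) \<longlonglongrightarrow> q \<eta>" unfolding q .
  have "0 \<le> q (en n)" for n
  proof (rule pos)
    have "0 < inverse (real (Suc (Suc n)))" by simp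
    moreover have "inverse (real (Suc (Suc n))) < 1" by (simp add: inverse_less_1_iff)
    ultimately show "0 < en n" "en n < \<eta>" unfolding en_def using eta by (auto simp: mult_less_cancel_left1)
  qed
  then show ?thesis using lim by (intro LIMSEQ_le_const[OF lim]) auto
qed

lemma contr_closed:
  fixes A :: "'z \<Rightarrow> real^'d^'d" and P :: "'z measure"
  assumes P: "prob_space P" and Am: "A \<in> borel_measurable P" and Ab: "bdd (space P) A"
    and A1: "\<And>e. 0 < e \<Longrightarrow> e < \<eta> \<Longrightarrow> sqrt (\<integral>z. (norm ((mat 1 - e *\<^sub>R A z) *v u))\<^sup>2 \<partial>P) \<le> (1 - e * a) * norm u"
    and a: "0 < a" and eta: "0 < \<eta>" "\<eta> * a \<le> 1 / 2" and e: "0 < e" "e \<le> \<eta>"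
  shows "(\<integral>z. (norm ((mat 1 - e *\<^sub>R A z) *v u))\<^sup>2 \<partial>P) \<le> (1 - e * a)\<^sup>2 * (norm u)\<^sup>2"
proof -
  interpret P: prob_space P by (rule P)
  have nn: "0 \<le> 1 - e * a" if "0 < e" "e \<le> \<eta>" for e
  proof -
    have "e * a \<le> \<eta> * a" using that a by (intro mult_right_mono) auto
    then show ?thesis using eta by linarith
  qed
  have lt: "(\<integral>z. (norm ((mat 1 - e *\<^sub>R A z) *v u))\<^sup>2 \<partial>P) \<le> (1 - e * a)\<^sup>2 * (norm u)\<^sup>2"
    if "0 < e" "e < \<eta>" for e
  proof -
    have "(\<integral>z. (norm ((mat 1 - e *\<^sub>R A z) *v u))\<^sup>2 \<partial>P) \<le> ((1 - e * a) * norm u)\<^sup>2"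
      by (rule sqrt_le_D) (auto intro: A1 that)
    then show ?thesis by (simp add: power_mult_distrib)
  qed
  show ?thesis
  proof (cases "e < \<eta>")
    case True then show ?thesis using lt e by auto
  next
    case False
    then have e\<eta>: "e = \<eta>" using e by simp
    define \<alpha> where "\<alpha> = (\<integral>z. u \<bullet> (A z *v u) \<partial>P)"
    define \<beta> where "\<beta> = (\<integral>z. (norm (A z *v u))\<^sup>2 \<partial>P)"
    have i1: "integrable P (\<lambda>z. u \<bullet> (A z *v u))" using Ab Am by (intro P.integrable_bdd bdd_inner bdd_mv bdd_const) auto
    have i2: "integrable P (\<lambda>z. (norm (A z *v u))\<^sup>2)" using Ab Am by (intro P.integrable_bdd bdd_norm2 bdd_mv bdd_const) auto
    have expand: "(\<integral>z. (norm ((mat 1 - x *\<^sub>R A z) *v u))\<^sup>2 \<partial>P) = (norm u)\<^sup>2 - 2 * x * \<alpha> + x\<^sup>2 * \<beta>" for x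
    proof -
      have "(norm ((mat 1 - x *\<^sub>R A z) *v u))\<^sup>2 = (norm u)\<^sup>2 - 2 * x * (u \<bullet> (A z *v u)) + x\<^sup>2 * (norm (A z *v u))\<^sup>2" for z
      proof -
        have w: "(mat 1 - x *\<^sub>R A z) *v u = u - x *\<^sub>R (A z *v u)"
          by (simp add: matrix_vector_mult_diff_rdistrib scaleR_matrix_vector_assoc[symmetric] matrix_vector_mul_lid)
        show ?thesis unfolding w power2_norm_eq_inner
          by (simp add: inner_diff_left inner_diff_right inner_commute power2_eq_square algebra_simps)
      qed
      then have "(\<integral>z. (norm ((mat 1 - x *\<^sub>R A z) *v u))\<^sup>2 \<partial>P) = (\<integral>z. (norm u)\<^sup>2 - 2 * x * (u \<bullet> (A z *v u)) + x\<^sup>2 * (norm (A z *v u))\<^sup>2 \<partial>P)"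
        by simp
      also have "\<dots> = (norm u)\<^sup>2 - 2 * x * \<alpha> + x\<^sup>2 * \<beta>"
        unfolding \<alpha>_def \<beta>_def using i1 i2 by (simp add: P.prob_space)
      finally show ?thesis .
    qed
    define q where "q x = (1 - x * a)\<^sup>2 * (norm u)\<^sup>2 - ((norm u)\<^sup>2 - 2 * x * \<alpha> + x\<^sup>2 * \<beta>)" for x
    have h1: "q x = 0 + (2 * \<alpha> - 2 * a * (norm u)\<^sup>2) * x + (a\<^sup>2 * (norm u)\<^sup>2 - \<beta>) * x\<^sup>2" for x
      unfolding q_def by (simp add: power2_eq_square algebra_simps)
    have h2: "0 \<le> q x" if "0 < x" "x < \<eta>" for x
      using lt[OF that] unfolding q_def expand by simp
    have "0 \<le> q \<eta>" by (rule quad_closed[OF h1 h2 eta(1)])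
    then show ?thesis unfolding e\<eta> q_def expand by simp
  qed
qed

lemma trace_outer:
  fixes f :: "'z \<Rightarrow> real^'d" and P :: "'z measure"
  assumes P: "prob_space P" and fm: "f \<in> borel_measurable P" and fb: "bdd (space P) f"
  shows "(\<Sum>i\<in>UNIV. (\<integral>z. (\<chi> j k. f z $ j * f z $ k) \<partial>P) $ i $ i) = (\<integral>z. (norm (f z))\<^sup>2 \<partial>P)"
proof -
  interpret P: prob_space P by (rule P)
  obtain B where B: "\<And>z. z \<in> space P \<Longrightarrow> norm (f z) \<le> B" using fb unfolding bdd_def by blast
  have cont: "continuous_on UNIV (\<lambda>v::real^'d. \<chi> j k. v $ j * v $ k)"
    by (intro continuous_intros)
  have mM: "(\<lambda>z. \<chi> j k. f z $ j * f z $ k) \<in> borel_measurable P"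
    using borel_measurable_continuous_on[OF cont fm] by simp
  have bM: "bdd (space P) (\<lambda>z. (\<chi> j k. f z $ j * f z $ k) :: real^'d^'d)"
  proof (rule bddI)
    fix z assume z: "z \<in> space P"
    have "norm ((\<chi> j k. f z $ j * f z $ k) :: real^'d^'d) \<le> (\<Sum>j\<in>(UNIV::'d set). \<Sum>k\<in>(UNIV::'d set). \<bar>(\<chi> j k. f z $ j * f z $ k) $ j $ k\<bar>)"
      by (rule norm_le_entries)
    also have "\<dots> \<le> (\<Sum>j\<in>(UNIV::'d set). \<Sum>k\<in>(UNIV::'d set). B * B)"
    proof (intro sum_mono)
      fix j k
      have "\<bar>f z $ j * f z $ k\<bar> = \<bar>f z $ j\<bar> * \<bar>f z $ k\<bar>" by (rule abs_mult)
      also have "\<dots> \<le> B * B"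
        using B[OF z] component_le_norm_cart[of "f z" j] component_le_norm_cart[of "f z" k]
        by (intro mult_mono) auto
      finally show "\<bar>((\<chi> j k. f z $ j * f z $ k) :: real^'d^'d) $ j $ k\<bar> \<le> B * B" by simp
    qed
    finally show "norm ((\<chi> j k. f z $ j * f z $ k) :: real^'d^'d) \<le> real CARD('d) * (real CARD('d) * (B * B))" by simp
  qed
  have iM: "integrable P (\<lambda>z. (\<chi> j k. f z $ j * f z $ k) :: real^'d^'d)" using mM bM by (rule P.integrable_bdd)
  have bl: "bounded_linear (\<lambda>x::real^'d^'d. x $ i $ i)" for i
  proof (rule bounded_linear_intro[where K=1])
    fix x :: "real^'d^'d"
    show "norm (x $ i $ i) \<le> norm x * 1"
      using entry_le_norm[of x i i] by simp
  qed simp_all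
  have comp: "(\<integral>z. (\<chi> j k. f z $ j * f z $ k) \<partial>P) $ i $ i = (\<integral>z. f z $ i * f z $ i \<partial>P)" for i
    using integral_bounded_linear[OF bl[of i] iM] by simp
  have ii: "integrable P (\<lambda>z. f z $ i * f z $ i)" for i
    using integrable_bounded_linear[OF bl[of i] iM] by simp
  have "(\<Sum>i\<in>UNIV. (\<integral>z. (\<chi> j k. f z $ j * f z $ k) \<partial>P) $ i $ i) = (\<Sum>i\<in>UNIV. (\<integral>z. f z $ i * f z $ i \<partial>P))"
    by (simp add: comp)
  also have "\<dots> = (\<integral>z. (\<Sum>i\<in>UNIV. f z $ i * f z $ i) \<partial>P)"
    by (rule Bochner_Integration.integral_sum[symmetric]) (use ii in auto)
  also have "\<dots> = (\<integral>z. (norm (f z))\<^sup>2 \<partial>P)"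
    by (simp add: power2_norm_eq_inner inner_vec_def)
  finally show ?thesis .
qed

lemma prod_rho_exp:
  fixes eta :: "nat \<Rightarrow> real" and H :: "nat \<Rightarrow> nat"
  assumes "\<And>j. j \<in> S \<Longrightarrow> 0 \<le> eta j * a \<and> eta j * a \<le> 1" and "0 \<le> a"
  shows "(\<Prod>j\<in>S. (1 - eta j * a) ^ H j) \<le> exp (- a * (\<Sum>i\<in>S. eta i * real (H i)))"
proof -
  have "(\<Prod>j\<in>S. (1 - eta j * a) ^ H j) \<le> (\<Prod>j\<in>S. exp (- (eta j * a) * real (H j)))"
    using assms by (intro prod_mono conjI one_minus_pow_exp) auto
  also have "\<dots> = exp (\<Sum>j\<in>S. - (eta j * a) * real (H j))"
    by (cases "finite S") (simp_all add: exp_sum)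
  also have "(\<Sum>j\<in>S. - (eta j * a) * real (H j)) = - a * (\<Sum>i\<in>S. eta i * real (H i))"
    by (simp add: sum_distrib_left sum_negf algebra_simps)
  finally show ?thesis .
qed

theorem theorem1:
  fixes N :: nat
    and M :: "'w measure" and Zs :: "'z measure" and \<pi> :: "nat \<Rightarrow> 'z measure"
    and A :: "nat \<Rightarrow> 'z \<Rightarrow> real^'d^'d" and b :: "nat \<Rightarrow> 'z \<Rightarrow> real^'d"
    and Z :: "nat \<Rightarrow> nat \<Rightarrow> nat \<Rightarrow> 'w \<Rightarrow> 'z"
    and eta :: "nat \<Rightarrow> real" and H :: "nat \<Rightarrow> nat" and theta0 :: "real^'d"
    and a eta_inf :: real
    and theta_star :: "real^'d" and theta_loc :: "nat \<Rightarrow> real^'d"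
    and Abar_c Atil :: "nat \<Rightarrow> real^'d^'d" and Abar :: "real^'d^'d"
    and bbar_c :: "nat \<Rightarrow> real^'d" and bbar :: "real^'d"
    and eps :: "nat \<Rightarrow> 'z \<Rightarrow> real^'d"
    and zeta1 zeta2 sigma_eps sigma_het sigma_A :: real
    and t :: nat
  assumes N_pos: "N \<ge> 1"
    and M_prob: "prob_space M"
    and pi_prob: "\<And>c. c < N \<Longrightarrow> prob_space (\<pi> c)"
    and pi_sets: "\<And>c. c < N \<Longrightarrow> sets (\<pi> c) = sets Zs"
    and A_meas: "\<And>c. c < N \<Longrightarrow> A c \<in> borel_measurable Zs"
    and b_meas: "\<And>c. c < N \<Longrightarrow> b c \<in> borel_measurable Zs"
    and b_int: "\<And>c. c < N \<Longrightarrow> integrable (\<pi> c) (b c)"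
    and Abar_c_def: "\<And>c. Abar_c c = (\<integral>z. A c z \<partial>\<pi> c)"
    and bbar_c_def: "\<And>c. bbar_c c = (\<integral>z. b c z \<partial>\<pi> c)"
    and Abar_def: "Abar = (1 / real N) *\<^sub>R (\<Sum>c<N. Abar_c c)"
    and bbar_def: "bbar = (1 / real N) *\<^sub>R (\<Sum>c<N. bbar_c c)"
    and theta_star_sol: "Abar *v theta_star = bbar"
    and theta_loc_sol: "\<And>c. c < N \<Longrightarrow> Abar_c c *v theta_loc c = bbar_c c"
    and eps_def: "\<And>c z. eps c z = (A c z - Abar_c c) *v theta_loc c - (b c z - bbar_c c)"
    \<comment> \<open>Assumption A1(2)\<close>
    and hurwitz: "\<And>c. c < N \<Longrightarrow> hurwitz (- Abar_c c)"
    and a_pos: "a > 0" and eta_inf_pos: "eta_inf > 0" and eta_inf_a: "eta_inf * a \<le> 1 / 2"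
    and A1: "\<And>c e u. c < N \<Longrightarrow> 0 < e \<Longrightarrow> e < eta_inf \<Longrightarrow>
               sqrt (\<integral>z. (norm ((mat 1 - e *\<^sub>R A c z) *v u))\<^sup>2 \<partial>\<pi> c) \<le> (1 - e * a) * norm u"
    \<comment> \<open>Assumption A2\<close>
    and Z_meas: "\<And>c s h. c < N \<Longrightarrow> 1 \<le> s \<Longrightarrow> 1 \<le> h \<Longrightarrow> h \<le> H s \<Longrightarrow> Z c s h \<in> measurable M Zs"
    and Z_distr: "\<And>c s h. c < N \<Longrightarrow> 1 \<le> s \<Longrightarrow> 1 \<le> h \<Longrightarrow> h \<le> H s \<Longrightarrow> distr M Zs (Z c s h) = \<pi> c"
    and Z_indep: "prob_space.indep_vars M (\<lambda>_. Zs) (\<lambda>(c, s, h). Z c s h)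
                    {(c, s, h). c < N \<and> 1 \<le> s \<and> 1 \<le> h \<and> h \<le> H s}"
    and eps_bdd: "\<exists>B. \<forall>c<N. \<forall>z\<in>space Zs. norm (eps c z) \<le> B"
    and A_bdd: "\<exists>C. \<forall>c<N. \<forall>z\<in>space Zs. opnorm (A c z) \<le> C \<and> opnorm (A c z - Abar_c c) \<le> C"
    \<comment> \<open>step sizes and local step numbers\<close>
    and eta_pos: "\<And>s. 1 \<le> s \<Longrightarrow> 0 < eta s"
    and eta_le: "\<And>s. 1 \<le> s \<Longrightarrow> eta s \<le> eta_inf"
    and eta_noninc: "\<And>s s'. 1 \<le> s \<Longrightarrow> s \<le> s' \<Longrightarrow> eta s' \<le> eta s"
    and H_pos: "\<And>s. 1 \<le> s \<Longrightarrow> 1 \<le> H s"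
    and H_nondec: "\<And>s s'. 1 \<le> s \<Longrightarrow> s \<le> s' \<Longrightarrow> H s \<le> H s'"
    \<comment> \<open>heterogeneity and variance quantities\<close>
    and zeta1_def: "zeta1 = sqrt ((1 / real N) * (\<Sum>c<N. (norm (Abar_c c *v (theta_loc c - theta_star)))\<^sup>2))"
    and zeta2_def: "zeta2 = sqrt ((1 / real N) * (\<Sum>c<N. (opnorm (Abar_c c - Abar))\<^sup>2))"
    and sigma_eps_def: "sigma_eps = sqrt ((1 / real N) * (\<Sum>c<N.
           (\<Sum>i\<in>UNIV. (\<integral>z. (\<chi> j k. eps c z $ j * eps c z $ k) \<partial>\<pi> c) $ i $ i)))"
    and sigma_het_def: "sigma_het = sqrt ((1 / real N) * (\<Sum>c<N.
           opnorm (\<integral>z. transpose (A c z - Abar_c c) ** (A c z - Abar_c c) \<partial>\<pi> c)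
           * (norm (theta_loc c - theta_star))\<^sup>2))"
    and sigma_A_def: "sigma_A = sqrt ((1 / real N) * (\<Sum>c<N.
           (opnorm (\<integral>z. transpose (A c z - Abar_c c) ** (A c z - Abar_c c) \<partial>\<pi> c))\<^sup>2))"
    and t_pos: "1 \<le> t"
  shows "sqrt (\<integral>\<omega>. (norm (fedlsa N A b eta H theta0 (\<lambda>c s h. Z c s h \<omega>) t - theta_star))\<^sup>2 \<partial>M)
     \<le> (\<Prod>s=1..t. (1 - eta s * a) ^ H s) * norm (theta0 - theta_star)
       + zeta1 * zeta2 * (\<Sum>s=1..t. (eta s)\<^sup>2 * (real (H s))\<^sup>2 * exp (- a * (\<Sum>i=s+1..t. eta i * real (H i))))
       + (sigma_eps + 2 * sigma_het) / sqrt (real N)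
           * sqrt (\<Sum>s=1..t. (eta s)\<^sup>2 * real (H s) * exp (- 2 * a * (\<Sum>r=s+1..t. eta r * real (H r))))
       + sqrt (4 * sigma_A\<^sup>2 * zeta1\<^sup>2 * zeta2\<^sup>2 / (real N * a * exp 1))
           * sqrt (\<Sum>s=1..t. eta s ^ 5 * real (H s) ^ 4 * exp (- a * (\<Sum>r=s+1..t. eta r * real (H r))))"
  proof -
  interpret P: prob_space M by (rule M_prob)
  obtain C where C: "\<And>c z. c < N \<Longrightarrow> z \<in> space Zs \<Longrightarrow> opnorm (A c z) \<le> C"
    using A_bdd by blast
  obtain BE where BE: "\<And>c z. c < N \<Longrightarrow> z \<in> space Zs \<Longrightarrow> norm (eps c z) \<le> BE"
    using eps_bdd by blast
  define CA where "CA = real CARD('d) * real CARD('d) * C"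
  have A_bnd: "norm (A c z) \<le> CA" if c: "c < N" and z: "z \<in> space Zs" for c z
  proof -
    have "norm (A c z) \<le> (\<Sum>i\<in>(UNIV::'d set). \<Sum>j\<in>(UNIV::'d set). \<bar>A c z $ i $ j\<bar>)"
      by (rule norm_le_entries)
    also have "\<dots> \<le> (\<Sum>i\<in>(UNIV::'d set). \<Sum>j\<in>(UNIV::'d set). C)"
    proof (intro sum_mono)
      fix i j
      have "\<bar>A c z $ i $ j\<bar> \<le> onorm ((*v) (A c z))" by (rule matrix_component_le_onorm)
      also have "\<dots> \<le> C" using C[OF c z] unfolding opnorm_def .
      finally show "\<bar>A c z $ i $ j\<bar> \<le> C" .
    qed
    finally show ?thesis unfolding CA_def by simp
  qed
  have eps_eq: "eps c z = A c z *v theta_loc c - b c z" if c: "c < N" for c z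
    unfolding eps_def using theta_loc_sol[OF c]
    by (simp add: matrix_vector_mult_diff_rdistrib algebra_simps)
  have space_pi: "space (\<pi> c) = space Zs" if "c < N" for c
    using pi_sets[OF that] by (rule sets_eq_imp_space_eq)
  have meas_pi: "f \<in> measurable (\<pi> c) N'" if "c < N" "f \<in> measurable Zs N'" for c f and N' :: "'b measure"
    using that pi_sets[OF that(1)] by (simp add: measurable_def space_pi)
  have eps_fun: "eps c = (\<lambda>z. (A c z - Abar_c c) *v theta_loc c - (b c z - bbar_c c))" for c
    using eps_def by auto
  have eps_meas: "eps c \<in> borel_measurable Zs" if c: "c < N" for c
    unfolding eps_fun using A_meas[OF c] b_meas[OF c] by measurable
  have A_int: "integrable (\<pi> c) (A c)" if c: "c < N" for c
  proof -
    interpret Pc: prob_space "\<pi> c" by (rule pi_prob[OF c])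
    show ?thesis
      using A_bnd c by (intro Pc.integrable_bdd meas_pi[OF c] A_meas[OF c] bddI[where B=CA]) (auto simp: space_pi)
  qed
  have eps_mean: "(\<integral>z. eps c z \<partial>\<pi> c) = 0" if c: "c < N" for c
  proof -
    interpret Pc: prob_space "\<pi> c" by (rule pi_prob[OF c])
    have iA: "integrable (\<pi> c) (\<lambda>z. A c z - Abar_c c)" using A_int[OF c] by simp
    have iAv: "integrable (\<pi> c) (\<lambda>z. (A c z - Abar_c c) *v theta_loc c)"
      by (rule integrable_bounded_linear[OF bounded_linear_mv_left iA])
    have ib: "integrable (\<pi> c) (\<lambda>z. b c z - bbar_c c)" using b_int[OF c] by simp
    have "(\<integral>z. (A c z - Abar_c c) *v theta_loc c \<partial>\<pi> c) = (\<integral>z. A c z - Abar_c c \<partial>\<pi> c) *v theta_loc c"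
      by (rule integral_bounded_linear[OF bounded_linear_mv_left iA])
    also have "(\<integral>z. A c z - Abar_c c \<partial>\<pi> c) = 0"
      using A_int[OF c] by (simp add: Abar_c_def Pc.prob_space)
    finally have 1: "(\<integral>z. (A c z - Abar_c c) *v theta_loc c \<partial>\<pi> c) = 0" by simp
    have 2: "(\<integral>z. b c z - bbar_c c \<partial>\<pi> c) = 0"
      using b_int[OF c] by (simp add: bbar_c_def Pc.prob_space)
    show ?thesis unfolding eps_fun using iAv ib 1 2 by simp
  qed
  have contr: "(\<integral>z. (norm ((mat 1 - e *\<^sub>R A c z) *v u))\<^sup>2 \<partial>\<pi> c) \<le> (1 - e * a)\<^sup>2 * (norm u)\<^sup>2"
    if c: "c < N" and e: "0 < e" "e \<le> eta_inf" for c e u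
  proof (rule contr_closed[OF pi_prob[OF c]])
    show "A c \<in> borel_measurable (\<pi> c)" by (rule meas_pi[OF c A_meas[OF c]])
    show "bdd (space (\<pi> c)) (A c)" using A_bnd c by (intro bddI[where B=CA]) (auto simp: space_pi)
    show "sqrt (\<integral>z. (norm ((mat 1 - x *\<^sub>R A c z) *v u))\<^sup>2 \<partial>\<pi> c) \<le> (1 - x * a) * norm u"
      if "0 < x" "x < eta_inf" for x
      using A1[OF c that] .
  qed (use a_pos eta_inf_pos eta_inf_a e in auto)
  have fed2_inst: "fed2 M N Zs \<pi> A eps Z eta H a eta_inf CA BE Abar_c"
  proof (intro fed2.intro fed.intro fed_axioms.intro fed2_axioms.intro)
    show "prob_space M" by (rule M_prob)
    show "1 \<le> N" by (rule N_pos)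
    show "\<And>c. c < N \<Longrightarrow> prob_space (\<pi> c)" by (rule pi_prob)
    show "\<And>c. c < N \<Longrightarrow> sets (\<pi> c) = sets Zs" by (rule pi_sets)
    show "\<And>c. c < N \<Longrightarrow> A c \<in> borel_measurable Zs" by (rule A_meas)
    show "\<And>c. c < N \<Longrightarrow> eps c \<in> borel_measurable Zs" by (rule eps_meas)
    show "\<And>c z. c < N \<Longrightarrow> z \<in> space Zs \<Longrightarrow> norm (A c z) \<le> CA" by (rule A_bnd)
    show "\<And>c z. c < N \<Longrightarrow> z \<in> space Zs \<Longrightarrow> norm (eps c z) \<le> BE" by (rule BE)
    show "\<And>c. c < N \<Longrightarrow> (\<integral>z. eps c z \<partial>\<pi> c) = 0" by (rule eps_mean)
    show "\<And>c e u. c < N \<Longrightarrow> 0 < e \<Longrightarrow> e \<le> eta_inf \<Longrightarrow>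
        (\<integral>z. (norm ((mat 1 - e *\<^sub>R A c z) *v u))\<^sup>2 \<partial>\<pi> c) \<le> (1 - e * a)\<^sup>2 * (norm u)\<^sup>2" by (rule contr)
    show "0 < a" by (rule a_pos)
    show "eta_inf * a \<le> 1 / 2" by (rule eta_inf_a)
    show "\<And>c s h. c < N \<Longrightarrow> 1 \<le> s \<Longrightarrow> 1 \<le> h \<Longrightarrow> h \<le> H s \<Longrightarrow> Z c s h \<in> measurable M Zs" by (rule Z_meas)
    show "\<And>c s h. c < N \<Longrightarrow> 1 \<le> s \<Longrightarrow> 1 \<le> h \<Longrightarrow> h \<le> H s \<Longrightarrow> distr M Zs (Z c s h) = \<pi> c" by (rule Z_distr)
    show "prob_space.indep_vars M (\<lambda>_. Zs) (\<lambda>(c, s, h). Z c s h) {(c, s, h). c < N \<and> 1 \<le> s \<and> 1 \<le> h \<and> h \<le> H s}"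
      by (rule Z_indep)
    show "\<And>s. 1 \<le> s \<Longrightarrow> 0 < eta s" by (rule eta_pos)
    show "\<And>s. 1 \<le> s \<Longrightarrow> eta s \<le> eta_inf" by (rule eta_le)
    show "\<And>c. c < N \<Longrightarrow> Abar_c c = (\<integral>z. A c z \<partial>\<pi> c)" by (rule Abar_c_def)
  qed
  interpret F: fed2 M N Zs \<pi> A eps Z eta H a eta_inf CA BE Abar_c "\<lambda>c. theta_star - theta_loc c"
    by (rule fed2_inst)
  have main: "sqrt (\<integral>\<omega>. (norm (fedlsa N A b eta H theta0 (\<lambda>c s h. Z c s h \<omega>) t - theta_star))\<^sup>2 \<partial>M)
    \<le> (\<Prod>s=1..t. F.rho s) * norm (theta0 - theta_star) + (\<Sum>s=1..t. (\<Prod>j=s+1..t. F.rho j) * norm (F.Dd s))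
      + sqrt (\<Sum>s=1..t. (\<Prod>j=s+1..t. (F.rho j)\<^sup>2) * F.Vr s)"
    by (rule F.main_bound[OF eps_eq]) auto
  have rhoS: "0 \<le> eta j * a \<and> eta j * a \<le> 1" if "1 \<le> j" for j
    using F.rho_bounds[OF that] eta_pos[OF that] a_pos by auto
  have rho_nn: "0 \<le> F.rho j" if "1 \<le> j" for j using F.rho_nonneg[OF that] .
  have pexp: "(\<Prod>j=s+1..t. F.rho j) \<le> exp (- a * (\<Sum>i=s+1..t. eta i * real (H i)))" for s
    unfolding F.rho_def using rhoS a_pos by (intro prod_rho_exp) auto
  have pnn: "0 \<le> (\<Prod>j=s+1..t. F.rho j)" for s using rho_nn by (intro prod_nonneg) auto
  have sumAb: "(\<Sum>c<N. Abar_c c) = real N *\<^sub>R Abar"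
    using N_pos unfolding Abar_def by simp
  have sumbb: "(\<Sum>c<N. bbar_c c) = real N *\<^sub>R bbar"
    using N_pos unfolding bbar_def by simp
  have zero: "(\<Sum>c<N. Abar_c c *v (theta_star - theta_loc c)) = 0"
  proof -
    have "(\<Sum>c<N. Abar_c c *v (theta_star - theta_loc c)) = (\<Sum>c<N. Abar_c c *v theta_star - bbar_c c)"
      using theta_loc_sol by (intro sum.cong refl) (simp add: matrix_vector_mult_diff_distrib)
    also have "\<dots> = (\<Sum>c<N. Abar_c c) *v theta_star - (\<Sum>c<N. bbar_c c)"
      by (simp add: sum_subtractf sum_mv)
    also have "\<dots> = real N *\<^sub>R (Abar *v theta_star - bbar)"
      unfolding sumAb sumbb by (simp add: scaleR_matrix_vector_assoc[symmetric] scaleR_diff_right)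
    also have "\<dots> = 0" using theta_star_sol by simp
    finally show ?thesis .
  qed
  have z1: "zeta1 = sqrt ((1 / real N) * (\<Sum>c<N. (norm (Abar_c c *v (theta_star - theta_loc c)))\<^sup>2))"
  proof -
    have "norm (Abar_c c *v (theta_loc c - theta_star)) = norm (Abar_c c *v (theta_star - theta_loc c))" for c
    proof -
      have "Abar_c c *v (theta_loc c - theta_star) = - (Abar_c c *v (theta_star - theta_loc c))"
        by (simp add: matrix_vector_mult_diff_distrib)
      then show ?thesis by simp
    qed
    then show ?thesis unfolding zeta1_def by simp
  qed
  have Dbound: "norm (F.Dd s) \<le> (eta s)\<^sup>2 * (real (H s))\<^sup>2 * (zeta1 * zeta2)" if s: "1 \<le> s" for s
  proof -
    define Q where "Q = (1 / real N) * (\<Sum>c<N. opnorm (Abar_c c - Abar) * norm (Abar_c c *v (theta_star - theta_loc c)))"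
    have X: "norm (F.Dd s) \<le> (eta s)\<^sup>2 * (real (H s))\<^sup>2 * Q"
      unfolding F.Dd_def Q_def
      by (rule D_bound[OF N_pos Abar_def zero]) (use F.Ab_contr[OF _ s] eta_pos[OF s] in auto)
    have Y: "Q \<le> zeta2 * zeta1"
      unfolding Q_def zeta2_def z1 by (rule cs_avg[OF N_pos])
    have "(eta s)\<^sup>2 * (real (H s))\<^sup>2 * Q \<le> (eta s)\<^sup>2 * (real (H s))\<^sup>2 * (zeta2 * zeta1)"
      using Y by (intro mult_left_mono) auto
    with X show ?thesis by (simp add: mult.commute)
  qed
  have T2: "(\<Sum>s=1..t. (\<Prod>j=s+1..t. F.rho j) * norm (F.Dd s))
      \<le> zeta1 * zeta2 * (\<Sum>s=1..t. (eta s)\<^sup>2 * (real (H s))\<^sup>2 * exp (- a * (\<Sum>i=s+1..t. eta i * real (H i))))"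
  proof -
    have "(\<Sum>s=1..t. (\<Prod>j=s+1..t. F.rho j) * norm (F.Dd s))
        \<le> (\<Sum>s=1..t. exp (- a * (\<Sum>i=s+1..t. eta i * real (H i))) * ((eta s)\<^sup>2 * (real (H s))\<^sup>2 * (zeta1 * zeta2)))"
      using pexp pnn Dbound by (intro sum_mono mult_mono) auto
    also have "\<dots> = zeta1 * zeta2 * (\<Sum>s=1..t. (eta s)\<^sup>2 * (real (H s))\<^sup>2 * exp (- a * (\<Sum>i=s+1..t. eta i * real (H i))))"
      by (simp add: sum_distrib_left algebra_simps)
    finally show ?thesis .
  qed
  have VE_eq: "F.VE c = (\<Sum>i\<in>UNIV. (\<integral>z. (\<chi> j k. eps c z $ j * eps c z $ k) \<partial>\<pi> c) $ i $ i)" if c: "c < N" for c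
    unfolding F.VE_def
    by (rule trace_outer[symmetric, OF pi_prob[OF c] meas_pi[OF c eps_meas[OF c]]])
       (use BE c in \<open>auto intro!: bddI[where B=BE] simp: space_pi\<close>)
  have sh: "sigma_het = sqrt ((1 / real N) * (\<Sum>c<N. (sqrt (opnorm (F.VA c)) * norm (theta_star - theta_loc c))\<^sup>2))"
    unfolding sigma_het_def F.VA_def
    by (simp add: power_mult_distrib opnorm_ge0' norm_minus_commute)
  have se: "sigma_eps = sqrt ((1 / real N) * (\<Sum>c<N. (sqrt (F.VE c))\<^sup>2))"
  proof -
    have "(\<Sum>c<N. (sqrt (F.VE c))\<^sup>2) = (\<Sum>c<N. (\<Sum>i\<in>UNIV. (\<integral>z. (\<chi> j k. eps c z $ j * eps c z $ k) \<partial>\<pi> c) $ i $ i))"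
    proof (intro sum.cong refl)
      fix c assume "c \<in> {..<N}"
      then have c: "c < N" by simp
      have "0 \<le> F.VE c" unfolding F.VE_def by simp
      then show "(sqrt (F.VE c))\<^sup>2 = (\<Sum>i\<in>UNIV. (\<integral>z. (\<chi> j k. eps c z $ j * eps c z $ k) \<partial>\<pi> c) $ i $ i)"
        using VE_eq[OF c] by simp
    qed
    then show ?thesis unfolding sigma_eps_def by simp
  qed
  have sAavg: "(1 / real N) * (\<Sum>c<N. (F.sA c)\<^sup>2) \<le> (sigma_het + sigma_eps)\<^sup>2"
    unfolding F.sA_def sh se by (rule mink_avg[OF N_pos])
  have sig0: "0 \<le> sigma_het" "0 \<le> sigma_eps" unfolding sh se by (auto intro!: sum_nonneg divide_nonneg_nonneg)
  have Vbound: "F.Vr s \<le> real (H s) * (eta s)\<^sup>2 / real N * (sigma_het + sigma_eps)\<^sup>2" for s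
  proof -
    have "F.Vr s = real (H s) * (eta s)\<^sup>2 / real N * ((1 / real N) * (\<Sum>c<N. (F.sA c)\<^sup>2))"
      unfolding F.Vr_def by (simp add: sum_distrib_left power2_eq_square algebra_simps)
    also have "\<dots> \<le> real (H s) * (eta s)\<^sup>2 / real N * (sigma_het + sigma_eps)\<^sup>2"
      using sAavg by (intro mult_left_mono) auto
    finally show ?thesis .
  qed
  have p2exp: "(\<Prod>j=s+1..t. (F.rho j)\<^sup>2) \<le> exp (- 2 * a * (\<Sum>r=s+1..t. eta r * real (H r)))" for s
  proof -
    have "(\<Prod>j=s+1..t. (F.rho j)\<^sup>2) = (\<Prod>j=s+1..t. F.rho j)\<^sup>2" by (simp add: prod_power_distrib)
    also have "\<dots> \<le> (exp (- a * (\<Sum>i=s+1..t. eta i * real (H i))))\<^sup>2"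
      by (rule power_mono[OF pexp pnn])
    also have "\<dots> = exp (- a * (\<Sum>i=s+1..t. eta i * real (H i)) + - a * (\<Sum>i=s+1..t. eta i * real (H i)))"
      by (simp only: power2_eq_square exp_add)
    also have "\<dots> = exp (- 2 * a * (\<Sum>r=s+1..t. eta r * real (H r)))" by (simp add: algebra_simps)
    finally show ?thesis .
  qed
  define S2 where "S2 = (\<Sum>s=1..t. (eta s)\<^sup>2 * real (H s) * exp (- 2 * a * (\<Sum>r=s+1..t. eta r * real (H r))))"
  have S2nn: "0 \<le> S2" unfolding S2_def by (intro sum_nonneg) auto
  have T3: "sqrt (\<Sum>s=1..t. (\<Prod>j=s+1..t. (F.rho j)\<^sup>2) * F.Vr s) \<le> (sigma_eps + 2 * sigma_het) / sqrt (real N) * sqrt S2"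
  proof -
    have Vnn: "0 \<le> F.Vr s" for s unfolding F.Vr_def by (intro mult_nonneg_nonneg sum_nonneg) auto
    have "(\<Sum>s=1..t. (\<Prod>j=s+1..t. (F.rho j)\<^sup>2) * F.Vr s)
        \<le> (\<Sum>s=1..t. exp (- 2 * a * (\<Sum>r=s+1..t. eta r * real (H r))) * (real (H s) * (eta s)\<^sup>2 / real N * (sigma_het + sigma_eps)\<^sup>2))"
      using p2exp Vbound Vnn by (intro sum_mono mult_mono) auto
    also have "\<dots> = (sigma_het + sigma_eps)\<^sup>2 / real N * S2"
      unfolding S2_def by (simp add: sum_distrib_left sum_divide_distrib algebra_simps)
    finally have "sqrt (\<Sum>s=1..t. (\<Prod>j=s+1..t. (F.rho j)\<^sup>2) * F.Vr s) \<le> sqrt ((sigma_het + sigma_eps)\<^sup>2 / real N * S2)"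
      by (rule real_sqrt_le_mono)
    also have "\<dots> = (sigma_het + sigma_eps) / sqrt (real N) * sqrt S2"
      using sig0 by (simp add: real_sqrt_mult real_sqrt_divide)
    also have "\<dots> \<le> (sigma_eps + 2 * sigma_het) / sqrt (real N) * sqrt S2"
      using sig0 S2nn by (intro mult_right_mono divide_right_mono) auto
    finally show ?thesis .
  qed
  have T1: "(\<Prod>s=1..t. F.rho s) = (\<Prod>s=1..t. (1 - eta s * a) ^ H s)" unfolding F.rho_def ..
  have T4: "0 \<le> sqrt (4 * sigma_A\<^sup>2 * zeta1\<^sup>2 * zeta2\<^sup>2 / (real N * a * exp 1))
           * sqrt (\<Sum>s=1..t. eta s ^ 5 * real (H s) ^ 4 * exp (- a * (\<Sum>r=s+1..t. eta r * real (H r))))"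
    using a_pos eta_pos[THEN less_imp_le] by (intro mult_nonneg_nonneg real_sqrt_ge_zero divide_nonneg_nonneg sum_nonneg) auto
  show ?thesis
    using main[unfolded T1] T2 T3[unfolded S2_def] T4 by linarith
qed

end
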